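(* Let $\mathfrak{P}=(\rho_{t_0},\mathcal{E}_{t_1\leftarrow t_0},\dots,\mathcal{E}_{t_n\leftarrow t_{n-1}})$ be a multi-time quantum process with $\mathcal{H}_{t_k}=\mathbb{C}^d$ for all $k$, and let $\overrightarrow{\Upsilon},\overleftarrow{\Upsilon},\overleftrightarrow{\Upsilon},\Upsilon^{\rm MH},\overleftrightarrow{\Upsilon}^{\rm MH}$ be its right, left, doubled KD temporal states and its left/right and doubled MH temporal states. Then: (1) $\overrightarrow{\Upsilon}=\operatorname{Tr}_L\overleftrightarrow{\Upsilon}$, $\overleftarrow{\Upsilon}=\operatorname{Tr}_R\overleftrightarrow{\Upsilon}$, and $\overrightarrow{\Upsilon}=\overleftarrow{\Upsilon}^\dagger$. For every $k$, $\rho_{t_k}=\operatorname{Tr}_{t_n,\dots,\widehat{t_k},\dots,t_0}\overrightarrow{\Upsilon}=\operatorname{Tr}_{t_n,\dots,\widehat{t_k},\dots,t_0}\overleftarrow{\Upsilon}$, where $\rho_{t_k}=\mathcal{E}_{t_k\leftarrow t_{k-1}}\circ\cdots\circ\mathcal{E}_{t_1\leftarrow t_0}(\rho_{t_0})$ and the partial trace is over all time steps except $t_k$. Moreover the quantum Kolmogorov consistency condition holds: for any $0=i_0<i_1<\dots<i_k\le n$, the partial trace of $\overrightarrow{\Upsilon}$ (resp. $\overleftarrow{\Upsilon}$) over the time steps not in $\{t_{i_0},\dots,t_{i_k}\}$, and the partial trace of $\overleftrightarrow{\Upsilon}$ over both the $L$ and $R$ factors of those time steps, equal the corresponding KD temporal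 states of the sub-process $(\rho_{t_0},\mathcal{E}'_{t_{i_1}\leftarrow t_{i_0}},\dots,\mathcal{E}'_{t_{i_k}\leftarrow t_{i_{k-1}}})$ with $\mathcal{E}'_{t_{i_j}\leftarrow t_{i_{j-1}}}=\mathcal{E}_{t_{i_j}\leftarrow t_{i_j-1}}\circ\cdots\circ\mathcal{E}_{t_{i_{j-1}+1}\leftarrow t_{i_{j-1}}}$. (2) $\Upsilon^{\rm MH}=\tfrac12(\overleftarrow{\Upsilon}+\overleftarrow{\Upsilon}^\dagger)=\tfrac12(\overrightarrow{\Upsilon}+\overrightarrow{\Upsilon}^\dagger)$ and $\overleftrightarrow{\Upsilon}^{\rm MH}=\tfrac12(\overleftrightarrow{\Upsilon}+\overleftrightarrow{\Upsilon}^\dagger)$; in particular $\rho_{t_k}$ is also the partial trace of $\Upsilon^{\rm MH}$ over all time steps except $t_k$. (3) (Temporal Born rule) For any complete families of orthogonal projectors $\{\Pi^{t_k}_{a}\}$, $\{\Pi^{t_k}_{b}\}$ at each time step: $\overrightarrow{Q}_{\rm KD}(b_n,\dots,b_0)=\operatorname{Tr}[(\Pi_{b_n}\otimes\cdots\otimes\Pi_{b_0})\overrightarrow{\Upsilon}]$; $\overleftarrow{Q}_{\rm KD}(b_n,\dots,b_0)=\operatorname{Tr}[(\Pi_{b_n}\otimes\cdots\otimes\Pi_{b_0})\overleftarrow{\Upsilon}]$; $\overleftrightarrow{Q}_{\rm KD}(a_n,\dots,a_0;b_n,\dots,b_0)=\operatorname{Tr}[(\Pi_{a_n}\otimes\cdots\otimes\Pi_{a_0})\otimes(\Pi_{b_n}\otimes\cdots\otimes\Pi_{b_0})\overleftrightarrow{\Upsilon}]$;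 $Q_{\rm MH}(b_n,\dots,b_0)=\operatorname{Tr}[(\Pi_{b_n}\otimes\cdots\otimes\Pi_{b_0})\Upsilon^{\rm MH}]$; $\overleftrightarrow{Q}_{\rm MH}(a;b)=\operatorname{Tr}[(\Pi_{a_n}\otimes\cdots\otimes\Pi_{a_0})\otimes(\Pi_{b_n}\otimes\cdots\otimes\Pi_{b_0})\overleftrightarrow{\Upsilon}^{\rm MH}]$; and $Q_{\rm LvN}(a_n,\dots,a_0)=\operatorname{Tr}[(\Pi_{a_n}\otimes\cdots\otimes\Pi_{a_0})\otimes(\Pi_{a_n}\otimes\cdots\otimes\Pi_{a_0})\overleftrightarrow{\Upsilon}]=\operatorname{Tr}[(\Pi_{a_n}\otimes\cdots\otimes\Pi_{a_0})\otimes(\Pi_{a_n}\otimes\cdots\otimes\Pi_{a_0})\overleftrightarrow{\Upsilon}^{\rm MH}]$.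
   Context: A multi-time quantum process consists of a density operator $\rho_{t_0}$ on $\mathbb{C}^d$ and CPTP maps $\mathcal{E}_{t_j\leftarrow t_{j-1}}$ on $\mathbf{B}(\mathbb{C}^d)$, extended linearly to all operators. Given complete families of orthogonal projectors, the right, left and doubled temporal KD distributions are $\overrightarrow{Q}_{\rm KD}(b_n,\dots,b_0)=\operatorname{Tr}[\mathcal{E}_{t_n\leftarrow t_{n-1}}(\cdots\mathcal{E}_{t_1\leftarrow t_0}(\rho_{t_0}\Pi^{t_0}_{b_0})\Pi^{t_1}_{b_1}\cdots)\Pi^{t_n}_{b_n}]$, $\overleftarrow{Q}_{\rm KD}(a_n,\dots,a_0)=\operatorname{Tr}[\Pi^{t_n}_{a_n}\mathcal{E}_{t_n\leftarrow t_{n-1}}(\cdots\Pi^{t_1}_{a_1}\mathcal{E}_{t_1\leftarrow t_0}(\Pi^{t_0}_{a_0}\rho_{t_0})\cdots)]$, $\overleftrightarrow{Q}_{\rm KD}(a_n,\dots,a_0;b_n,\dots,b_0)=\operatorname{Tr}[\Pi^{t_n}_{a_n}\mathcal{E}_{t_n\leftarrow t_{n-1}}(\cdots\Pi^{t_1}_{a_1}\mathcal{E}_{t_1\leftarrow t_0}(\Pi^{t_0}_{a_0}\rho_{t_0}\Pi^{t_0}_{b_0})\Pi^{t_1}_{b_1}\cdots)\Pi^{t_n}_{b_n}]$. The Margenau–Hill (MH) distributions are $Q_{\rm MH}=\operatorname{Re}\overrightarrow{Q}_{\rm KD}$ and $\overleftrightarrow{Q}_{\rm MH}=\operatorname{Re}\overleftrightarrow{Q}_{\rm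 KD}$; the Lüders–von Neumann distribution is $Q_{\rm LvN}(a_n,\dots,a_0)=\overleftrightarrow{Q}_{\rm KD}(a_n,\dots,a_0;a_n,\dots,a_0)$ (same projectors on both sides). Generalized Pauli operators: Hermitian $\sigma_0=\mathbb{I},\sigma_1,\dots,\sigma_{d^2-1}$ on $\mathbb{C}^d$ with $\operatorname{Tr}\sigma_j=0$ ($j\ge1$), $\operatorname{Tr}(\sigma_\mu\sigma_\nu)=d\,\delta_{\mu\nu}$. For each $\sigma_\mu$ use its spectral projectors as measurement, with outcomes its eigenvalues. Correlators: $\overrightarrow{T}^{\mu_n,\dots,\mu_0}=\sum a_n\cdots a_0\,\overrightarrow{Q}_{\rm KD}(a_n,\dots,a_0\mid\sigma_{\mu_n},\dots,\sigma_{\mu_0})$, $\overleftarrow{T}$ analogously from $\overleftarrow{Q}_{\rm KD}$, and $\overleftrightarrow{T}^{\mu_n,\dots,\mu_0;\nu_n,\dots,\nu_0}=\sum a_n\cdots a_0b_n\cdots b_0\,\overleftrightarrow{Q}_{\rm KD}(a;b\mid\sigma_{\mu_n},\dots,\sigma_{\mu_0};\sigma_{\nu_n},\dots,\sigma_{\nu_0})$ (ket side measured with the $\sigma_{\mu}$'s, bra side with the $\sigma_\nu$'s). The KD temporal states on $\mathcal{H}_{t_n}\otimes\cdots\otimes\mathcal{H}_{t_0}$ are $\overrightarrow{\Upsilon}=d^{-(n+1)}\sum_{\mu}\overrightarrow{T}^{\mu_n,\dots,\mu_0}\sigma_{\mu_n}\otimes\cdots\otimes\sigma_{\mu_0}$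 and $\overleftarrow{\Upsilon}$ likewise with $\overleftarrow{T}$; the doubled KD temporal state on $L\otimes R$, with $L=R=\mathcal{H}_{t_n}\otimes\cdots\otimes\mathcal{H}_{t_0}$, is $\overleftrightarrow{\Upsilon}=d^{-2(n+1)}\sum_{\mu,\nu}\overleftrightarrow{T}^{\mu_n,\dots,\mu_0;\nu_n,\dots,\nu_0}(\bigotimes_i\sigma_{\mu_i})\otimes(\bigotimes_j\sigma_{\nu_j})$. The MH temporal states $\Upsilon^{\rm MH}$ and $\overleftrightarrow{\Upsilon}^{\rm MH}$ are defined by the same formulas with the correlators replaced by $\operatorname{Re}\overrightarrow{T}$ and $\operatorname{Re}\overleftrightarrow{T}$ respectively. *)

theory Defs
  imports "HOL-Analysis.Analysis"
begin

type_synonym 'd sop = "'d \<Rightarrow> 'd \<Rightarrow> complex"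
type_synonym 'd mop = "'d list \<Rightarrow> 'd list \<Rightarrow> complex"
  (* operator on (\<complex>^d)^\<otimes>m; index list xs, xs!k = index of time step t_k *)
type_synonym 'd dop = "'d list \<times> 'd list \<Rightarrow> 'd list \<times> 'd list \<Rightarrow> complex"
  (* operator on L \<otimes> R, L = R = (\<complex>^d)^\<otimes>m *)

definition idm :: "'d sop" where
  "idm i j = (if i = j then 1 else 0)"

definition mmul :: "('d::finite) sop \<Rightarrow> 'd sop \<Rightarrow> 'd sop" where
  "mmul A B i j = (\<Sum>k\<in>UNIV. A i k * B k j)"

definition mtr :: "('d::finite) sop \<Rightarrow> complex" where
  "mtr A = (\<Sum>i\<in>UNIV. A i i)"

definition mvec :: "('d::finite) sop \<Rightarrow> ('d \<Rightarrow> complex) \<Rightarrow> ('d \<Rightarrow> complex)" where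
  "mvec A v i = (\<Sum>j\<in>UNIV. A i j * v j)"

definition hermitian :: "'d sop \<Rightarrow> bool" where
  "hermitian A \<longleftrightarrow> (\<forall>i j. A i j = cnj (A j i))"

definition psd_on :: "'i set \<Rightarrow> ('i \<Rightarrow> 'i \<Rightarrow> complex) \<Rightarrow> bool" where
  "psd_on I A \<longleftrightarrow> (\<forall>v. Im (\<Sum>x\<in>I. \<Sum>y\<in>I. cnj (v x) * A x y * v y) = 0
                     \<and> Re (\<Sum>x\<in>I. \<Sum>y\<in>I. cnj (v x) * A x y * v y) \<ge> 0)"

definition density :: "('d::finite) sop \<Rightarrow> bool" where
  "density \<rho> \<longleftrightarrow> psd_on UNIV \<rho> \<and> mtr \<rho> = 1"

definition clinear_map :: "('d sop \<Rightarrow> 'd sop) \<Rightarrow> bool" where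
  "clinear_map E \<longleftrightarrow>
     (\<forall>A B. E (\<lambda>i j. A i j + B i j) = (\<lambda>i j. E A i j + E B i j)) \<and>
     (\<forall>c A. E (\<lambda>i j. c * A i j) = (\<lambda>i j. c * E A i j))"

text \<open>complete positivity: (id_m \<otimes> E) is positive for every ancilla dimension m\<close>
definition completely_positive :: "(('d::finite) sop \<Rightarrow> 'd sop) \<Rightarrow> bool" where
  "completely_positive E \<longleftrightarrow>
     (\<forall>(m::nat) (X :: nat \<times> 'd \<Rightarrow> nat \<times> 'd \<Rightarrow> complex).
        psd_on ({..<m} \<times> UNIV) X \<longrightarrow>
        psd_on ({..<m} \<times> UNIV) (\<lambda>(i,a) (j,b). E (\<lambda>a' b'. X (i,a') (j,b')) a b))"

definition trace_preserving :: "(('d::finite) sop \<Rightarrow> 'd sop) \<Rightarrow> bool" where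
  "trace_preserving E \<longleftrightarrow> (\<forall>A. mtr (E A) = mtr A)"

definition cptp :: "(('d::finite) sop \<Rightarrow> 'd sop) \<Rightarrow> bool" where
  "cptp E \<longleftrightarrow> clinear_map E \<and> completely_positive E \<and> trace_preserving E"

text \<open>A multi-time process (\<rho>_{t_0}, E_{t_1\<leftarrow>t_0}, ..., E_{t_n\<leftarrow>t_{n-1}}); E j = E_{t_j\<leftarrow>t_{j-1}}.\<close>
definition multi_time_process :: "nat \<Rightarrow> ('d::finite) sop \<Rightarrow> (nat \<Rightarrow> 'd sop \<Rightarrow> 'd sop) \<Rightarrow> bool" where
  "multi_time_process n \<rho> E \<longleftrightarrow> density \<rho> \<and> (\<forall>j\<in>{1..n}. cptp (E j))"

definition proj_family :: "'a set \<Rightarrow> ('a \<Rightarrow> ('d::finite) sop) \<Rightarrow> bool" where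
  "proj_family Out P \<longleftrightarrow> finite Out \<and>
     (\<forall>a\<in>Out. hermitian (P a) \<and> mmul (P a) (P a) = P a) \<and>
     (\<forall>a\<in>Out. \<forall>b\<in>Out. a \<noteq> b \<longrightarrow> mmul (P a) (P b) = (\<lambda>i j. 0)) \<and>
     (\<lambda>i j. \<Sum>a\<in>Out. P a i j) = idm"

fun sandwich_chain :: "('d::finite) sop \<Rightarrow> (nat \<Rightarrow> 'd sop \<Rightarrow> 'd sop) \<Rightarrow> (nat \<Rightarrow> 'd sop) \<Rightarrow> (nat \<Rightarrow> 'd sop)
                         \<Rightarrow> nat \<Rightarrow> 'd sop" where
  "sandwich_chain \<rho> E L R 0 = mmul (L 0) (mmul \<rho> (R 0))"
| "sandwich_chain \<rho> E L R (Suc k) =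
     mmul (L (Suc k)) (mmul (E (Suc k) (sandwich_chain \<rho> E L R k)) (R (Suc k)))"

text \<open>Projectors given as P k = \<Pi>^{t_k}_{b_k}.\<close>
definition QKD_right :: "('d::finite) sop \<Rightarrow> (nat \<Rightarrow> 'd sop \<Rightarrow> 'd sop) \<Rightarrow> nat \<Rightarrow> (nat \<Rightarrow> 'd sop) \<Rightarrow> complex" where
  "QKD_right \<rho> E n P = mtr (sandwich_chain \<rho> E (\<lambda>_. idm) P n)"

definition QKD_left :: "('d::finite) sop \<Rightarrow> (nat \<Rightarrow> 'd sop \<Rightarrow> 'd sop) \<Rightarrow> nat \<Rightarrow> (nat \<Rightarrow> 'd sop) \<Rightarrow> complex" where
  "QKD_left \<rho> E n P = mtr (sandwich_chain \<rho> E P (\<lambda>_. idm) n)"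

text \<open>PL = ket side projectors \<Pi>_{a_k}, PR = bra side projectors \<Pi>_{b_k}\<close>
definition QKD_doubled :: "('d::finite) sop \<Rightarrow> (nat \<Rightarrow> 'd sop \<Rightarrow> 'd sop) \<Rightarrow> nat \<Rightarrow> (nat \<Rightarrow> 'd sop)
                            \<Rightarrow> (nat \<Rightarrow> 'd sop) \<Rightarrow> complex" where
  "QKD_doubled \<rho> E n PL PR = mtr (sandwich_chain \<rho> E PL PR n)"

definition QMH :: "('d::finite) sop \<Rightarrow> (nat \<Rightarrow> 'd sop \<Rightarrow> 'd sop) \<Rightarrow> nat \<Rightarrow> (nat \<Rightarrow> 'd sop) \<Rightarrow> real" where
  "QMH \<rho> E n P = Re (QKD_right \<rho> E n P)"

definition QMH_doubled :: "('d::finite) sop \<Rightarrow> (nat \<Rightarrow> 'd sop \<Rightarrow> 'd sop) \<Rightarrow> nat \<Rightarrow> (nat \<Rightarrow> 'd sop)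
                            \<Rightarrow> (nat \<Rightarrow> 'd sop) \<Rightarrow> real" where
  "QMH_doubled \<rho> E n PL PR = Re (QKD_doubled \<rho> E n PL PR)"

definition QLvN :: "('d::finite) sop \<Rightarrow> (nat \<Rightarrow> 'd sop \<Rightarrow> 'd sop) \<Rightarrow> nat \<Rightarrow> (nat \<Rightarrow> 'd sop) \<Rightarrow> complex" where
  "QLvN \<rho> E n P = QKD_doubled \<rho> E n P P"

definition eigenvalues :: "('d::finite) sop \<Rightarrow> complex set" where
  "eigenvalues A = {e. \<exists>v. v \<noteq> (\<lambda>_. 0) \<and> mvec A v = (\<lambda>i. e * v i)}"

definition spectral_projector :: "('d::finite) sop \<Rightarrow> complex \<Rightarrow> 'd sop" where
  "spectral_projector A e = (THE P. hermitian P \<and> mmul P P = P \<and>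
        (\<forall>v. mvec P v = v \<longleftrightarrow> mvec A v = (\<lambda>i. e * v i)))"

definition gen_pauli :: "(nat \<Rightarrow> ('d::finite) sop) \<Rightarrow> bool" where
  "gen_pauli \<sigma> \<longleftrightarrow> \<sigma> 0 = idm \<and>
     (\<forall>\<mu> < CARD('d)^2. hermitian (\<sigma> \<mu>)) \<and>
     (\<forall>j\<in>{1..<CARD('d)^2}. mtr (\<sigma> j) = 0) \<and>
     (\<forall>\<mu> < CARD('d)^2. \<forall>\<nu> < CARD('d)^2.
        mtr (mmul (\<sigma> \<mu>) (\<sigma> \<nu>)) = (if \<mu> = \<nu> then of_nat CARD('d) else 0))"

definition pauli_idx :: "nat \<Rightarrow> nat \<Rightarrow> nat list set" where
  "pauli_idx d m = {\<mu>s. length \<mu>s = m \<and> (\<forall>k<m. \<mu>s!k < d^2)}"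

definition outcome_lists :: "(nat \<Rightarrow> 'a set) \<Rightarrow> nat \<Rightarrow> 'a list set" where
  "outcome_lists Out m = {as. length as = m \<and> (\<forall>k<m. as!k \<in> Out k)}"

definition corr_right :: "(nat \<Rightarrow> ('d::finite) sop) \<Rightarrow> 'd sop \<Rightarrow> (nat \<Rightarrow> 'd sop \<Rightarrow> 'd sop) \<Rightarrow> nat \<Rightarrow> nat list \<Rightarrow> complex" where
  "corr_right \<sigma> \<rho> E n \<mu>s =
    (\<Sum>as\<in>outcome_lists (\<lambda>k. eigenvalues (\<sigma> (\<mu>s!k))) (Suc n).
        (\<Prod>k<Suc n. as!k) * QKD_right \<rho> E n (\<lambda>k. spectral_projector (\<sigma> (\<mu>s!k)) (as!k)))"

definition corr_left :: "(nat \<Rightarrow> ('d::finite) sop) \<Rightarrow> 'd sop \<Rightarrow> (nat \<Rightarrow> 'd sop \<Rightarrow> 'd sop) \<Rightarrow> nat \<Rightarrow> nat list \<Rightarrow> complex" where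
  "corr_left \<sigma> \<rho> E n \<mu>s =
    (\<Sum>as\<in>outcome_lists (\<lambda>k. eigenvalues (\<sigma> (\<mu>s!k))) (Suc n).
        (\<Prod>k<Suc n. as!k) * QKD_left \<rho> E n (\<lambda>k. spectral_projector (\<sigma> (\<mu>s!k)) (as!k)))"

definition corr_doubled :: "(nat \<Rightarrow> ('d::finite) sop) \<Rightarrow> 'd sop \<Rightarrow> (nat \<Rightarrow> 'd sop \<Rightarrow> 'd sop) \<Rightarrow> nat
                              \<Rightarrow> nat list \<Rightarrow> nat list \<Rightarrow> complex" where
  "corr_doubled \<sigma> \<rho> E n \<mu>s \<nu>s =
    (\<Sum>as\<in>outcome_lists (\<lambda>k. eigenvalues (\<sigma> (\<mu>s!k))) (Suc n).
      \<Sum>bs\<in>outcome_lists (\<lambda>k. eigenvalues (\<sigma> (\<nu>s!k))) (Suc n).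
        (\<Prod>k<Suc n. as!k) * (\<Prod>k<Suc n. bs!k) *
        QKD_doubled \<rho> E n (\<lambda>k. spectral_projector (\<sigma> (\<mu>s!k)) (as!k))
                          (\<lambda>k. spectral_projector (\<sigma> (\<nu>s!k)) (bs!k)))"

definition idx_lists :: "nat \<Rightarrow> 'd list set" where
  "idx_lists m = {xs. length xs = m}"

definition tensor :: "nat \<Rightarrow> (nat \<Rightarrow> 'd sop) \<Rightarrow> 'd mop" where
  "tensor m A xs ys = (\<Prod>k<m. A k (xs!k) (ys!k))"

definition tensor2 :: "nat \<Rightarrow> (nat \<Rightarrow> 'd sop) \<Rightarrow> (nat \<Rightarrow> 'd sop) \<Rightarrow> 'd dop" where
  "tensor2 m A B = (\<lambda>(xl, xr) (yl, yr). tensor m A xl yl * tensor m B xr yr)"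

definition mul_on :: "'i set \<Rightarrow> ('i \<Rightarrow> 'i \<Rightarrow> complex) \<Rightarrow> ('i \<Rightarrow> 'i \<Rightarrow> complex) \<Rightarrow> ('i \<Rightarrow> 'i \<Rightarrow> complex)" where
  "mul_on I A B x y = (\<Sum>z\<in>I. A x z * B z y)"

definition tr_on :: "'i set \<Rightarrow> ('i \<Rightarrow> 'i \<Rightarrow> complex) \<Rightarrow> complex" where
  "tr_on I A = (\<Sum>x\<in>I. A x x)"

definition op_adj :: "('i \<Rightarrow> 'i \<Rightarrow> complex) \<Rightarrow> ('i \<Rightarrow> 'i \<Rightarrow> complex)" where
  "op_adj A x y = cnj (A y x)"

definition mop_eq :: "nat \<Rightarrow> 'd mop \<Rightarrow> 'd mop \<Rightarrow> bool" where
  "mop_eq m A B \<longleftrightarrow> (\<forall>xs\<in>idx_lists m. \<forall>ys\<in>idx_lists m. A xs ys = B xs ys)"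

definition dop_eq :: "nat \<Rightarrow> 'd dop \<Rightarrow> 'd dop \<Rightarrow> bool" where
  "dop_eq m A B \<longleftrightarrow> (\<forall>x\<in>idx_lists m \<times> idx_lists m. \<forall>y\<in>idx_lists m \<times> idx_lists m. A x y = B x y)"

definition ptrace_L :: "nat \<Rightarrow> 'd dop \<Rightarrow> 'd mop" where
  "ptrace_L m Y xs ys = (\<Sum>zs\<in>idx_lists m. Y (zs, xs) (zs, ys))"

definition ptrace_R :: "nat \<Rightarrow> 'd dop \<Rightarrow> 'd mop" where
  "ptrace_R m Y xs ys = (\<Sum>zs\<in>idx_lists m. Y (xs, zs) (ys, zs))"

text \<open>Partial trace over all time steps t < m not in the list ts (ts increasing);
  the result lives on the sites ts!0, ts!1, ...\<close>
definition keep_pairs :: "nat \<Rightarrow> nat list \<Rightarrow> 'd list \<Rightarrow> 'd list \<Rightarrow> ('d list \<times> 'd list) set" where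
  "keep_pairs m ts xs ys = {(zs, ws). length zs = m \<and> length ws = m \<and>
      (\<forall>j<length ts. zs!(ts!j) = xs!j \<and> ws!(ts!j) = ys!j) \<and>
      (\<forall>t<m. t \<notin> set ts \<longrightarrow> zs!t = ws!t)}"

definition ptrace_keep :: "nat \<Rightarrow> nat list \<Rightarrow> 'd mop \<Rightarrow> 'd mop" where
  "ptrace_keep m ts Y xs ys = (\<Sum>(zs, ws)\<in>keep_pairs m ts xs ys. Y zs ws)"

definition ptrace_keep2 :: "nat \<Rightarrow> nat list \<Rightarrow> 'd dop \<Rightarrow> 'd dop" where
  "ptrace_keep2 m ts Y = (\<lambda>(xl, xr) (yl, yr).
      \<Sum>(zl, wl)\<in>keep_pairs m ts xl yl. \<Sum>(zr, wr)\<in>keep_pairs m ts xr yr. Y (zl, zr) (wl, wr))"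

definition KD_state_right :: "(nat \<Rightarrow> ('d::finite) sop) \<Rightarrow> 'd sop \<Rightarrow> (nat \<Rightarrow> 'd sop \<Rightarrow> 'd sop) \<Rightarrow> nat \<Rightarrow> 'd mop" where
  "KD_state_right \<sigma> \<rho> E n xs ys = (1 / of_nat CARD('d) ^ Suc n) *
     (\<Sum>\<mu>s\<in>pauli_idx CARD('d) (Suc n). corr_right \<sigma> \<rho> E n \<mu>s * tensor (Suc n) (\<lambda>k. \<sigma> (\<mu>s!k)) xs ys)"

definition KD_state_left :: "(nat \<Rightarrow> ('d::finite) sop) \<Rightarrow> 'd sop \<Rightarrow> (nat \<Rightarrow> 'd sop \<Rightarrow> 'd sop) \<Rightarrow> nat \<Rightarrow> 'd mop" where
  "KD_state_left \<sigma> \<rho> E n xs ys = (1 / of_nat CARD('d) ^ Suc n) *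
     (\<Sum>\<mu>s\<in>pauli_idx CARD('d) (Suc n). corr_left \<sigma> \<rho> E n \<mu>s * tensor (Suc n) (\<lambda>k. \<sigma> (\<mu>s!k)) xs ys)"

definition MH_state :: "(nat \<Rightarrow> ('d::finite) sop) \<Rightarrow> 'd sop \<Rightarrow> (nat \<Rightarrow> 'd sop \<Rightarrow> 'd sop) \<Rightarrow> nat \<Rightarrow> 'd mop" where
  "MH_state \<sigma> \<rho> E n xs ys = (1 / of_nat CARD('d) ^ Suc n) *
     (\<Sum>\<mu>s\<in>pauli_idx CARD('d) (Suc n).
        complex_of_real (Re (corr_right \<sigma> \<rho> E n \<mu>s)) * tensor (Suc n) (\<lambda>k. \<sigma> (\<mu>s!k)) xs ys)"

definition KD_state_doubled :: "(nat \<Rightarrow> ('d::finite) sop) \<Rightarrow> 'd sop \<Rightarrow> (nat \<Rightarrow> 'd sop \<Rightarrow> 'd sop) \<Rightarrow> nat \<Rightarrow> 'd dop" where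
  "KD_state_doubled \<sigma> \<rho> E n x y = (1 / of_nat CARD('d) ^ (2 * Suc n)) *
     (\<Sum>\<mu>s\<in>pauli_idx CARD('d) (Suc n). \<Sum>\<nu>s\<in>pauli_idx CARD('d) (Suc n).
        corr_doubled \<sigma> \<rho> E n \<mu>s \<nu>s * tensor2 (Suc n) (\<lambda>k. \<sigma> (\<mu>s!k)) (\<lambda>k. \<sigma> (\<nu>s!k)) x y)"

definition MH_state_doubled :: "(nat \<Rightarrow> ('d::finite) sop) \<Rightarrow> 'd sop \<Rightarrow> (nat \<Rightarrow> 'd sop \<Rightarrow> 'd sop) \<Rightarrow> nat \<Rightarrow> 'd dop" where
  "MH_state_doubled \<sigma> \<rho> E n x y = (1 / of_nat CARD('d) ^ (2 * Suc n)) *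
     (\<Sum>\<mu>s\<in>pauli_idx CARD('d) (Suc n). \<Sum>\<nu>s\<in>pauli_idx CARD('d) (Suc n).
        complex_of_real (Re (corr_doubled \<sigma> \<rho> E n \<mu>s \<nu>s)) *
        tensor2 (Suc n) (\<lambda>k. \<sigma> (\<mu>s!k)) (\<lambda>k. \<sigma> (\<nu>s!k)) x y)"

text \<open>chan_seq E a l = E_{a+l} \<circ> ... \<circ> E_{a+1}\<close>
fun chan_seq :: "(nat \<Rightarrow> 'd sop \<Rightarrow> 'd sop) \<Rightarrow> nat \<Rightarrow> nat \<Rightarrow> 'd sop \<Rightarrow> 'd sop" where
  "chan_seq E a 0 = id"
| "chan_seq E a (Suc l) = E (a + Suc l) \<circ> chan_seq E a l"

definition evolved_state :: "'d sop \<Rightarrow> (nat \<Rightarrow> 'd sop \<Rightarrow> 'd sop) \<Rightarrow> nat \<Rightarrow> 'd sop" where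
  "evolved_state \<rho> E k = chan_seq E 0 k \<rho>"

text \<open>channels of the sub-process at times t_{ts!0}, ..., t_{ts!k}:
  E'_j = E_{ts!j} \<circ> ... \<circ> E_{ts!(j-1)+1}  (j \<ge> 1)\<close>
definition sub_channels :: "(nat \<Rightarrow> 'd sop \<Rightarrow> 'd sop) \<Rightarrow> nat list \<Rightarrow> nat \<Rightarrow> 'd sop \<Rightarrow> 'd sop" where
  "sub_channels E ts j = chan_seq E (ts!(j-1)) (ts!j - ts!(j-1))"

end

theory Submission
  imports Defs "HOL-Computational_Algebra.Fundamental_Theorem_Algebra"
begin

lemma outcome_lists_0[simp]: "outcome_lists S 0 = {[]}"
  by (auto simp: outcome_lists_def)

lemma outcome_lists_Suc:
  "outcome_lists S (Suc m) = (\<lambda>(xs, x). xs @ [x]) ` (outcome_lists S m \<times> S m)"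
proof (intro set_eqI iffI)
  fix ys assume "ys \<in> outcome_lists S (Suc m)"
  then have len: "length ys = Suc m" and el: "\<forall>k<Suc m. ys!k \<in> S k" by (auto simp: outcome_lists_def)
  then obtain xs x where ys: "ys = xs @ [x]" by (metis append_butlast_last_id length_0_conv nat.distinct(1))
  with len have lx: "length xs = m" by simp
  have "xs \<in> outcome_lists S m"
    unfolding outcome_lists_def
  proof (intro CollectI conjI allI impI)
    fix k assume k: "k < m"
    then have "ys!k \<in> S k" using el by simp
    then show "xs!k \<in> S k" using ys lx k by (simp add: nth_append)
  qed (rule lx)
  moreover have "x \<in> S m" using el[rule_format, of m] ys lx by (metis lessI nth_append_length)
  ultimately show "ys \<in> (\<lambda>(xs, x). xs @ [x]) ` (outcome_lists S m \<times> S m)" using ys by force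
next
  fix ys assume "ys \<in> (\<lambda>(xs, x). xs @ [x]) ` (outcome_lists S m \<times> S m)"
  then show "ys \<in> outcome_lists S (Suc m)"
    by (auto simp: outcome_lists_def nth_append less_Suc_eq)
qed

lemma inj_snoc: "inj_on (\<lambda>(xs, x). xs @ [x]) A"
  by (auto simp: inj_on_def)

lemma finite_outcome_lists: "(\<forall>k<m. finite (S k)) \<Longrightarrow> finite (outcome_lists S m)"
  by (induction m) (auto simp: outcome_lists_Suc)

lemma sum_outcome_lists_Suc:
  "sum f (outcome_lists S (Suc m)) = (\<Sum>xs\<in>outcome_lists S m. \<Sum>x\<in>S m. f (xs @ [x]))"
proof -
  have "sum f (outcome_lists S (Suc m)) = sum (f \<circ> (\<lambda>(xs, x). xs @ [x])) (outcome_lists S m \<times> S m)"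
    unfolding outcome_lists_Suc by (rule sum.reindex[OF inj_snoc])
  also have "\<dots> = (\<Sum>(xs, x)\<in>outcome_lists S m \<times> S m. f (xs @ [x]))"
    by (rule sum.cong) auto
  also have "\<dots> = (\<Sum>xs\<in>outcome_lists S m. \<Sum>x\<in>S m. f (xs @ [x]))"
    by (rule sum.cartesian_product[symmetric])
  finally show ?thesis .
qed

lemma outcome_lists_length: "xs \<in> outcome_lists S m \<Longrightarrow> length xs = m"
  by (simp add: outcome_lists_def)

lemma sum_prod_outcome_lists:
  fixes f :: "nat \<Rightarrow> 'x \<Rightarrow> 'a::comm_semiring_1"
  assumes "\<forall>k<m. finite (S k)"
  shows "(\<Sum>xs\<in>outcome_lists S m. \<Prod>k<m. f k (xs!k)) = (\<Prod>k<m. \<Sum>x\<in>S k. f k x)"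
  using assms
proof (induction m)
  case 0 then show ?case by simp
next
  case (Suc m)
  have "(\<Sum>xs\<in>outcome_lists S (Suc m). \<Prod>k<Suc m. f k (xs!k))
      = (\<Sum>xs\<in>outcome_lists S m. \<Sum>x\<in>S m. (\<Prod>k<m. f k (xs!k)) * f m x)"
    unfolding sum_outcome_lists_Suc
    by (intro sum.cong refl) (auto simp: nth_append outcome_lists_length)
  also have "\<dots> = (\<Sum>xs\<in>outcome_lists S m. (\<Prod>k<m. f k (xs!k)) * (\<Sum>x\<in>S m. f m x))"
    by (rule sum.cong[OF refl]) (simp add: sum_distrib_left)
  also have "\<dots> = (\<Prod>k<m. \<Sum>x\<in>S k. f k x) * (\<Sum>x\<in>S m. f m x)"
    using Suc by (simp flip: sum_distrib_right)
  finally show ?case by simp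
qed

lemma idx_lists_outcome: "idx_lists m = outcome_lists (\<lambda>_. UNIV) m"
  by (auto simp: idx_lists_def outcome_lists_def)

lemma pauli_idx_outcome: "pauli_idx d m = outcome_lists (\<lambda>_. {..<d^2}) m"
  by (auto simp: pauli_idx_def outcome_lists_def)

lemma finite_idx_lists[simp]: "finite (idx_lists m :: ('d::finite) list set)"
  unfolding idx_lists_outcome by (rule finite_outcome_lists) simp

lemma finite_pauli_idx[simp]: "finite (pauli_idx d m)"
  unfolding pauli_idx_outcome by (rule finite_outcome_lists) simp

lemma sum_idx_lists_Suc:
  "sum f (idx_lists (Suc m)) = (\<Sum>xs\<in>idx_lists m. \<Sum>x\<in>UNIV. f (xs @ [x]))"
  unfolding idx_lists_outcome by (rule sum_outcome_lists_Suc)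

lemma idx_lists_length: "xs \<in> idx_lists m \<Longrightarrow> length xs = m"
  by (simp add: idx_lists_def)

lemma tensor_snoc:
  "length xs = m \<Longrightarrow> length ys = m \<Longrightarrow>
   tensor (Suc m) A (xs @ [x]) (ys @ [y]) = tensor m A xs ys * A m x y"
  unfolding tensor_def by (simp add: nth_append)

lemma tensor_cong:
  "(\<And>k. k < m \<Longrightarrow> A k = B k) \<Longrightarrow> tensor m A xs ys = tensor m B xs ys"
  unfolding tensor_def by simp

definition munit :: "'d \<Rightarrow> 'd \<Rightarrow> 'd sop" where
  "munit a b = (\<lambda>i j. if i = a \<and> j = b then 1 else 0)"

lemma mmul_munit_left: "mmul (munit x y) B i j = (if i = x then B y j else 0)"
  unfolding mmul_def munit_def
  by (cases "i = x") (simp_all add: if_distrib[of "\<lambda>v. v * _"] cong: if_cong)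

lemma mmul_munit_right: "mmul B (munit x y) i j = (if j = y then B i x else 0)"
  unfolding mmul_def munit_def
  by (cases "j = y") (simp_all add: if_distrib[of "\<lambda>v. _ * v"] cong: if_cong)

lemma mmul_idm_left[simp]: "mmul idm B = B"
  by (rule ext)+ (simp add: mmul_def idm_def if_distrib[of "\<lambda>v. v * _"] cong: if_cong)

lemma mmul_idm_right[simp]: "mmul B idm = B"
  by (rule ext)+ (simp add: mmul_def idm_def if_distrib[of "\<lambda>v. _ * v"] cong: if_cong)

lemma mmul_assoc: "mmul (mmul A B) C = mmul A (mmul B C)"
proof (rule ext, rule ext)
  fix i j
  have "mmul (mmul A B) C i j = (\<Sum>k\<in>UNIV. \<Sum>l\<in>UNIV. A i l * B l k * C k j)"
    by (simp add: mmul_def sum_distrib_right)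
  also have "\<dots> = (\<Sum>l\<in>UNIV. \<Sum>k\<in>UNIV. A i l * B l k * C k j)" by (rule sum.swap)
  also have "\<dots> = mmul A (mmul B C) i j" by (simp add: mmul_def sum_distrib_left mult.assoc)
  finally show "mmul (mmul A B) C i j = mmul A (mmul B C) i j" .
qed

lemma clinear_zero:
  assumes "clinear_map E" shows "E (\<lambda>i j. 0) = (\<lambda>i j. 0)"
proof -
  from assms have "\<forall>c A. E (\<lambda>i j. c * A i j) = (\<lambda>i j. c * E A i j)"
    unfolding clinear_map_def by blast
  then have "E (\<lambda>i j. 0 * idm i j) = (\<lambda>i j. 0 * E idm i j)" by blast
  then show ?thesis by simp
qed

lemma clinear_sum:
  assumes lin: "clinear_map E" and fin: "finite S"
  shows "E (\<lambda>i j. \<Sum>x\<in>S. c x * A x i j) = (\<lambda>i j. \<Sum>x\<in>S. c x * E (A x) i j)"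
  using fin
proof (induction S rule: finite_induct)
  case empty then show ?case using clinear_zero[OF lin] by simp
next
  case (insert x S)
  have add: "\<And>A B. E (\<lambda>i j. A i j + B i j) = (\<lambda>i j. E A i j + E B i j)"
   and sc: "\<And>c A. E (\<lambda>i j. c * A i j) = (\<lambda>i j. c * E A i j)"
    using lin unfolding clinear_map_def by blast+
  have "E (\<lambda>i j. \<Sum>x\<in>insert x S. c x * A x i j)
      = E (\<lambda>i j. (\<lambda>i j. c x * A x i j) i j + (\<lambda>i j. \<Sum>x\<in>S. c x * A x i j) i j)"
    using insert by simp
  also have "\<dots> = (\<lambda>i j. E (\<lambda>i j. c x * A x i j) i j + E (\<lambda>i j. \<Sum>x\<in>S. c x * A x i j) i j)"
    by (rule add)
  also have "E (\<lambda>i j. c x * A x i j) = (\<lambda>i j. c x * E (A x) i j)"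
    using sc[of "c x" "A x"] by simp
  finally show ?case using insert by simp
qed

lemma clinear_sum1:
  assumes lin: "clinear_map E" and fin: "finite S"
  shows "E (\<lambda>i j. \<Sum>x\<in>S. A x i j) = (\<lambda>i j. \<Sum>x\<in>S. E (A x) i j)"
  using clinear_sum[OF lin fin, of "\<lambda>_. 1" A] by simp

lemma sandwich_chain_cong:
  "(\<And>k. k \<le> n \<Longrightarrow> L k = L' k) \<Longrightarrow> (\<And>k. k \<le> n \<Longrightarrow> R k = R' k) \<Longrightarrow>
   sandwich_chain \<rho> E L R n = sandwich_chain \<rho> E L' R' n"
  by (induction n) auto

lemma idx_lists_0[simp]: "idx_lists 0 = {[]}"
  by (auto simp: idx_lists_def)

lemma if_sum_out: "(\<Sum>x\<in>S. if P then f x else 0) = (if P then \<Sum>x\<in>S. f x else 0)"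
  by simp

lemma mmul_sum_left:
  "mmul (\<lambda>i j. \<Sum>x\<in>S. c x * A x i j) B i j = (\<Sum>x\<in>S. c x * mmul (A x) B i j)"
proof -
  have "mmul (\<lambda>i j. \<Sum>x\<in>S. c x * A x i j) B i j = (\<Sum>k\<in>UNIV. \<Sum>x\<in>S. c x * A x i k * B k j)"
    by (simp add: mmul_def sum_distrib_right mult.assoc)
  also have "\<dots> = (\<Sum>x\<in>S. \<Sum>k\<in>UNIV. c x * A x i k * B k j)" by (rule sum.swap)
  also have "\<dots> = (\<Sum>x\<in>S. c x * mmul (A x) B i j)"
    by (simp add: mmul_def sum_distrib_left mult.assoc)
  finally show ?thesis .
qed

lemma mmul_sum_right:
  "mmul B (\<lambda>i j. \<Sum>x\<in>S. c x * A x i j) i j = (\<Sum>x\<in>S. c x * mmul B (A x) i j)"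
proof -
  have "mmul B (\<lambda>i j. \<Sum>x\<in>S. c x * A x i j) i j = (\<Sum>k\<in>UNIV. \<Sum>x\<in>S. c x * (B i k * A x k j))"
    by (simp add: mmul_def sum_distrib_left mult.assoc mult.left_commute)
  also have "\<dots> = (\<Sum>x\<in>S. \<Sum>k\<in>UNIV. c x * (B i k * A x k j))" by (rule sum.swap)
  also have "\<dots> = (\<Sum>x\<in>S. c x * mmul B (A x) i j)"
    by (simp add: mmul_def sum_distrib_left)
  finally show ?thesis .
qed

lemma chain_snoc_L:
  assumes "length a = Suc n" "length b = Suc n"
  shows "sandwich_chain \<rho> E (\<lambda>k. munit ((a @ [x])!k) ((b @ [y])!k)) R (Suc n)
       = mmul (munit x y) (mmul (E (Suc n) (sandwich_chain \<rho> E (\<lambda>k. munit (a!k) (b!k)) R n)) (R (Suc n)))"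
proof -
  have "sandwich_chain \<rho> E (\<lambda>k. munit ((a @ [x])!k) ((b @ [y])!k)) R n
      = sandwich_chain \<rho> E (\<lambda>k. munit (a!k) (b!k)) R n"
    by (rule sandwich_chain_cong) (use assms in \<open>auto simp: nth_append\<close>)
  then show ?thesis using assms by (simp add: nth_append)
qed

lemma chain_snoc_R:
  assumes "length a = Suc n" "length b = Suc n"
  shows "sandwich_chain \<rho> E L (\<lambda>k. munit ((a @ [x])!k) ((b @ [y])!k)) (Suc n)
       = mmul (L (Suc n)) (mmul (E (Suc n) (sandwich_chain \<rho> E L (\<lambda>k. munit (a!k) (b!k)) n)) (munit x y))"
proof -
  have "sandwich_chain \<rho> E L (\<lambda>k. munit ((a @ [x])!k) ((b @ [y])!k)) n
      = sandwich_chain \<rho> E L (\<lambda>k. munit (a!k) (b!k)) n"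
    by (rule sandwich_chain_cong) (use assms in \<open>auto simp: nth_append\<close>)
  then show ?thesis using assms by (simp add: nth_append)
qed

lemma E_double_sum:
  assumes lin: "clinear_map F"
  shows "F (\<lambda>i j. \<Sum>a\<in>(idx_lists m :: ('d::finite) list set). \<Sum>b\<in>(idx_lists m :: 'd list set). t a b * C a b i j)
       = (\<lambda>i j. \<Sum>a\<in>idx_lists m. \<Sum>b\<in>idx_lists m. t a b * F (C a b) i j)"
proof -
  have "F (\<lambda>i j. \<Sum>a\<in>idx_lists m. (\<lambda>a i j. \<Sum>b\<in>idx_lists m. t a b * C a b i j) a i j)
      = (\<lambda>i j. \<Sum>a\<in>idx_lists m. F (\<lambda>i j. \<Sum>b\<in>idx_lists m. t a b * C a b i j) i j)"
    by (rule clinear_sum1[OF lin]) simp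
  also have "\<dots> = (\<lambda>i j. \<Sum>a\<in>idx_lists m. \<Sum>b\<in>idx_lists m. t a b * F (C a b) i j)"
  proof (intro ext sum.cong refl)
    fix i j a
    show "F (\<lambda>i j. \<Sum>b\<in>idx_lists m. t a b * C a b i j) i j = (\<Sum>b\<in>idx_lists m. t a b * F (C a b) i j)"
      using clinear_sum[OF lin, of "idx_lists m" "t a" "C a"] by simp
  qed
  finally show ?thesis by simp
qed

lemma chain_kernel_L:
  fixes \<rho> :: "('d::finite) sop"
  assumes lin: "\<forall>k\<in>{1..n}. clinear_map (E k)"
  shows "sandwich_chain \<rho> E L R n i j =
    (\<Sum>a\<in>idx_lists (Suc n). \<Sum>b\<in>idx_lists (Suc n).
        tensor (Suc n) L a b * sandwich_chain \<rho> E (\<lambda>k. munit (a!k) (b!k)) R n i j)"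
  using lin
proof (induction n arbitrary: i j)
  case 0
  have "(\<Sum>a\<in>idx_lists (Suc 0). \<Sum>b\<in>idx_lists (Suc 0).
        tensor (Suc 0) L a b * sandwich_chain \<rho> E (\<lambda>k. munit (a!k) (b!k)) R 0 i j)
      = (\<Sum>x\<in>UNIV. \<Sum>y\<in>UNIV. L 0 x y * (if i = x then mmul \<rho> (R 0) y j else 0))"
    unfolding sum_idx_lists_Suc idx_lists_0 by (simp add: tensor_def mmul_munit_left)
  also have "\<dots> = (\<Sum>y\<in>UNIV. L 0 i y * mmul \<rho> (R 0) y j)"
    by (simp add: if_distrib[of "\<lambda>v. _ * v"] cong: if_cong) (subst sum.swap, simp)
  also have "\<dots> = sandwich_chain \<rho> E L R 0 i j" by (simp add: mmul_def)
  finally show ?case by simp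
next
  case (Suc n)
  let ?I = "idx_lists (Suc n) :: 'd list set"
  let ?C = "\<lambda>a b. sandwich_chain \<rho> E (\<lambda>k. munit (a!k) (b!k)) R n"
  let ?F = "E (Suc n)"
  let ?B = "\<lambda>a b. mmul (?F (?C a b)) (R (Suc n))"
  have linF: "clinear_map ?F" using Suc.prems by auto
  have IH: "sandwich_chain \<rho> E L R n = (\<lambda>i j. \<Sum>a\<in>?I. \<Sum>b\<in>?I. tensor (Suc n) L a b * ?C a b i j)"
    using Suc by auto
  have FC: "?F (sandwich_chain \<rho> E L R n) = (\<lambda>i j. \<Sum>a\<in>?I. \<Sum>b\<in>?I. tensor (Suc n) L a b * ?F (?C a b) i j)"
    unfolding IH by (rule E_double_sum[OF linF])
  have Bsum: "mmul (?F (sandwich_chain \<rho> E L R n)) (R (Suc n)) y j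
      = (\<Sum>a\<in>?I. \<Sum>b\<in>?I. tensor (Suc n) L a b * ?B a b y j)" for y
  proof -
    have "mmul (?F (sandwich_chain \<rho> E L R n)) (R (Suc n)) y j
       = mmul (\<lambda>i j. \<Sum>a\<in>?I. 1 * (\<lambda>a i j. \<Sum>b\<in>?I. tensor (Suc n) L a b * ?F (?C a b) i j) a i j) (R (Suc n)) y j"
      unfolding FC by simp
    also have "\<dots> = (\<Sum>a\<in>?I. mmul (\<lambda>i j. \<Sum>b\<in>?I. tensor (Suc n) L a b * ?F (?C a b) i j) (R (Suc n)) y j)"
      by (subst mmul_sum_left) simp
    also have "\<dots> = (\<Sum>a\<in>?I. \<Sum>b\<in>?I. tensor (Suc n) L a b * ?B a b y j)"
      by (simp add: mmul_sum_left)
    finally show ?thesis .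
  qed
  have "sandwich_chain \<rho> E L R (Suc n) i j = (\<Sum>y\<in>UNIV. L (Suc n) i y * mmul (?F (sandwich_chain \<rho> E L R n)) (R (Suc n)) y j)"
    by (simp add: mmul_def)
  also have "\<dots> = (\<Sum>y\<in>UNIV. \<Sum>a\<in>?I. \<Sum>b\<in>?I. L (Suc n) i y * (tensor (Suc n) L a b * ?B a b y j))"
    by (simp add: Bsum sum_distrib_left)
  also have "\<dots> = (\<Sum>a\<in>?I. \<Sum>b\<in>?I. \<Sum>y\<in>UNIV. L (Suc n) i y * (tensor (Suc n) L a b * ?B a b y j))"
    by (subst sum.swap) (simp add: sum.swap[of _ UNIV ?I])
  also have "\<dots> = (\<Sum>a\<in>?I. \<Sum>x\<in>UNIV. \<Sum>b\<in>?I. \<Sum>y\<in>UNIV.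
        tensor (Suc (Suc n)) L (a @ [x]) (b @ [y]) * sandwich_chain \<rho> E (\<lambda>k. munit ((a @ [x])!k) ((b @ [y])!k)) R (Suc n) i j)"
  proof (rule sum.cong[OF refl])
    fix a assume a: "a \<in> ?I"
    have "(\<Sum>x\<in>UNIV. \<Sum>b\<in>?I. \<Sum>y\<in>UNIV.
        tensor (Suc (Suc n)) L (a @ [x]) (b @ [y]) * sandwich_chain \<rho> E (\<lambda>k. munit ((a @ [x])!k) ((b @ [y])!k)) R (Suc n) i j)
      = (\<Sum>x\<in>UNIV. \<Sum>b\<in>?I. \<Sum>y\<in>UNIV. tensor (Suc n) L a b * L (Suc n) x y * (if i = x then ?B a b y j else 0))"
    proof (intro sum.cong refl)
      fix x b y assume b: "b \<in> ?I"
      have la: "length a = Suc n" and lb: "length b = Suc n" using a b by (auto simp: idx_lists_length)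
      show "tensor (Suc (Suc n)) L (a @ [x]) (b @ [y]) * sandwich_chain \<rho> E (\<lambda>k. munit ((a @ [x])!k) ((b @ [y])!k)) R (Suc n) i j
          = tensor (Suc n) L a b * L (Suc n) x y * (if i = x then ?B a b y j else 0)"
        by (simp only: tensor_snoc[OF la lb] chain_snoc_L[OF la lb]) (simp add: mmul_munit_left)
    qed
    also have "\<dots> = (\<Sum>b\<in>?I. \<Sum>y\<in>UNIV. tensor (Suc n) L a b * L (Suc n) i y * ?B a b y j)"
      by (simp add: if_distrib[of "\<lambda>v. _ * v"] if_sum_out cong: if_cong)
    finally have X: "(\<Sum>x\<in>UNIV. \<Sum>b\<in>?I. \<Sum>y\<in>UNIV.
        tensor (Suc (Suc n)) L (a @ [x]) (b @ [y]) * sandwich_chain \<rho> E (\<lambda>k. munit ((a @ [x])!k) ((b @ [y])!k)) R (Suc n) i j)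
       = (\<Sum>b\<in>?I. \<Sum>y\<in>UNIV. tensor (Suc n) L a b * L (Suc n) i y * ?B a b y j)" .
    show "(\<Sum>b\<in>?I. \<Sum>y\<in>UNIV. L (Suc n) i y * (tensor (Suc n) L a b * ?B a b y j)) =
      (\<Sum>x\<in>UNIV. \<Sum>b\<in>?I. \<Sum>y\<in>UNIV.
        tensor (Suc (Suc n)) L (a @ [x]) (b @ [y]) * sandwich_chain \<rho> E (\<lambda>k. munit ((a @ [x])!k) ((b @ [y])!k)) R (Suc n) i j)"
      unfolding X by (simp add: ac_simps)
  qed
  also have "\<dots> = (\<Sum>a\<in>idx_lists (Suc (Suc n)). \<Sum>b\<in>idx_lists (Suc (Suc n)).
        tensor (Suc (Suc n)) L a b * sandwich_chain \<rho> E (\<lambda>k. munit (a!k) (b!k)) R (Suc n) i j)"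
    by (simp only: sum_idx_lists_Suc[of _ "Suc n"])
  finally show ?case .
qed

lemma chain_kernel_R:
  fixes \<rho> :: "('d::finite) sop"
  assumes lin: "\<forall>k\<in>{1..n}. clinear_map (E k)"
  shows "sandwich_chain \<rho> E L R n i j =
    (\<Sum>a\<in>idx_lists (Suc n). \<Sum>b\<in>idx_lists (Suc n).
        tensor (Suc n) R a b * sandwich_chain \<rho> E L (\<lambda>k. munit (a!k) (b!k)) n i j)"
  using lin
proof (induction n arbitrary: i j)
  case 0
  have "(\<Sum>a\<in>idx_lists (Suc 0). \<Sum>b\<in>idx_lists (Suc 0).
        tensor (Suc 0) R a b * sandwich_chain \<rho> E L (\<lambda>k. munit (a!k) (b!k)) 0 i j)
      = (\<Sum>x\<in>UNIV. \<Sum>y\<in>UNIV. R 0 x y * (if j = y then mmul (L 0) \<rho> i x else 0))"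
    unfolding sum_idx_lists_Suc idx_lists_0 by (simp add: tensor_def mmul_munit_right flip: mmul_assoc)
  also have "\<dots> = (\<Sum>x\<in>UNIV. mmul (L 0) \<rho> i x * R 0 x j)"
    by (simp add: if_distrib[of "\<lambda>v. _ * v"] mult.commute cong: if_cong)
  also have "\<dots> = sandwich_chain \<rho> E L R 0 i j" by (simp add: mmul_def flip: mmul_assoc)
  finally show ?case by simp
next
  case (Suc n)
  let ?I = "idx_lists (Suc n) :: 'd list set"
  let ?C = "\<lambda>a b. sandwich_chain \<rho> E L (\<lambda>k. munit (a!k) (b!k)) n"
  let ?F = "E (Suc n)"
  let ?B = "\<lambda>a b. mmul (L (Suc n)) (?F (?C a b))"
  have linF: "clinear_map ?F" using Suc.prems by auto
  have IH: "sandwich_chain \<rho> E L R n = (\<lambda>i j. \<Sum>a\<in>?I. \<Sum>b\<in>?I. tensor (Suc n) R a b * ?C a b i j)"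
    using Suc by auto
  have FC: "?F (sandwich_chain \<rho> E L R n) = (\<lambda>i j. \<Sum>a\<in>?I. \<Sum>b\<in>?I. tensor (Suc n) R a b * ?F (?C a b) i j)"
    unfolding IH by (rule E_double_sum[OF linF])
  have Bsum: "mmul (L (Suc n)) (?F (sandwich_chain \<rho> E L R n)) i y
      = (\<Sum>a\<in>?I. \<Sum>b\<in>?I. tensor (Suc n) R a b * ?B a b i y)" for y
  proof -
    have "mmul (L (Suc n)) (?F (sandwich_chain \<rho> E L R n)) i y
       = mmul (L (Suc n)) (\<lambda>i j. \<Sum>a\<in>?I. 1 * (\<lambda>a i j. \<Sum>b\<in>?I. tensor (Suc n) R a b * ?F (?C a b) i j) a i j) i y"
      unfolding FC by simp
    also have "\<dots> = (\<Sum>a\<in>?I. mmul (L (Suc n)) (\<lambda>i j. \<Sum>b\<in>?I. tensor (Suc n) R a b * ?F (?C a b) i j) i y)"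
      by (subst mmul_sum_right) simp
    also have "\<dots> = (\<Sum>a\<in>?I. \<Sum>b\<in>?I. tensor (Suc n) R a b * ?B a b i y)"
      by (simp add: mmul_sum_right)
    finally show ?thesis .
  qed
  have "sandwich_chain \<rho> E L R (Suc n) i j = (\<Sum>y\<in>UNIV. mmul (L (Suc n)) (?F (sandwich_chain \<rho> E L R n)) i y * R (Suc n) y j)"
    by (simp add: mmul_def flip: mmul_assoc)
  also have "\<dots> = (\<Sum>y\<in>UNIV. \<Sum>a\<in>?I. \<Sum>b\<in>?I. R (Suc n) y j * (tensor (Suc n) R a b * ?B a b i y))"
    by (simp add: Bsum sum_distrib_left sum_distrib_right mult.commute)
  also have "\<dots> = (\<Sum>a\<in>?I. \<Sum>b\<in>?I. \<Sum>y\<in>UNIV. R (Suc n) y j * (tensor (Suc n) R a b * ?B a b i y))"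
    by (subst sum.swap) (simp add: sum.swap[of _ UNIV ?I])
  also have "\<dots> = (\<Sum>a\<in>?I. \<Sum>x\<in>UNIV. \<Sum>b\<in>?I. \<Sum>y\<in>UNIV.
        tensor (Suc (Suc n)) R (a @ [x]) (b @ [y]) * sandwich_chain \<rho> E L (\<lambda>k. munit ((a @ [x])!k) ((b @ [y])!k)) (Suc n) i j)"
  proof (rule sum.cong[OF refl])
    fix a assume a: "a \<in> ?I"
    have "(\<Sum>x\<in>UNIV. \<Sum>b\<in>?I. \<Sum>y\<in>UNIV.
        tensor (Suc (Suc n)) R (a @ [x]) (b @ [y]) * sandwich_chain \<rho> E L (\<lambda>k. munit ((a @ [x])!k) ((b @ [y])!k)) (Suc n) i j)
      = (\<Sum>x\<in>UNIV. \<Sum>b\<in>?I. \<Sum>y\<in>UNIV. tensor (Suc n) R a b * R (Suc n) x y * (if j = y then ?B a b i x else 0))"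
    proof (intro sum.cong refl)
      fix x b y assume b: "b \<in> ?I"
      have la: "length a = Suc n" and lb: "length b = Suc n" using a b by (auto simp: idx_lists_length)
      show "tensor (Suc (Suc n)) R (a @ [x]) (b @ [y]) * sandwich_chain \<rho> E L (\<lambda>k. munit ((a @ [x])!k) ((b @ [y])!k)) (Suc n) i j
          = tensor (Suc n) R a b * R (Suc n) x y * (if j = y then ?B a b i x else 0)"
        by (simp only: tensor_snoc[OF la lb] chain_snoc_R[OF la lb]) (simp add: mmul_munit_right flip: mmul_assoc)
    qed
    also have "\<dots> = (\<Sum>b\<in>?I. \<Sum>x\<in>UNIV. tensor (Suc n) R a b * R (Suc n) x j * ?B a b i x)"
      by (subst sum.swap) (simp add: if_distrib[of "\<lambda>v. _ * v"] if_sum_out cong: if_cong)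
    also have "\<dots> = (\<Sum>x\<in>UNIV. \<Sum>b\<in>?I. tensor (Suc n) R a b * R (Suc n) x j * ?B a b i x)"
      by (rule sum.swap)
    finally have X: "(\<Sum>x\<in>UNIV. \<Sum>b\<in>?I. \<Sum>y\<in>UNIV.
        tensor (Suc (Suc n)) R (a @ [x]) (b @ [y]) * sandwich_chain \<rho> E L (\<lambda>k. munit ((a @ [x])!k) ((b @ [y])!k)) (Suc n) i j)
       = (\<Sum>x\<in>UNIV. \<Sum>b\<in>?I. tensor (Suc n) R a b * R (Suc n) x j * ?B a b i x)" .
    show "(\<Sum>b\<in>?I. \<Sum>y\<in>UNIV. R (Suc n) y j * (tensor (Suc n) R a b * ?B a b i y)) =
      (\<Sum>x\<in>UNIV. \<Sum>b\<in>?I. \<Sum>y\<in>UNIV.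
        tensor (Suc (Suc n)) R (a @ [x]) (b @ [y]) * sandwich_chain \<rho> E L (\<lambda>k. munit ((a @ [x])!k) ((b @ [y])!k)) (Suc n) i j)"
      unfolding X by (subst sum.swap) (simp add: ac_simps)
  qed
  also have "\<dots> = (\<Sum>a\<in>idx_lists (Suc (Suc n)). \<Sum>b\<in>idx_lists (Suc (Suc n)).
        tensor (Suc (Suc n)) R a b * sandwich_chain \<rho> E L (\<lambda>k. munit (a!k) (b!k)) (Suc n) i j)"
    by (simp only: sum_idx_lists_Suc[of _ "Suc n"])
  finally show ?case .
qed

definition has_kernel :: "nat \<Rightarrow> ((nat \<Rightarrow> ('d::finite) sop) \<Rightarrow> complex) \<Rightarrow> bool" where
  "has_kernel m F \<longleftrightarrow> (\<forall>P. F P = (\<Sum>a\<in>idx_lists m. \<Sum>b\<in>idx_lists m. tensor m P a b * F (\<lambda>k. munit (a!k) (b!k))))"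

lemma has_kernelD: "has_kernel m F \<Longrightarrow> F P = (\<Sum>a\<in>idx_lists m. \<Sum>b\<in>idx_lists m. tensor m P a b * F (\<lambda>k. munit (a!k) (b!k)))"
  unfolding has_kernel_def by blast

lemma sum_swap3: "(\<Sum>i\<in>A. \<Sum>a\<in>B. \<Sum>b\<in>C. f i a b) = (\<Sum>a\<in>B. \<Sum>b\<in>C. \<Sum>i\<in>A. f i a b)"
proof -
  have "(\<Sum>i\<in>A. \<Sum>a\<in>B. \<Sum>b\<in>C. f i a b) = (\<Sum>a\<in>B. \<Sum>i\<in>A. \<Sum>b\<in>C. f i a b)" by (rule sum.swap)
  also have "\<dots> = (\<Sum>a\<in>B. \<Sum>b\<in>C. \<Sum>i\<in>A. f i a b)" by (rule sum.cong[OF refl]) (rule sum.swap)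
  finally show ?thesis .
qed

lemma kernel_QKD_L:
  fixes \<rho> :: "('d::finite) sop"
  assumes "\<forall>k\<in>{1..n}. clinear_map (E k)"
  shows "has_kernel (Suc n) (\<lambda>P. QKD_doubled \<rho> E n P R)"
  unfolding has_kernel_def QKD_doubled_def mtr_def
proof (intro allI)
  fix P :: "nat \<Rightarrow> 'd sop"
  have "(\<Sum>i\<in>UNIV. sandwich_chain \<rho> E P R n i i) = (\<Sum>i\<in>UNIV. \<Sum>a\<in>idx_lists (Suc n). \<Sum>b\<in>idx_lists (Suc n).
        tensor (Suc n) P a b * sandwich_chain \<rho> E (\<lambda>k. munit (a!k) (b!k)) R n i i)"
    by (subst chain_kernel_L[OF assms]) (rule refl)
  also have "\<dots> = (\<Sum>a\<in>idx_lists (Suc n). \<Sum>b\<in>idx_lists (Suc n). \<Sum>i\<in>UNIV.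
        tensor (Suc n) P a b * sandwich_chain \<rho> E (\<lambda>k. munit (a!k) (b!k)) R n i i)"
    by (rule sum_swap3)
  finally show "(\<Sum>i\<in>UNIV. sandwich_chain \<rho> E P R n i i) = (\<Sum>a\<in>idx_lists (Suc n). \<Sum>b\<in>idx_lists (Suc n).
        tensor (Suc n) P a b * (\<Sum>i\<in>UNIV. sandwich_chain \<rho> E (\<lambda>k. munit (a!k) (b!k)) R n i i))"
    by (simp add: sum_distrib_left)
qed

lemma kernel_QKD_R:
  fixes \<rho> :: "('d::finite) sop"
  assumes "\<forall>k\<in>{1..n}. clinear_map (E k)"
  shows "has_kernel (Suc n) (\<lambda>P. QKD_doubled \<rho> E n L P)"
  unfolding has_kernel_def QKD_doubled_def mtr_def
proof (intro allI)
  fix P :: "nat \<Rightarrow> 'd sop"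
  have "(\<Sum>i\<in>UNIV. sandwich_chain \<rho> E L P n i i) = (\<Sum>i\<in>UNIV. \<Sum>a\<in>idx_lists (Suc n). \<Sum>b\<in>idx_lists (Suc n).
        tensor (Suc n) P a b * sandwich_chain \<rho> E L (\<lambda>k. munit (a!k) (b!k)) n i i)"
    by (subst chain_kernel_R[OF assms]) (rule refl)
  also have "\<dots> = (\<Sum>a\<in>idx_lists (Suc n). \<Sum>b\<in>idx_lists (Suc n). \<Sum>i\<in>UNIV.
        tensor (Suc n) P a b * sandwich_chain \<rho> E L (\<lambda>k. munit (a!k) (b!k)) n i i)"
    by (rule sum_swap3)
  finally show "(\<Sum>i\<in>UNIV. sandwich_chain \<rho> E L P n i i) = (\<Sum>a\<in>idx_lists (Suc n). \<Sum>b\<in>idx_lists (Suc n).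
        tensor (Suc n) P a b * (\<Sum>i\<in>UNIV. sandwich_chain \<rho> E L (\<lambda>k. munit (a!k) (b!k)) n i i))"
    by (simp add: sum_distrib_left)
qed

section \<open>Generic consequences of a kernel\<close>

lemma prod_indicator:
  "(\<Prod>k<(m::nat). (if P k then 1 else 0 :: complex)) = (if (\<forall>k<m. P k) then 1 else 0)"
  by (induction m) (auto simp: less_Suc_eq)

lemma tensor_idm:
  assumes "a \<in> idx_lists m" "b \<in> idx_lists m"
  shows "tensor m (\<lambda>_. idm) a b = (if a = b then 1 else 0)"
proof -
  have "tensor m (\<lambda>_. idm) a b = (if (\<forall>k<m. a!k = b!k) then 1 else 0)"
    unfolding tensor_def idm_def by (rule prod_indicator)
  also have "(\<forall>k<m. a!k = b!k) \<longleftrightarrow> a = b"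
    using assms by (auto simp: idx_lists_def intro: nth_equalityI)
  finally show ?thesis .
qed

lemma kernel_idm:
  assumes K: "has_kernel m F"
  shows "F (\<lambda>_. idm) = (\<Sum>z\<in>idx_lists m. F (\<lambda>k. munit (z!k) (z!k)))"
proof -
  have "F (\<lambda>_. idm) = (\<Sum>a\<in>idx_lists m. \<Sum>b\<in>idx_lists m. tensor m (\<lambda>_. idm) a b * F (\<lambda>k. munit (a!k) (b!k)))"
    by (rule has_kernelD[OF K])
  also have "\<dots> = (\<Sum>a\<in>idx_lists m. \<Sum>b\<in>idx_lists m. (if a = b then F (\<lambda>k. munit (a!k) (b!k)) else 0))"
    by (intro sum.cong refl) (simp add: tensor_idm)
  also have "\<dots> = (\<Sum>z\<in>idx_lists m. F (\<lambda>k. munit (z!k) (z!k)))"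
    by (simp add: sum.delta')
  finally show ?thesis .
qed

lemma kernel_born:
  assumes K: "has_kernel m F"
  shows "tr_on (idx_lists m) (mul_on (idx_lists m) (tensor m P) (\<lambda>z x. F (\<lambda>k. munit (x!k) (z!k)))) = F P"
  unfolding tr_on_def mul_on_def using has_kernelD[OF K, of P] by simp

lemma tensor_mult: "tensor m A a b * tensor m B x y = (\<Prod>k<m. A k (a!k) (b!k) * B k (x!k) (y!k))"
  unfolding tensor_def by (simp add: prod.distrib)

lemma kernel_pauli_state:
  fixes \<sigma> :: "nat \<Rightarrow> ('d::finite) sop"
  assumes K: "has_kernel m F"
    and comp: "\<And>a b x y. (\<Sum>\<mu><CARD('d)^2. \<sigma> \<mu> a b * \<sigma> \<mu> x y) = (if a = y \<and> b = x then of_nat CARD('d) else 0)"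
    and xs: "xs \<in> idx_lists m" and ys: "ys \<in> idx_lists m"
  shows "(1 / of_nat CARD('d) ^ m) * (\<Sum>\<mu>s\<in>pauli_idx CARD('d) m. F (\<lambda>k. \<sigma> (\<mu>s!k)) * tensor m (\<lambda>k. \<sigma> (\<mu>s!k)) xs ys)
       = F (\<lambda>k. munit (ys!k) (xs!k))"
proof -
  let ?d = "of_nat CARD('d) :: complex"
  let ?I = "idx_lists m :: 'd list set"
  let ?G = "\<lambda>a b. F (\<lambda>k. munit (a!k) (b!k))"
  have inner: "(\<Sum>\<mu>s\<in>pauli_idx CARD('d) m. tensor m (\<lambda>k. \<sigma> (\<mu>s!k)) a b * tensor m (\<lambda>k. \<sigma> (\<mu>s!k)) xs ys)
      = ?d ^ m * tensor m (\<lambda>k. munit (ys!k) (xs!k)) a b" for a b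
  proof -
    have "(\<Sum>\<mu>s\<in>pauli_idx CARD('d) m. tensor m (\<lambda>k. \<sigma> (\<mu>s!k)) a b * tensor m (\<lambda>k. \<sigma> (\<mu>s!k)) xs ys)
        = (\<Sum>\<mu>s\<in>outcome_lists (\<lambda>_. {..<CARD('d)^2}) m. \<Prod>k<m. \<sigma> (\<mu>s!k) (a!k) (b!k) * \<sigma> (\<mu>s!k) (xs!k) (ys!k))"
      unfolding pauli_idx_outcome tensor_mult ..
    also have "\<dots> = (\<Prod>k<m. \<Sum>\<mu>\<in>{..<CARD('d)^2}. \<sigma> \<mu> (a!k) (b!k) * \<sigma> \<mu> (xs!k) (ys!k))"
      by (rule sum_prod_outcome_lists[where f="\<lambda>k \<mu>. \<sigma> \<mu> (a!k) (b!k) * \<sigma> \<mu> (xs!k) (ys!k)"]) simp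
    also have "\<dots> = (\<Prod>k<m. ?d * munit (ys!k) (xs!k) (a!k) (b!k))"
      by (intro prod.cong refl) (simp add: comp munit_def)
    also have "\<dots> = ?d ^ m * tensor m (\<lambda>k. munit (ys!k) (xs!k)) a b"
      by (simp add: prod.distrib tensor_def)
    finally show ?thesis .
  qed
  have "(\<Sum>\<mu>s\<in>pauli_idx CARD('d) m. F (\<lambda>k. \<sigma> (\<mu>s!k)) * tensor m (\<lambda>k. \<sigma> (\<mu>s!k)) xs ys)
      = (\<Sum>\<mu>s\<in>pauli_idx CARD('d) m. \<Sum>a\<in>?I. \<Sum>b\<in>?I. ?G a b * (tensor m (\<lambda>k. \<sigma> (\<mu>s!k)) a b * tensor m (\<lambda>k. \<sigma> (\<mu>s!k)) xs ys))"
    by (subst has_kernelD[OF K]) (simp add: sum_distrib_right sum_distrib_left ac_simps)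
  also have "\<dots> = (\<Sum>a\<in>?I. \<Sum>b\<in>?I. \<Sum>\<mu>s\<in>pauli_idx CARD('d) m. ?G a b * (tensor m (\<lambda>k. \<sigma> (\<mu>s!k)) a b * tensor m (\<lambda>k. \<sigma> (\<mu>s!k)) xs ys))"
    by (rule sum_swap3)
  also have "\<dots> = (\<Sum>a\<in>?I. \<Sum>b\<in>?I. ?G a b * (?d ^ m * tensor m (\<lambda>k. munit (ys!k) (xs!k)) a b))"
    by (simp add: inner flip: sum_distrib_left)
  also have "\<dots> = ?d ^ m * F (\<lambda>k. munit (ys!k) (xs!k))"
    by (subst (2) has_kernelD[OF K]) (simp add: sum_distrib_left ac_simps)
  finally show ?thesis by simp
qed

lemma kernel_spectral:
  fixes \<sigma> :: "nat \<Rightarrow> ('d::finite) sop"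
  assumes K: "has_kernel m F"
    and spec: "\<And>\<mu>. \<mu> < CARD('d)^2 \<Longrightarrow> finite (eigenvalues (\<sigma> \<mu>)) \<and>
         (\<forall>i j. (\<Sum>e\<in>eigenvalues (\<sigma> \<mu>). e * spectral_projector (\<sigma> \<mu>) e i j) = \<sigma> \<mu> i j)"
    and mus: "\<mu>s \<in> pauli_idx CARD('d) m"
  shows "(\<Sum>as\<in>outcome_lists (\<lambda>k. eigenvalues (\<sigma> (\<mu>s!k))) m.
            (\<Prod>k<m. as!k) * F (\<lambda>k. spectral_projector (\<sigma> (\<mu>s!k)) (as!k)))
       = F (\<lambda>k. \<sigma> (\<mu>s!k))"
proof -
  let ?I = "idx_lists m :: 'd list set"
  let ?G = "\<lambda>a b. F (\<lambda>k. munit (a!k) (b!k))"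
  let ?S = "\<lambda>k. eigenvalues (\<sigma> (\<mu>s!k))"
  let ?SP = "\<lambda>k e. spectral_projector (\<sigma> (\<mu>s!k)) e"
  have lt: "\<And>k. k < m \<Longrightarrow> \<mu>s!k < CARD('d)^2" using mus by (simp add: pauli_idx_def)
  have inner: "(\<Sum>as\<in>outcome_lists ?S m. (\<Prod>k<m. as!k) * tensor m (\<lambda>k. ?SP k (as!k)) a b)
      = tensor m (\<lambda>k. \<sigma> (\<mu>s!k)) a b" for a b
  proof -
    have "(\<Sum>as\<in>outcome_lists ?S m. (\<Prod>k<m. as!k) * tensor m (\<lambda>k. ?SP k (as!k)) a b)
        = (\<Sum>as\<in>outcome_lists ?S m. \<Prod>k<m. as!k * ?SP k (as!k) (a!k) (b!k))"
      by (simp add: tensor_def prod.distrib)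
    also have "\<dots> = (\<Prod>k<m. \<Sum>e\<in>?S k. e * ?SP k e (a!k) (b!k))"
      by (rule sum_prod_outcome_lists[where f="\<lambda>k e. e * ?SP k e (a!k) (b!k)"]) (use spec lt in blast)
    also have "\<dots> = (\<Prod>k<m. \<sigma> (\<mu>s!k) (a!k) (b!k))"
      by (intro prod.cong refl) (use spec lt in blast)
    finally show ?thesis by (simp add: tensor_def)
  qed
  have "(\<Sum>as\<in>outcome_lists ?S m. (\<Prod>k<m. as!k) * F (\<lambda>k. ?SP k (as!k)))
      = (\<Sum>as\<in>outcome_lists ?S m. \<Sum>a\<in>?I. \<Sum>b\<in>?I. ?G a b * ((\<Prod>k<m. as!k) * tensor m (\<lambda>k. ?SP k (as!k)) a b))"
    by (subst has_kernelD[OF K]) (simp add: sum_distrib_left ac_simps)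
  also have "\<dots> = (\<Sum>a\<in>?I. \<Sum>b\<in>?I. \<Sum>as\<in>outcome_lists ?S m. ?G a b * ((\<Prod>k<m. as!k) * tensor m (\<lambda>k. ?SP k (as!k)) a b))"
    by (rule sum_swap3)
  also have "\<dots> = (\<Sum>a\<in>?I. \<Sum>b\<in>?I. ?G a b * tensor m (\<lambda>k. \<sigma> (\<mu>s!k)) a b)"
    by (simp add: inner flip: sum_distrib_left)
  also have "\<dots> = F (\<lambda>k. \<sigma> (\<mu>s!k))"
    by (subst (2) has_kernelD[OF K]) (simp add: ac_simps)
  finally show ?thesis .
qed

definition kpos :: "nat list \<Rightarrow> nat \<Rightarrow> nat" where
  "kpos ts k = (THE j. j < length ts \<and> ts!j = k)"

definition keepP :: "nat list \<Rightarrow> 'd list \<Rightarrow> 'd list \<Rightarrow> nat \<Rightarrow> 'd sop" where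
  "keepP ts xs ys k = (if k \<in> set ts then munit (ys!(kpos ts k)) (xs!(kpos ts k)) else idm)"

lemma kpos_nth: "distinct ts \<Longrightarrow> j < length ts \<Longrightarrow> kpos ts (ts!j) = j"
  unfolding kpos_def by (rule the_equality) (auto simp: nth_eq_iff_index_eq)

lemma kpos_in: "k \<in> set ts \<Longrightarrow> distinct ts \<Longrightarrow> kpos ts k < length ts \<and> ts!(kpos ts k) = k"
  by (metis in_set_conv_nth kpos_nth)

lemma keepP_nth: "distinct ts \<Longrightarrow> j < length ts \<Longrightarrow> keepP ts xs ys (ts!j) = munit (ys!j) (xs!j)"
  by (simp add: keepP_def kpos_nth)

lemma keepP_notin: "k \<notin> set ts \<Longrightarrow> keepP ts xs ys k = idm"
  by (simp add: keepP_def)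

lemma kernel_keep:
  fixes F :: "(nat \<Rightarrow> ('d::finite) sop) \<Rightarrow> complex"
  assumes K: "has_kernel m F" and dist: "distinct ts" and lt: "\<forall>t\<in>set ts. t < m"
  shows "(\<Sum>(zs, ws)\<in>keep_pairs m ts xs ys. F (\<lambda>k. munit (ws!k) (zs!k))) = F (keepP ts xs ys)"
proof -
  let ?I = "idx_lists m :: 'd list set"
  let ?G = "\<lambda>a b. F (\<lambda>k. munit (a!k) (b!k))"
  define cond where "cond a b \<longleftrightarrow> (\<forall>k<m. if k \<in> set ts then a!k = ys!(kpos ts k) \<and> b!k = xs!(kpos ts k) else a!k = b!k)"
    for a b :: "'d list"
  have tens: "tensor m (keepP ts xs ys) a b = (if cond a b then 1 else 0)" for a b
  proof -
    have "tensor m (keepP ts xs ys) a b = (\<Prod>k<m. if (if k \<in> set ts then a!k = ys!(kpos ts k) \<and> b!k = xs!(kpos ts k) else a!k = b!k) then 1 else 0)"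
      unfolding tensor_def by (intro prod.cong refl) (simp add: keepP_def munit_def idm_def)
    then show ?thesis unfolding cond_def by (simp only: prod_indicator)
  qed
  have keq: "keep_pairs m ts xs ys = (\<lambda>(a, b). (b, a)) ` {p \<in> ?I \<times> ?I. cond (fst p) (snd p)}"
  proof (intro set_eqI iffI)
    fix p assume p: "p \<in> keep_pairs m ts xs ys"
    obtain zs ws where pz: "p = (zs, ws)" by (cases p)
    have A: "length zs = m" "length ws = m" "\<forall>j<length ts. zs!(ts!j) = xs!j \<and> ws!(ts!j) = ys!j"
      "\<forall>t<m. t \<notin> set ts \<longrightarrow> zs!t = ws!t"
      using p pz by (auto simp: keep_pairs_def)
    have "cond ws zs"
      unfolding cond_def
    proof (intro allI impI)
      fix k assume k: "k < m"
      show "if k \<in> set ts then ws!k = ys!(kpos ts k) \<and> zs!k = xs!(kpos ts k) else ws!k = zs!k"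
      proof (cases "k \<in> set ts")
        case True
        with kpos_in[OF True dist] A(3) show ?thesis by force
      next
        case False then show ?thesis using A(4) k by auto
      qed
    qed
    then show "p \<in> (\<lambda>(a, b). (b, a)) ` {p \<in> ?I \<times> ?I. cond (fst p) (snd p)}"
      using A pz by (auto simp: idx_lists_def intro!: image_eqI[where x="(ws, zs)"])
  next
    fix p assume "p \<in> (\<lambda>(a, b). (b, a)) ` {p \<in> ?I \<times> ?I. cond (fst p) (snd p)}"
    then obtain a b where p: "p = (b, a)" and ab: "a \<in> ?I" "b \<in> ?I" and c: "cond a b" by auto
    have "\<forall>j<length ts. b!(ts!j) = xs!j \<and> a!(ts!j) = ys!j"
    proof (intro allI impI)
      fix j assume j: "j < length ts"
      then have "ts!j \<in> set ts" "ts!j < m" using lt by auto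
      with c j show "b!(ts!j) = xs!j \<and> a!(ts!j) = ys!j" unfolding cond_def
        by (metis kpos_nth[OF dist j])
    qed
    moreover have "\<forall>t<m. t \<notin> set ts \<longrightarrow> b!t = a!t" using c unfolding cond_def by auto
    ultimately show "p \<in> keep_pairs m ts xs ys" using ab p by (auto simp: keep_pairs_def idx_lists_def)
  qed
  have inj: "inj_on (\<lambda>(a, b). (b, a)) X" for X :: "('d list \<times> 'd list) set" by (auto simp: inj_on_def)
  have "(\<Sum>(zs, ws)\<in>keep_pairs m ts xs ys. F (\<lambda>k. munit (ws!k) (zs!k)))
      = (\<Sum>p\<in>{p \<in> ?I \<times> ?I. cond (fst p) (snd p)}. ?G (fst p) (snd p))"
    unfolding keq by (subst sum.reindex[OF inj]) (simp add: case_prod_unfold)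
  also have "\<dots> = (\<Sum>p\<in>?I \<times> ?I. if cond (fst p) (snd p) then ?G (fst p) (snd p) else 0)"
    by (rule sum.inter_filter) simp
  also have "\<dots> = (\<Sum>a\<in>?I. \<Sum>b\<in>?I. if cond a b then ?G a b else 0)"
    by (simp add: sum.cartesian_product case_prod_beta)
  also have "\<dots> = (\<Sum>a\<in>?I. \<Sum>b\<in>?I. tensor m (keepP ts xs ys) a b * ?G a b)"
    by (intro sum.cong refl) (simp add: tens)
  also have "\<dots> = F (keepP ts xs ys)" by (rule has_kernelD[OF K, symmetric])
  finally show ?thesis .
qed

lemma chain_gap:
  assumes "\<forall>t. a < t \<and> t \<le> a + l \<longrightarrow> L t = idm \<and> R t = idm"
  shows "sandwich_chain \<rho> E L R (a + l) = chan_seq E a l (sandwich_chain \<rho> E L R a)"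
  using assms
proof (induction l)
  case 0 then show ?case by simp
next
  case (Suc l)
  have "sandwich_chain \<rho> E L R (a + Suc l) = sandwich_chain \<rho> E L R (Suc (a + l))" by simp
  also have "\<dots> = E (a + Suc l) (sandwich_chain \<rho> E L R (a + l))"
    using Suc.prems by simp
  also have "\<dots> = chan_seq E a (Suc l) (sandwich_chain \<rho> E L R a)"
    using Suc by simp
  finally show ?case .
qed

lemma sorted_gap:
  fixes ts :: "nat list"
  assumes s: "sorted_wrt (<) ts" and j: "Suc j < length ts" and t: "ts!j < t" "t < ts!(Suc j)"
  shows "t \<notin> set ts"
proof
  assume "t \<in> set ts"
  then obtain i where i: "i < length ts" "ts!i = t" by (auto simp: in_set_conv_nth)
  have mono: "\<And>p q. p < q \<Longrightarrow> q < length ts \<Longrightarrow> ts!p < ts!q"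
    using s by (simp add: sorted_wrt_iff_nth_less)
  show False
  proof (cases "i \<le> j")
    case True
    then have "ts!i \<le> ts!j" using mono j by (cases "i = j") (auto intro: less_imp_le)
    then show False using i t by simp
  next
    case False
    then have "Suc j \<le> i" by simp
    then have "ts!(Suc j) \<le> ts!i" using mono i by (cases "i = Suc j") (auto intro: less_imp_le)
    then show False using i t by simp
  qed
qed

lemma chain_sub:
  assumes ne: "ts \<noteq> []" and t0: "ts!0 = 0" and s: "sorted_wrt (<) ts"
    and idm: "\<forall>t. t \<notin> set ts \<longrightarrow> L t = idm \<and> R t = idm"
    and j: "j < length ts"
  shows "sandwich_chain \<rho> E L R (ts!j) = sandwich_chain \<rho> (sub_channels E ts) (\<lambda>j. L (ts!j)) (\<lambda>j. R (ts!j)) j"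
  using j
proof (induction j)
  case 0 then show ?case using t0 by simp
next
  case (Suc j)
  let ?a = "ts!j" and ?b = "ts!(Suc j)"
  have ab: "?a < ?b" using s Suc.prems by (simp add: sorted_wrt_iff_nth_less)
  have gap: "\<forall>t. ?a < t \<and> t \<le> ?a + (?b - 1 - ?a) \<longrightarrow> L t = idm \<and> R t = idm"
    using sorted_gap[OF s Suc.prems] idm ab by auto
  have b1: "?a + (?b - 1 - ?a) = ?b - 1" using ab by simp
  have "sandwich_chain \<rho> E L R ?b = sandwich_chain \<rho> E L R (Suc (?b - 1))" using ab by simp
  also have "\<dots> = mmul (L ?b) (mmul (E ?b (sandwich_chain \<rho> E L R (?b - 1))) (R ?b))"
    using ab by (simp only: sandwich_chain.simps) simp
  also have "sandwich_chain \<rho> E L R (?b - 1) = chan_seq E ?a (?b - 1 - ?a) (sandwich_chain \<rho> E L R ?a)"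
    using chain_gap[OF gap] b1 by simp
  also have "E ?b (chan_seq E ?a (?b - 1 - ?a) (sandwich_chain \<rho> E L R ?a)) = chan_seq E ?a (?b - ?a) (sandwich_chain \<rho> E L R ?a)"
  proof -
    have "?b - ?a = Suc (?b - 1 - ?a)" using ab by simp
    moreover have "?a + Suc (?b - 1 - ?a) = ?b" using ab by simp
    ultimately show ?thesis by simp
  qed
  also have "sandwich_chain \<rho> E L R ?a = sandwich_chain \<rho> (sub_channels E ts) (\<lambda>j. L (ts!j)) (\<lambda>j. R (ts!j)) j"
    using Suc by simp
  finally have X: "sandwich_chain \<rho> E L R ?b = mmul (L ?b) (mmul (chan_seq E ?a (?b - ?a)
      (sandwich_chain \<rho> (sub_channels E ts) (\<lambda>j. L (ts!j)) (\<lambda>j. R (ts!j)) j)) (R ?b))" .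
  have sc: "sub_channels E ts (Suc j) = chan_seq E ?a (?b - ?a)" by (simp add: sub_channels_def)
  show ?case using X sc by simp
qed

lemma mtr_chan_seq:
  assumes "\<forall>t. a < t \<and> t \<le> a + l \<longrightarrow> trace_preserving (E t)"
  shows "mtr (chan_seq E a l X) = mtr X"
  using assms by (induction l) (auto simp: trace_preserving_def)

lemma mtr_chain_tail:
  assumes "a \<le> n" and "\<forall>t. a < t \<and> t \<le> n \<longrightarrow> L t = idm \<and> R t = idm"
    and "\<forall>t. a < t \<and> t \<le> n \<longrightarrow> trace_preserving (E t)"
  shows "mtr (sandwich_chain \<rho> E L R n) = mtr (sandwich_chain \<rho> E L R a)"
proof -
  have n: "n = a + (n - a)" using assms by simp
  have "sandwich_chain \<rho> E L R n = chan_seq E a (n - a) (sandwich_chain \<rho> E L R a)"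
    by (subst n, rule chain_gap) (use assms in auto)
  then show ?thesis using mtr_chan_seq[of a "n - a" E] assms by simp
qed

lemma clinear_comp: "clinear_map F \<Longrightarrow> clinear_map G \<Longrightarrow> clinear_map (F \<circ> G)"
  unfolding clinear_map_def by simp

lemma clinear_id: "clinear_map id"
  unfolding clinear_map_def by simp

lemma clinear_chan_seq:
  assumes "\<forall>t. a < t \<and> t \<le> a + l \<longrightarrow> clinear_map (E t)"
  shows "clinear_map (chan_seq E a l)"
  using assms by (induction l) (auto intro: clinear_comp clinear_id)

lemma sorted_last_max:
  fixes ts :: "nat list"
  assumes "sorted_wrt (<) ts" "i < length ts"
  shows "ts!i \<le> ts!(length ts - 1)"
  using assms by (cases "i = length ts - 1") (auto simp: sorted_wrt_iff_nth_less intro: less_imp_le)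

lemma QKD_sub:
  assumes ne: "ts \<noteq> []" and t0: "ts!0 = 0" and s: "sorted_wrt (<) ts" and le: "\<forall>t\<in>set ts. t \<le> n"
    and idm: "\<forall>t. t \<notin> set ts \<longrightarrow> L t = idm \<and> R t = idm"
    and tp: "\<forall>t\<in>{1..n}. trace_preserving (E t)"
  shows "QKD_doubled \<rho> E n L R = QKD_doubled \<rho> (sub_channels E ts) (length ts - 1) (\<lambda>j. L (ts!j)) (\<lambda>j. R (ts!j))"
proof -
  let ?l = "length ts - 1"
  let ?a = "ts!?l"
  have l: "?l < length ts" using ne by simp
  have an: "?a \<le> n" using le l by auto
  have notin: "t \<notin> set ts" if "?a < t" for t
  proof
    assume "t \<in> set ts"
    then obtain i where "i < length ts" "ts!i = t" by (auto simp: in_set_conv_nth)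
    with sorted_last_max[OF s] that show False by fastforce
  qed
  have "mtr (sandwich_chain \<rho> E L R n) = mtr (sandwich_chain \<rho> E L R ?a)"
    by (rule mtr_chain_tail[OF an]) (use notin idm tp in auto)
  also have "sandwich_chain \<rho> E L R ?a = sandwich_chain \<rho> (sub_channels E ts) (\<lambda>j. L (ts!j)) (\<lambda>j. R (ts!j)) ?l"
    by (rule chain_sub[OF ne t0 s idm l])
  finally show ?thesis by (simp add: QKD_doubled_def)
qed

lemma sub_channels_linear:
  assumes ne: "ts \<noteq> []" and s: "sorted_wrt (<) ts" and le: "\<forall>t\<in>set ts. t \<le> n"
    and lin: "\<forall>t\<in>{1..n}. clinear_map (E t)"
  shows "\<forall>j\<in>{1..length ts - 1}. clinear_map (sub_channels E ts j)"
proof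
  fix j assume j: "j \<in> {1..length ts - 1}"
  then have j1: "j - 1 < j" "j < length ts" by auto
  have ab: "ts!(j - 1) < ts!j" using s j1 by (simp add: sorted_wrt_iff_nth_less)
  have bn: "ts!j \<le> n" using le j1 by auto
  show "clinear_map (sub_channels E ts j)"
    unfolding sub_channels_def
    by (rule clinear_chan_seq) (use ab bn lin in auto)
qed

lemma chain_prefix:
  assumes "\<forall>t<k. L t = idm \<and> R t = idm"
  shows "sandwich_chain \<rho> E L R k = mmul (L k) (mmul (chan_seq E 0 k \<rho>) (R k))"
proof (cases k)
  case 0 then show ?thesis by simp
next
  case (Suc k')
  have c0: "sandwich_chain \<rho> E L R 0 = \<rho>" using assms Suc by simp
  have "sandwich_chain \<rho> E L R (0 + k') = chan_seq E 0 k' (sandwich_chain \<rho> E L R 0)"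
    by (rule chain_gap) (use assms Suc in auto)
  then show ?thesis using Suc c0 by simp
qed

definition madd :: "'d sop \<Rightarrow> 'd sop \<Rightarrow> 'd sop" where "madd A B = (\<lambda>i j. A i j + B i j)"
definition msc :: "complex \<Rightarrow> 'd sop \<Rightarrow> 'd sop" where "msc c A = (\<lambda>i j. c * A i j)"
definition mzero :: "'d sop" where "mzero = (\<lambda>i j. 0)"

lemma mmul_mzero_right[simp]: "mmul A mzero = mzero"
  by (intro ext) (simp add: mmul_def mzero_def)
lemma mmul_mzero_left[simp]: "mmul mzero A = mzero"
  by (intro ext) (simp add: mmul_def mzero_def)
lemma mmul_madd_left: "mmul (madd X Y) Z = madd (mmul X Z) (mmul Y Z)"
  by (intro ext) (simp add: mmul_def madd_def algebra_simps sum.distrib)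
lemma mmul_madd_right: "mmul Z (madd X Y) = madd (mmul Z X) (mmul Z Y)"
  by (intro ext) (simp add: mmul_def madd_def algebra_simps sum.distrib)
lemma mmul_msc_left: "mmul (msc c X) Z = msc c (mmul X Z)"
  by (intro ext) (simp add: mmul_def msc_def sum_distrib_left mult.assoc)
lemma mmul_msc_right: "mmul Z (msc c X) = msc c (mmul Z X)"
  by (intro ext) (simp add: mmul_def msc_def sum_distrib_left algebra_simps)
lemma madd_mzero[simp]: "madd A mzero = A" "madd mzero A = A"
  by (simp_all add: madd_def mzero_def)
lemma msc_0[simp]: "msc 0 A = mzero" by (simp add: msc_def mzero_def)
lemma msc_1[simp]: "msc 1 A = A" by (simp add: msc_def)
lemma msc_mzero[simp]: "msc c mzero = mzero" by (simp add: msc_def mzero_def)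

fun mpow :: "('d::finite) sop \<Rightarrow> nat \<Rightarrow> 'd sop" where
  "mpow A 0 = idm"
| "mpow A (Suc k) = mmul A (mpow A k)"

definition peval :: "complex poly \<Rightarrow> ('d::finite) sop \<Rightarrow> 'd sop" where
  "peval p A = fold_coeffs (\<lambda>a M. madd (msc a idm) (mmul A M)) p mzero"

lemma peval_0[simp]: "peval 0 A = mzero"
  by (simp add: peval_def)

lemma peval_pCons: "peval (pCons a p) A = madd (msc a idm) (mmul A (peval p A))"
proof (cases "p = 0 \<and> a = 0")
  case True then show ?thesis by (simp add: peval_def)
next
  case False
  then have "fold_coeffs (\<lambda>a M. madd (msc a idm) (mmul A M)) (pCons a p)
      = (\<lambda>a M. madd (msc a idm) (mmul A M)) a \<circ> fold_coeffs (\<lambda>a M. madd (msc a idm) (mmul A M)) p"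
    by auto
  then show ?thesis by (simp add: peval_def)
qed

lemma peval_add: "peval (p + q) A = madd (peval p A) (peval q A)"
proof (induction p q rule: poly_induct2)
  case 0 then show ?case by simp
next
  case (pCons a p b q)
  then show ?case
    by (simp add: peval_pCons mmul_madd_right) (simp add: madd_def msc_def algebra_simps)
qed

lemma peval_smult: "peval (smult c p) A = msc c (peval p A)"
proof (induction p)
  case 0 then show ?case by simp
next
  case (pCons a p)
  then show ?case
    by (simp add: peval_pCons mmul_msc_right) (simp add: madd_def msc_def algebra_simps)
qed

lemma peval_mult: "peval (p * q) A = mmul (peval p A) (peval q A)"
proof (induction p)
  case 0 then show ?case by simp
next
  case (pCons a p)
  have "peval (pCons a p * q) A = madd (msc a (peval q A)) (mmul A (peval (p * q) A))"
    by (simp add: peval_add peval_smult peval_pCons)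
  also have "\<dots> = mmul (peval (pCons a p) A) (peval q A)"
    using pCons by (simp add: peval_pCons mmul_madd_left mmul_msc_left mmul_assoc)
  finally show ?case .
qed

lemma peval_const: "peval [:c:] A = msc c idm"
  by (simp add: peval_pCons)

lemma peval_1[simp]: "peval 1 A = idm"
  by (simp add: one_pCons peval_const)

lemma peval_x: "peval [:0, 1:] A = A"
  by (simp add: peval_pCons)

lemma peval_lin: "peval [:-r, 1:] A i j = A i j - r * idm i j"
  by (simp add: peval_pCons) (simp add: madd_def msc_def)

lemma peval_monom: "peval (monom c k) A = msc c (mpow A k)"
proof (induction k)
  case 0 then show ?case by (simp add: monom_0 peval_const)
next
  case (Suc k)
  then show ?case by (simp add: monom_Suc peval_pCons mmul_msc_right)
qed

lemma peval_sum: "finite S \<Longrightarrow> peval (\<Sum>x\<in>S. p x) A i j = (\<Sum>x\<in>S. peval (p x) A i j)"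
  by (induction S rule: finite_induct) (simp_all add: peval_add madd_def mzero_def)

lemma peval_diff: "peval (p - q) A i j = peval p A i j - peval q A i j"
proof -
  have eq: "p - q = p + smult (-1) q" by simp
  have "peval (p - q) A = madd (peval p A) (msc (-1) (peval q A))"
    unfolding eq by (simp only: peval_add peval_smult)
  then show ?thesis by (simp add: madd_def msc_def)
qed

lemma peval_commute: "mmul (peval p A) (peval q A) = mmul (peval q A) (peval p A)"
  by (metis peval_mult mult.commute)

lemma mvec_mmul: "mvec (mmul X Y) v = mvec X (mvec Y v)"
proof (rule ext)
  fix i
  have "mvec (mmul X Y) v i = (\<Sum>j\<in>UNIV. \<Sum>k\<in>UNIV. X i k * Y k j * v j)"
    by (simp add: mvec_def mmul_def sum_distrib_right)
  also have "\<dots> = (\<Sum>k\<in>UNIV. \<Sum>j\<in>UNIV. X i k * Y k j * v j)" by (rule sum.swap)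
  also have "\<dots> = mvec X (mvec Y v) i" by (simp add: mvec_def sum_distrib_left mult.assoc)
  finally show "mvec (mmul X Y) v i = mvec X (mvec Y v) i" .
qed

lemma mvec_madd: "mvec (madd X Y) v = (\<lambda>i. mvec X v i + mvec Y v i)"
  by (intro ext) (simp add: mvec_def madd_def algebra_simps sum.distrib)
lemma mvec_msc: "mvec (msc c X) v = (\<lambda>i. c * mvec X v i)"
  by (intro ext) (simp add: mvec_def msc_def sum_distrib_left mult.assoc)
lemma mvec_idm[simp]: "mvec idm v = v"
  by (intro ext) (simp add: mvec_def idm_def if_distrib[of "\<lambda>z. z * _"] cong: if_cong)
lemma mvec_mzero[simp]: "mvec mzero v = (\<lambda>i. 0)"
  by (intro ext) (simp add: mvec_def mzero_def)
lemma mvec_scale: "mvec X (\<lambda>i. c * v i) = (\<lambda>i. c * mvec X v i)"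
  by (intro ext) (simp add: mvec_def sum_distrib_left algebra_simps)
lemma mvec_zero[simp]: "mvec X (\<lambda>i. 0) = (\<lambda>i. 0)"
  by (intro ext) (simp add: mvec_def)

lemma mvec_peval_eig:
  assumes "mvec A v = (\<lambda>i. e * v i)"
  shows "mvec (peval p A) v = (\<lambda>i. poly p e * v i)"
proof (induction p)
  case 0 then show ?case by simp
next
  case (pCons a p)
  show ?case
    by (simp add: peval_pCons mvec_madd mvec_msc mvec_mmul pCons.IH mvec_scale assms) (simp add: algebra_simps)
qed

lemma mat_eqI_mvec: "(\<And>v. mvec X v = mvec Y v) \<Longrightarrow> X = (Y :: ('d::finite) sop)"
proof (intro ext)
  fix i j
  assume h: "\<And>v. mvec X v = mvec Y v"
  have "\<And>Z :: 'd sop. mvec Z (\<lambda>k. if k = j then 1 else 0) i = Z i j"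
    by (simp add: mvec_def if_distrib[of "\<lambda>z. _ * z"] cong: if_cong)
  then show "X i j = Y i j" using h by metis
qed

lemma hermitian_adj: "hermitian A \<longleftrightarrow> op_adj A = A"
proof
  assume "hermitian A"
  then show "op_adj A = A" unfolding hermitian_def op_adj_def
    by (intro ext) (metis complex_cnj_cnj)
next
  assume h: "op_adj A = A"
  show "hermitian A" unfolding hermitian_def
  proof (intro allI)
    fix i j
    have "A i j = op_adj A i j" using h by simp
    then show "A i j = cnj (A j i)" by (simp add: op_adj_def)
  qed
qed

lemma op_adj_mmul: "op_adj (mmul A B) = mmul (op_adj B) (op_adj A)"
  by (intro ext) (simp add: op_adj_def mmul_def mult.commute)

lemma op_adj_adj[simp]: "op_adj (op_adj A) = A"
  by (intro ext) (simp add: op_adj_def)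

lemma cnj_sum_sq: "(\<Sum>i\<in>S. cnj (u i) * u i) = complex_of_real (\<Sum>i\<in>S. (cmod (u i))\<^sup>2)"
proof -
  have "(\<Sum>i\<in>S. cnj (u i) * u i) = (\<Sum>i\<in>S. complex_of_real ((cmod (u i))\<^sup>2))"
    by (rule sum.cong[OF refl], subst complex_norm_square) (simp add: mult.commute)
  then show ?thesis by (simp only: of_real_sum)
qed

lemma sum_sq_zero:
  fixes u :: "('d::finite) \<Rightarrow> complex"
  assumes "(\<Sum>i\<in>UNIV. cnj (u i) * u i) = 0"
  shows "u = (\<lambda>i. 0 :: complex)"
proof -
  have "(\<Sum>i\<in>UNIV. (cmod (u i))\<^sup>2) = 0"
    using assms unfolding cnj_sum_sq by (simp only: of_real_eq_0_iff)
  then have "\<forall>i\<in>UNIV. (cmod (u i))\<^sup>2 = 0"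
    by (subst sum_nonneg_eq_0_iff[symmetric]) auto
  then show ?thesis by auto
qed

lemma sum_sq_pos:
  fixes u :: "('d::finite) \<Rightarrow> complex"
  assumes "u \<noteq> (\<lambda>i. 0)"
  shows "0 < (\<Sum>i\<in>UNIV. (cmod (u i))\<^sup>2)"
proof -
  obtain k where "u k \<noteq> 0" using assms by auto
  then show ?thesis by (intro sum_pos2[of UNIV k]) auto
qed

lemma quad_adj:
  fixes w u :: "('d::finite) \<Rightarrow> complex" and B :: "'d sop"
  shows "(\<Sum>i\<in>UNIV. cnj (w i) * mvec B u i) = (\<Sum>j\<in>UNIV. cnj (mvec (op_adj B) w j) * u j)"
proof -
  have "(\<Sum>i\<in>UNIV. cnj (w i) * mvec B u i) = (\<Sum>i\<in>UNIV. \<Sum>j\<in>UNIV. cnj (w i) * B i j * u j)"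
    by (simp add: mvec_def sum_distrib_left mult.assoc)
  also have "\<dots> = (\<Sum>j\<in>UNIV. \<Sum>i\<in>UNIV. cnj (w i) * B i j * u j)" by (rule sum.swap)
  also have "\<dots> = (\<Sum>j\<in>UNIV. cnj (mvec (op_adj B) w j) * u j)"
    by (simp add: mvec_def op_adj_def sum_distrib_right sum_distrib_left mult.commute)
  finally show ?thesis .
qed

lemma quad_real:
  fixes A :: "('d::finite) sop"
  assumes "hermitian A"
  shows "Im (\<Sum>i\<in>UNIV. cnj (v i) * mvec A v i) = 0"
proof -
  let ?z = "\<Sum>i\<in>UNIV. cnj (v i) * mvec A v i"
  have "?z = (\<Sum>j\<in>UNIV. cnj (mvec A v j) * v j)"
    using quad_adj[of v A v] assms by (simp add: hermitian_adj)
  also have "\<dots> = cnj ?z" by (simp add: mult.commute)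
  finally show ?thesis by (metis Reals_cnj_iff complex_is_Real_iff)
qed

lemma eig_real:
  fixes A :: "('d::finite) sop"
  assumes h: "hermitian A" and e: "e \<in> eigenvalues A"
  shows "Im e = 0"
proof -
  obtain v where v: "v \<noteq> (\<lambda>_. 0)" "mvec A v = (\<lambda>i. e * v i)"
    using e by (auto simp: eigenvalues_def)
  have "(\<Sum>i\<in>UNIV. cnj (v i) * mvec A v i) = e * (\<Sum>i\<in>UNIV. cnj (v i) * v i)"
    by (simp add: v(2) sum_distrib_left algebra_simps)
  also have "\<dots> = e * complex_of_real (\<Sum>i\<in>UNIV. (cmod (v i))\<^sup>2)"
    by (simp only: cnj_sum_sq)
  finally have "(\<Sum>i\<in>UNIV. cnj (v i) * mvec A v i) = e * complex_of_real (\<Sum>i\<in>UNIV. (cmod (v i))\<^sup>2)" .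
  then have "Im (e * complex_of_real (\<Sum>i\<in>UNIV. (cmod (v i))\<^sup>2)) = 0"
    using quad_real[OF h, of v] by simp
  then show ?thesis using sum_sq_pos[OF v(1)] by simp
qed

lemma herm_sq_zero:
  fixes B :: "('d::finite) sop"
  assumes h: "hermitian B" and z: "mvec B (mvec B w) = (\<lambda>i. 0)"
  shows "mvec B w = (\<lambda>i. 0 :: complex)"
proof -
  let ?u = "mvec B w"
  have "(\<Sum>i\<in>UNIV. cnj (?u i) * ?u i) = (\<Sum>j\<in>UNIV. cnj (mvec (op_adj B) ?u j) * w j)"
    by (rule quad_adj)
  also have "\<dots> = 0" using h z by (simp add: hermitian_adj)
  finally have "(\<Sum>i\<in>UNIV. cnj (?u i) * ?u i) = 0" .
  then show ?thesis by (rule sum_sq_zero)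
qed

section \<open>Existence of an annihilating polynomial\<close>

lemma exists_annihilator:
  fixes A :: "('d::finite) sop"
  shows "\<exists>p. p \<noteq> 0 \<and> peval p A = mzero"
proof -
  define toV :: "'d sop \<Rightarrow> complex^('d \<times> 'd)" where "toV M = (\<chi> q. M (fst q) (snd q))" for M
  have toV_nth: "toV M $ (i, j) = M i j" for M i j by (simp add: toV_def)
  define N where "N = DIM(complex^('d \<times> 'd))"
  define f where "f k = toV (mpow A k)" for k
  show ?thesis
  proof (cases "inj_on f {..N}")
    case True
    have "card (f ` {..N}) = Suc N" using card_image[OF True] by simp
    then have "dependent (f ` {..N})" by (intro dependent_biggerset) (simp add: N_def)
    then obtain u where u1: "\<exists>v\<in>f ` {..N}. u v \<noteq> 0" and u2: "(\<Sum>v\<in>f ` {..N}. u v *\<^sub>R v) = 0"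
      using real_vector.dependent_finite[of "f ` {..N}"] by auto
    define p where "p = (\<Sum>k\<le>N. monom (complex_of_real (u (f k))) k)"
    have coeff_p: "coeff p k = (if k \<le> N then complex_of_real (u (f k)) else 0)" for k
      unfolding p_def by (simp add: coeff_sum)
    obtain k0 where k0: "k0 \<le> N" "u (f k0) \<noteq> 0" using u1 by auto
    have "coeff p k0 \<noteq> 0" using k0 by (simp add: coeff_p)
    then have pne: "p \<noteq> 0" by auto
    have "peval p A = mzero"
    proof (intro ext)
      fix i j
      have "peval p A i j = (\<Sum>k\<le>N. complex_of_real (u (f k)) * mpow A k i j)"
        unfolding p_def by (simp add: peval_sum peval_monom msc_def)
      also have "\<dots> = (\<Sum>k\<le>N. (u (f k) *\<^sub>R f k) $ (i, j))"
        by (simp only: f_def vector_scaleR_component toV_nth) (simp add: scaleR_conv_of_real)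
      also have "\<dots> = (\<Sum>v\<in>f ` {..N}. (u v *\<^sub>R v) $ (i, j))"
        by (rule sum.reindex[OF True, symmetric, unfolded comp_def])
      also have "\<dots> = (\<Sum>v\<in>f ` {..N}. u v *\<^sub>R v) $ (i, j)" by simp
      also have "\<dots> = 0" using u2 by simp
      finally show "peval p A i j = mzero i j" by (simp add: mzero_def)
    qed
    with pne show ?thesis by blast
  next
    case False
    then obtain k1 k2 where k: "k1 \<le> N" "k2 \<le> N" "k1 \<noteq> k2" "f k1 = f k2"
      by (auto simp: inj_on_def)
    have eqm: "mpow A k1 = mpow A k2"
    proof (intro ext)
      fix i j show "mpow A k1 i j = mpow A k2 i j"
        using arg_cong[OF k(4), of "\<lambda>x. x $ (i, j)"] by (simp add: f_def toV_nth)
    qed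
    define p where "p = monom (1::complex) k1 - monom 1 k2"
    have "coeff p k1 = 1" using k(3) by (simp add: p_def)
    then have pne: "p \<noteq> 0" by auto
    have "peval p A = mzero"
      by (intro ext) (simp add: p_def peval_diff peval_monom msc_def eqm mzero_def)
    with pne show ?thesis by blast
  qed
qed

declare mult_pCons_left[simp del] mult_pCons_right[simp del]

lemma peval_lin_mat: "peval [:-r, 1:] A = madd (msc (-r) idm) A"
  by (simp add: peval_pCons)

lemma mvec_lin: "mvec (peval [:-r, 1:] A) w = (\<lambda>i. mvec A w i - r * w i)"
  by (simp add: peval_lin_mat mvec_madd mvec_msc)

lemma drop_root:
  fixes A :: "('d::finite) sop"
  assumes r: "r \<notin> eigenvalues A" and z: "peval (s * [:-r, 1:]) A = mzero"
  shows "peval s A = mzero"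
proof (rule mat_eqI_mvec)
  fix v :: "'d \<Rightarrow> complex"
  let ?w = "mvec (peval s A) v"
  have "mvec (peval [:-r, 1:] A) ?w = mvec (peval ([:-r, 1:] * s) A) v"
    by (simp only: peval_mult mvec_mmul)
  also have "\<dots> = (\<lambda>i. 0)" using z by (simp add: mult.commute)
  finally have h0: "(\<lambda>i. mvec A ?w i - r * ?w i) = (\<lambda>i. 0)" unfolding mvec_lin .
  have "mvec A ?w = (\<lambda>i. r * ?w i)"
  proof (rule ext)
    fix i from fun_cong[OF h0, of i] show "mvec A ?w i = r * ?w i" by simp
  qed
  then have "?w = (\<lambda>_. 0)" using r unfolding eigenvalues_def by blast
  then show "mvec (peval s A) v = mvec mzero v" by simp
qed

lemma hermitian_lin:
  fixes A :: "('d::finite) sop"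
  assumes h: "hermitian A" and r: "r \<in> \<real>"
  shows "hermitian (peval [:-r, 1:] A)"
  unfolding hermitian_def peval_lin_mat madd_def msc_def
proof (intro allI)
  fix i j :: 'd
  have c: "cnj r = r" using r Reals_cnj_iff by blast
  have "cnj (idm j i) = idm i j" by (simp add: idm_def)
  moreover have "A i j = cnj (A j i)" using h unfolding hermitian_def by blast
  ultimately show "- r * idm i j + A i j = cnj (- r * idm j i + A j i)" using c by simp
qed

lemma square_root:
  fixes A :: "('d::finite) sop"
  assumes h: "hermitian A" and r: "r \<in> \<real>" and z: "peval (s * [:-r, 1:]^2) A = mzero"
  shows "peval (s * [:-r, 1:]) A = mzero"
proof (rule mat_eqI_mvec)
  fix v :: "'d \<Rightarrow> complex"
  let ?B = "peval [:-r, 1:] A"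
  let ?w = "mvec (peval s A) v"
  have e1: "[:-r, 1:] * ([:-r, 1:] * s) = s * [:-r, 1:]^2" by (simp only: power2_eq_square ac_simps)
  have "mvec ?B (mvec ?B ?w) = mvec (peval (s * [:-r, 1:]^2) A) v"
    by (simp only: peval_mult[symmetric] mvec_mmul[symmetric] e1)
  also have "\<dots> = (\<lambda>i. 0)" by (simp only: z mvec_mzero)
  finally have "mvec ?B (mvec ?B ?w) = (\<lambda>i. 0)" .
  then have "mvec ?B ?w = (\<lambda>i. 0)" by (rule herm_sq_zero[OF hermitian_lin[OF h r]])
  moreover have "mvec (peval (s * [:-r, 1:]) A) v = mvec ?B ?w"
    by (simp only: peval_mult[symmetric] mvec_mmul[symmetric] mult.commute[of s])
  ultimately show "mvec (peval (s * [:-r, 1:]) A) v = mvec mzero v" by simp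
qed

lemma eig_Reals: "hermitian A \<Longrightarrow> e \<in> eigenvalues A \<Longrightarrow> e \<in> \<real>"
  using eig_real complex_is_Real_iff by blast

lemma annih_reduce:
  fixes A :: "('d::finite) sop"
  assumes h: "hermitian A"
  shows "peval (s * (\<Prod>x\<in>#M. [:-x, 1:])) A = mzero \<Longrightarrow>
         peval (s * (\<Prod>x\<in>(set_mset M \<inter> eigenvalues A). [:-x, 1:])) A = mzero"
proof (induction M arbitrary: s rule: multiset_induct)
  case empty then show ?case by simp
next
  case (add x M)
  let ?S = "set_mset M \<inter> eigenvalues A"
  have fin: "finite ?S" by simp
  have "peval ((s * [:-x, 1:]) * (\<Prod>x\<in>#M. [:-x, 1:])) A = mzero"
    using add.prems by (simp add: ac_simps)
  from add.IH[OF this] have IH: "peval (s * [:-x, 1:] * (\<Prod>x\<in>?S. [:-x, 1:])) A = mzero" .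
  show ?case
  proof (cases "x \<in> eigenvalues A")
    case False
    have T: "set_mset (add_mset x M) \<inter> eigenvalues A = ?S" using False by auto
    have "peval ((s * (\<Prod>x\<in>?S. [:-x, 1:])) * [:-x, 1:]) A = mzero"
      using IH by (simp add: ac_simps)
    from drop_root[OF False this] show ?thesis unfolding T .
  next
    case True
    note xr = eig_Reals[OF h True]
    show ?thesis
    proof (cases "x \<in> set_mset M")
      case True
      with \<open>x \<in> eigenvalues A\<close> have xS: "x \<in> ?S" by simp
      have T: "set_mset (add_mset x M) \<inter> eigenvalues A = ?S" using True by auto
      have split: "(\<Prod>x\<in>?S. [:-x, 1:]) = [:-x, 1:] * (\<Prod>x\<in>?S - {x}. [:-x, 1:])"
        by (rule prod.remove[OF fin xS])
      have "peval ((s * (\<Prod>x\<in>?S - {x}. [:-x, 1:])) * [:-x, 1:]^2) A = mzero"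
        using IH unfolding split by (simp add: power2_eq_square ac_simps)
      from square_root[OF h xr this]
      have "peval ((s * (\<Prod>x\<in>?S - {x}. [:-x, 1:])) * [:-x, 1:]) A = mzero" .
      then show ?thesis unfolding T split by (simp add: ac_simps)
    next
      case False
      have T: "set_mset (add_mset x M) \<inter> eigenvalues A = insert x ?S" using \<open>x \<in> eigenvalues A\<close> by auto
      have "(\<Prod>x\<in>insert x ?S. [:-x, 1:]) = [:-x, 1:] * (\<Prod>x\<in>?S. [:-x, 1:])"
        by (rule prod.insert[OF fin]) (use False in simp)
      then show ?thesis unfolding T using IH by (simp add: ac_simps)
    qed
  qed
qed

lemma msc_zero_cancel: "c \<noteq> 0 \<Longrightarrow> msc c X = mzero \<Longrightarrow> X = mzero"
  unfolding msc_def mzero_def by (metis mult_eq_0_iff)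

lemma annihilator_eigen:
  fixes A :: "('d::finite) sop"
  assumes h: "hermitian A"
  shows "finite (eigenvalues A) \<and> peval (\<Prod>r\<in>eigenvalues A. [:-r, 1:]) A = mzero"
proof -
  obtain p where p: "p \<noteq> 0" "peval p A = mzero" using exists_annihilator by blast
  obtain M where M: "p = smult (lead_coeff p) (\<Prod>x\<in>#M. [:-x, 1:])"
    using alg_closed_imp_factorization[OF p(1)] by blast
  have "msc (lead_coeff p) (peval (\<Prod>x\<in>#M. [:-x, 1:]) A) = mzero"
    using p(2) M by (metis peval_smult)
  moreover have lc: "lead_coeff p \<noteq> 0" using p(1) by simp
  ultimately have "peval (\<Prod>x\<in>#M. [:-x, 1:]) A = mzero" using msc_zero_cancel by blast
  then have "peval (1 * (\<Prod>x\<in>#M. [:-x, 1:])) A = mzero" by simp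
  from annih_reduce[OF h this]
  have R: "peval (\<Prod>x\<in>(set_mset M \<inter> eigenvalues A). [:-x, 1:]) A = mzero" by simp
  have eq: "set_mset M \<inter> eigenvalues A = eigenvalues A"
  proof
    show "eigenvalues A \<subseteq> set_mset M \<inter> eigenvalues A"
    proof
      fix e assume e: "e \<in> eigenvalues A"
      then obtain v where v: "v \<noteq> (\<lambda>_. 0)" "mvec A v = (\<lambda>i. e * v i)"
        by (auto simp: eigenvalues_def)
      let ?Q = "\<Prod>x\<in>(set_mset M \<inter> eigenvalues A). [:-x, 1:]"
      have "(\<lambda>i. poly ?Q e * v i) = (\<lambda>i. 0)"
        using mvec_peval_eig[OF v(2), of ?Q] R by simp
      moreover obtain k where "v k \<noteq> 0" using v(1) by auto
      ultimately have "poly ?Q e = 0" by (metis mult_eq_0_iff)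
      then have "(\<Prod>x\<in>(set_mset M \<inter> eigenvalues A). e - x) = 0" by (simp add: poly_prod)
      then obtain x where "x \<in> set_mset M \<inter> eigenvalues A" "e - x = 0"
        by (metis (no_types, lifting) finite_Int finite_set_mset prod_zero_iff)
      then show "e \<in> set_mset M \<inter> eigenvalues A" by simp
    qed
  qed auto
  have "finite (set_mset M \<inter> eigenvalues A)" by simp
  with R eq show ?thesis by simp
qed

declare mult_pCons_left[simp del] mult_pCons_right[simp del]

lemma vanish_dvd:
  fixes D :: "complex poly"
  assumes "finite R"
  shows "(\<forall>r\<in>R. poly D r = 0) \<Longrightarrow> (\<Prod>r\<in>R. [:-r, 1:]) dvd D"
  using assms
proof (induction R arbitrary: D rule: finite_induct)
  case empty then show ?case by simp
next
  case (insert x R)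
  have "poly D x = 0" using insert.prems by simp
  then have "[:-x, 1:] dvd D" using poly_eq_0_iff_dvd by blast
  then obtain D' where D: "D = [:-x, 1:] * D'" by (rule dvdE)
  have "\<forall>r\<in>R. poly D' r = 0"
  proof
    fix r assume r: "r \<in> R"
    then have "r \<noteq> x" using insert.hyps by auto
    moreover have "poly D r = 0" using insert.prems r by simp
    ultimately show "poly D' r = 0" using D by simp
  qed
  from insert.IH[OF this] have "(\<Prod>r\<in>R. [:-r, 1:]) dvd D'" .
  then have "[:-x, 1:] * (\<Prod>r\<in>R. [:-r, 1:]) dvd D" unfolding D by (rule mult_dvd_mono[OF dvd_refl])
  then show ?case using insert.hyps by simp
qed

lemma vanish_annih:
  fixes A :: "('d::finite) sop"
  assumes h: "hermitian A" and van: "\<forall>r\<in>eigenvalues A. poly D r = 0"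
  shows "peval D A = mzero"
proof -
  note ann = annihilator_eigen[OF h]
  from vanish_dvd[OF conjunct1[OF ann] van] obtain T where "D = (\<Prod>r\<in>eigenvalues A. [:-r, 1:]) * T"
    by (auto elim: dvdE)
  then show ?thesis using conjunct2[OF ann] by (simp add: peval_mult)
qed

definition lag :: "complex set \<Rightarrow> complex \<Rightarrow> complex poly" where
  "lag R e = smult (\<Prod>r\<in>R - {e}. 1 / (e - r)) (\<Prod>r\<in>R - {e}. [:-r, 1:])"

lemma poly_lag:
  assumes fin: "finite R" and e: "e \<in> R" and r: "r \<in> R"
  shows "poly (lag R e) r = (if r = e then 1 else 0)"
proof (cases "r = e")
  case True
  have "poly (lag R e) r = (\<Prod>r'\<in>R - {e}. 1 / (e - r')) * (\<Prod>r'\<in>R - {e}. e - r')"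
    using True by (simp add: lag_def poly_prod)
  also have "\<dots> = (\<Prod>r'\<in>R - {e}. 1 / (e - r') * (e - r'))"
    by (simp only: prod.distrib)
  also have "\<dots> = 1" by (intro prod.neutral) auto
  finally show ?thesis using True by simp
next
  case False
  then have "r \<in> R - {e}" using r by simp
  then have "(\<Prod>r'\<in>R - {e}. r - r') = 0" using fin by (intro prod_zero) auto
  then show ?thesis using False by (simp add: lag_def poly_prod)
qed

lemma real_coeff_mult:
  "(\<forall>n. coeff p n \<in> \<real>) \<Longrightarrow> (\<forall>n. coeff q n \<in> \<real>) \<Longrightarrow> (\<forall>n. coeff (p * q) n \<in> \<real>)"
  by (simp add: coeff_mult)

lemma real_coeff_prod:
  "(\<forall>x\<in>S. \<forall>n. coeff (f x) n \<in> \<real>) \<Longrightarrow> (\<forall>n. coeff (\<Prod>x\<in>S. f x) n \<in> (\<real> :: complex set))"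
proof (induction S rule: infinite_finite_induct)
  case (infinite S) then show ?case by (simp add: coeff_1)
next
  case empty then show ?case by (simp add: coeff_1)
next
  case (insert x S) then show ?case by (simp add: real_coeff_mult)
qed

lemma real_coeff_lin: "r \<in> \<real> \<Longrightarrow> coeff [:-r, 1:] n \<in> \<real>"
  by (simp add: coeff_pCons split: nat.split)

lemma hermitian_madd: "hermitian X \<Longrightarrow> hermitian Y \<Longrightarrow> hermitian (madd X Y)"
  unfolding hermitian_adj by (intro ext) (metis complex_cnj_add madd_def op_adj_def)

lemma hermitian_msc_idm: "c \<in> \<real> \<Longrightarrow> hermitian (msc c idm)"
  unfolding hermitian_def msc_def idm_def by (simp add: Reals_cnj_iff)

lemma hermitian_peval:
  fixes A :: "('d::finite) sop"
  assumes h: "hermitian A"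
  shows "(\<forall>n. coeff p n \<in> \<real>) \<Longrightarrow> hermitian (peval p A)"
proof (induction p)
  case 0 then show ?case by (simp add: hermitian_def mzero_def)
next
  case (pCons a p)
  have a: "a \<in> \<real>" using pCons.prems[rule_format, of 0] by simp
  have "\<forall>n. coeff p n \<in> \<real>" using pCons.prems by (metis coeff_pCons_Suc)
  then have hp: "hermitian (peval p A)" by (rule pCons.IH)
  have comm: "mmul A (peval p A) = mmul (peval p A) A"
    using peval_commute[of "[:0, 1:]" A p] by (simp add: peval_x)
  have "op_adj (mmul A (peval p A)) = mmul A (peval p A)"
    using h hp comm by (simp add: op_adj_mmul hermitian_adj)
  then have "hermitian (mmul A (peval p A))" by (simp add: hermitian_adj)
  then show ?case
    by (simp add: peval_pCons hermitian_madd hermitian_msc_idm a)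
qed

lemma lag_real:
  assumes R: "\<forall>r\<in>R. r \<in> \<real>" and e: "e \<in> \<real>"
  shows "coeff (lag R e) n \<in> \<real>"
proof -
  have c: "(\<Prod>r\<in>R - {e}. 1 / (e - r)) \<in> \<real>" using R e by (intro prod_in_Reals) auto
  have "\<forall>n. coeff (\<Prod>r\<in>R - {e}. [:-r, 1:]) n \<in> \<real>"
    by (rule real_coeff_prod) (use R real_coeff_lin in blast)
  then show ?thesis using c by (simp add: lag_def)
qed

section \<open>Spectral projectors\<close>

definition sproj :: "('d::finite) sop \<Rightarrow> complex \<Rightarrow> 'd sop" where
  "sproj A e = peval (lag (eigenvalues A) e) A"

lemma sproj_props:
  fixes A :: "('d::finite) sop"
  assumes h: "hermitian A" and e: "e \<in> eigenvalues A"
  shows "hermitian (sproj A e)" "mmul (sproj A e) (sproj A e) = sproj A e"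
    "\<And>v. mvec (sproj A e) v = v \<longleftrightarrow> mvec A v = (\<lambda>i. e * v i)"
proof -
  let ?R = "eigenvalues A"
  have fin: "finite ?R" using annihilator_eigen[OF h] by simp
  have reals: "\<forall>r\<in>?R. r \<in> \<real>" using eig_Reals[OF h] by blast
  show "hermitian (sproj A e)" unfolding sproj_def
    by (rule hermitian_peval[OF h]) (use lag_real[OF reals] reals e in blast)
  have z: "peval (lag ?R e * lag ?R e - lag ?R e) A = mzero"
    by (rule vanish_annih[OF h]) (simp add: poly_lag[OF fin e])
  show "mmul (sproj A e) (sproj A e) = sproj A e"
    unfolding sproj_def
  proof (intro ext)
    fix i j
    have "peval (lag ?R e * lag ?R e - lag ?R e) A i j = 0" using z by (simp add: mzero_def)
    then have "peval (lag ?R e * lag ?R e) A i j - peval (lag ?R e) A i j = 0" by (simp only: peval_diff)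
    then show "mmul (peval (lag ?R e) A) (peval (lag ?R e) A) i j = peval (lag ?R e) A i j"
      by (simp add: peval_mult)
  qed
  fix v
  show "mvec (sproj A e) v = v \<longleftrightarrow> mvec A v = (\<lambda>i. e * v i)"
  proof
    assume fx: "mvec (sproj A e) v = v"
    have "peval ([:-e, 1:] * lag ?R e) A = mzero"
      by (rule vanish_annih[OF h]) (simp add: poly_lag[OF fin e])
    then have "mvec (peval [:-e, 1:] A) (mvec (sproj A e) v) = (\<lambda>i. 0)"
      unfolding sproj_def by (simp only: peval_mult[symmetric] mvec_mmul[symmetric] mvec_mzero)
    then have h0: "(\<lambda>i. mvec A v i - e * v i) = (\<lambda>i. 0)" using fx by (simp only: mvec_lin)
    show "mvec A v = (\<lambda>i. e * v i)"
    proof (rule ext)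
      fix i from fun_cong[OF h0, of i] show "mvec A v i = e * v i" by simp
    qed
  next
    assume "mvec A v = (\<lambda>i. e * v i)"
    from mvec_peval_eig[OF this, of "lag ?R e"]
    show "mvec (sproj A e) v = v" unfolding sproj_def by (simp add: poly_lag[OF fin e e])
  qed
qed

lemma sproj_sum:
  fixes A :: "('d::finite) sop"
  assumes h: "hermitian A"
  shows "(\<Sum>e\<in>eigenvalues A. e * sproj A e i j) = A i j"
proof -
  let ?R = "eigenvalues A"
  have fin: "finite ?R" using annihilator_eigen[OF h] by simp
  let ?D = "(\<Sum>e\<in>?R. smult e (lag ?R e)) - [:0, 1:]"
  have "\<forall>r\<in>?R. poly ?D r = 0"
  proof
    fix r assume r: "r \<in> ?R"
    have "poly ?D r = (\<Sum>e\<in>?R. e * poly (lag ?R e) r) - r"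
      by (simp add: poly_sum)
    also have "\<dots> = (\<Sum>e\<in>?R. e * (if r = e then 1 else 0)) - r"
      using poly_lag[OF fin _ r] by simp
    also have "\<dots> = 0" using fin r by (simp add: if_distrib[of "\<lambda>z. _ * z"] cong: if_cong)
    finally show "poly ?D r = 0" .
  qed
  from vanish_annih[OF h this] have "peval ?D A i j = 0" by (simp add: mzero_def)
  then have "(\<Sum>e\<in>?R. peval (smult e (lag ?R e)) A i j) - A i j = 0"
    by (simp add: peval_diff peval_sum[OF fin] peval_x)
  then show ?thesis by (simp add: peval_smult msc_def sproj_def)
qed

lemma proj_unique:
  fixes P Q :: "('d::finite) sop"
  assumes hP: "hermitian P" and iP: "mmul P P = P" and hQ: "hermitian Q" and iQ: "mmul Q Q = Q"
    and fx: "\<And>v. mvec P v = v \<longleftrightarrow> mvec Q v = v"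
  shows "P = Q"
proof -
  have PQ: "mmul P Q = Q"
  proof (rule mat_eqI_mvec)
    fix v
    have "mvec Q (mvec Q v) = mvec Q v" by (simp add: mvec_mmul[symmetric] iQ)
    then have "mvec P (mvec Q v) = mvec Q v" using fx by blast
    then show "mvec (mmul P Q) v = mvec Q v" by (simp add: mvec_mmul)
  qed
  have QP: "mmul Q P = P"
  proof (rule mat_eqI_mvec)
    fix v
    have "mvec P (mvec P v) = mvec P v" by (simp add: mvec_mmul[symmetric] iP)
    then have "mvec Q (mvec P v) = mvec P v" using fx by blast
    then show "mvec (mmul Q P) v = mvec P v" by (simp add: mvec_mmul)
  qed
  have "Q = op_adj Q" using hQ by (simp add: hermitian_adj)
  also have "\<dots> = op_adj (mmul P Q)" by (simp add: PQ)
  also have "\<dots> = mmul (op_adj Q) (op_adj P)" by (rule op_adj_mmul)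
  also have "\<dots> = mmul Q P" using hP hQ by (simp add: hermitian_adj)
  also have "\<dots> = P" by (rule QP)
  finally show ?thesis by simp
qed

lemma spectral_projector_eq:
  fixes A :: "('d::finite) sop"
  assumes h: "hermitian A" and e: "e \<in> eigenvalues A"
  shows "spectral_projector A e = sproj A e"
  unfolding spectral_projector_def
proof (rule the_equality)
  show "hermitian (sproj A e) \<and> mmul (sproj A e) (sproj A e) = sproj A e \<and>
        (\<forall>v. mvec (sproj A e) v = v \<longleftrightarrow> mvec A v = (\<lambda>i. e * v i))"
    using sproj_props[OF h e] by blast
next
  fix Q assume Q: "hermitian Q \<and> mmul Q Q = Q \<and> (\<forall>v. mvec Q v = v \<longleftrightarrow> mvec A v = (\<lambda>i. e * v i))"
  show "Q = sproj A e"
    by (rule proj_unique) (use Q sproj_props[OF h e] in auto)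
qed

theorem spectral:
  fixes A :: "('d::finite) sop"
  assumes h: "hermitian A"
  shows "finite (eigenvalues A) \<and> (\<forall>i j. (\<Sum>e\<in>eigenvalues A. e * spectral_projector A e i j) = A i j)"
proof -
  have "finite (eigenvalues A)" using annihilator_eigen[OF h] by simp
  moreover have "(\<Sum>e\<in>eigenvalues A. e * spectral_projector A e i j) = A i j" for i j
    using sproj_sum[OF h, of i j] by (simp add: spectral_projector_eq[OF h])
  ultimately show ?thesis by blast
qed

section \<open>Completeness of the generalized Pauli basis\<close>

lemma mtr_mmul: "mtr (mmul A B) = (\<Sum>i\<in>UNIV. \<Sum>k\<in>UNIV. A i k * B k i)"
  by (simp add: mtr_def mmul_def)

lemma sum_UNIV_pair: "(\<Sum>q\<in>(UNIV :: ('a::finite \<times> 'b::finite) set). f (fst q) (snd q)) = (\<Sum>a\<in>UNIV. \<Sum>b\<in>UNIV. f a b)"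
proof -
  have "(\<Sum>a\<in>UNIV. \<Sum>b\<in>UNIV. f a b) = (\<Sum>(a, b)\<in>UNIV \<times> UNIV. f a b)" by (rule sum.cartesian_product)
  then show ?thesis by (simp add: case_prod_beta)
qed

lemma pauli_complete:
  fixes \<sigma> :: "nat \<Rightarrow> ('d::finite) sop"
  assumes pauli: "gen_pauli \<sigma>"
  shows "(\<Sum>\<mu><CARD('d)^2. \<sigma> \<mu> a b * \<sigma> \<mu> x y) = (if a = y \<and> b = x then of_nat CARD('d) else 0)"
proof -
  let ?d = "CARD('d)"
  have dpos: "(of_nat ?d :: complex) \<noteq> 0" by simp
  have orth: "\<And>\<mu> \<nu>. \<mu> < ?d^2 \<Longrightarrow> \<nu> < ?d^2 \<Longrightarrow> mtr (mmul (\<sigma> \<mu>) (\<sigma> \<nu>)) = (if \<mu> = \<nu> then of_nat ?d else 0)"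
    using pauli unfolding gen_pauli_def by blast
  have card: "card (UNIV :: ('d \<times> 'd) set) = card {..<?d^2}"
    by (simp add: power2_eq_square)
  obtain g where g: "bij_betw g (UNIV :: ('d \<times> 'd) set) {..<?d^2}"
    using finite_same_card_bij[OF _ _ card] by auto
  have ginj: "g p = g p' \<longleftrightarrow> p = p'" for p p'
    using g unfolding bij_betw_def inj_on_def by blast
  have grange: "g p < ?d^2" for p using g by (auto simp: bij_betw_def)
  define M :: "complex^('d \<times> 'd)^('d \<times> 'd)" where "M = (\<chi> p q. \<sigma> (g p) (fst q) (snd q))"
  define N :: "complex^('d \<times> 'd)^('d \<times> 'd)" where "N = (\<chi> q p. \<sigma> (g p) (snd q) (fst q) / of_nat ?d)"
  have "M ** N = mat 1"
  proof -
    have "(M ** N) $ p $ p' = (if p = p' then 1 else 0)" for p p'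
    proof -
      have "(M ** N) $ p $ p' = (\<Sum>q\<in>UNIV. \<sigma> (g p) (fst q) (snd q) * (\<sigma> (g p') (snd q) (fst q) / of_nat ?d))"
        by (simp add: matrix_matrix_mult_def M_def N_def)
      also have "\<dots> = (\<Sum>a\<in>UNIV. \<Sum>b\<in>UNIV. \<sigma> (g p) a b * (\<sigma> (g p') b a / of_nat ?d))"
        by (rule sum_UNIV_pair[of "\<lambda>a b. \<sigma> (g p) a b * (\<sigma> (g p') b a / of_nat ?d)"])
      also have "\<dots> = (\<Sum>a\<in>UNIV. \<Sum>b\<in>UNIV. \<sigma> (g p) a b * \<sigma> (g p') b a) / of_nat ?d"
        by (simp add: sum_divide_distrib)
      also have "\<dots> = mtr (mmul (\<sigma> (g p)) (\<sigma> (g p'))) / of_nat ?d" by (simp add: mtr_mmul)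
      also have "\<dots> = (if p = p' then 1 else 0)" using orth[OF grange grange] dpos by (simp add: ginj)
      finally show ?thesis .
    qed
    then show ?thesis by (simp add: vec_eq_iff mat_def)
  qed
  then have NM: "N ** M = mat 1" using matrix_left_right_inverse by blast
  have "(N ** M) $ (b, a) $ (x, y) = (\<Sum>p\<in>UNIV. \<sigma> (g p) a b * \<sigma> (g p) x y) / of_nat ?d"
    by (simp add: matrix_matrix_mult_def M_def N_def sum_divide_distrib)
  also have "(\<Sum>p\<in>UNIV. \<sigma> (g p) a b * \<sigma> (g p) x y) = (\<Sum>\<mu><?d^2. \<sigma> \<mu> a b * \<sigma> \<mu> x y)"
    by (rule sum.reindex_bij_betw[OF g])
  finally have "(\<Sum>\<mu><?d^2. \<sigma> \<mu> a b * \<sigma> \<mu> x y) / of_nat ?d = (if (b, a) = (x, y) then 1 else 0)"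
    using NM by (simp add: mat_def)
  then show ?thesis using dpos by (auto simp: divide_eq_eq split: if_splits)
qed

section \<open>Positivity and Hermiticity\<close>

lemma quad_form: "(\<Sum>x\<in>UNIV. \<Sum>y\<in>UNIV. cnj (v x) * A x y * v y) = (\<Sum>x\<in>UNIV. cnj (v x) * mvec A v x)"
  by (simp add: mvec_def sum_distrib_left mult.assoc)

lemma delta2:
  fixes A :: "('d::finite) sop"
  shows "(\<Sum>x\<in>UNIV. \<Sum>y\<in>UNIV. (if x = i then c else 0) * A x y * (if y = j then e else 0)) = c * A i j * e"
proof -
  have "(\<Sum>y\<in>UNIV. (if x = i then c else 0) * A x y * (if y = j then e else 0)) = (if x = i then c * A x j * e else 0)" for x
    by (cases "x = i") (simp_all add: if_distrib[of "\<lambda>z. _ * z"] cong: if_cong)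
  then show ?thesis by simp
qed

lemma quad2:
  fixes A :: "('d::finite) sop" and i j :: 'd and a b :: complex
  defines "v \<equiv> (\<lambda>x. (if x = i then a else 0) + (if x = j then b else 0))"
  shows "(\<Sum>x\<in>UNIV. \<Sum>y\<in>UNIV. cnj (v x) * A x y * v y)
       = cnj a * A i i * a + cnj a * A i j * b + cnj b * A j i * a + cnj b * A j j * b"
proof -
  have cv: "cnj (v x) = (if x = i then cnj a else 0) + (if x = j then cnj b else 0)" for x
    by (simp add: v_def)
  have "(\<Sum>x\<in>UNIV. \<Sum>y\<in>UNIV. cnj (v x) * A x y * v y)
      = (\<Sum>x\<in>UNIV. \<Sum>y\<in>UNIV. (if x = i then cnj a else 0) * A x y * (if y = i then a else 0)
          + (if x = i then cnj a else 0) * A x y * (if y = j then b else 0)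
          + (if x = j then cnj b else 0) * A x y * (if y = i then a else 0)
          + (if x = j then cnj b else 0) * A x y * (if y = j then b else 0))"
    unfolding cv by (simp add: v_def algebra_simps)
  also have "\<dots> = cnj a * A i i * a + cnj a * A i j * b + cnj b * A j i * a + cnj b * A j j * b"
    by (simp only: sum.distrib delta2)
  finally show ?thesis .
qed

lemma psd_hermitian:
  fixes A :: "('d::finite) sop"
  assumes "psd_on UNIV A"
  shows "hermitian A"
  unfolding hermitian_def
proof (intro allI)
  fix i j
  have im: "Im (cnj a * A i i * a + cnj a * A i j * b + cnj b * A j i * a + cnj b * A j j * b) = 0" for a b
  proof -
    let ?v = "\<lambda>x. (if x = i then a else 0) + (if x = j then b else 0)"
    have all: "\<forall>v. Im (\<Sum>x\<in>UNIV. \<Sum>y\<in>UNIV. cnj (v x) * A x y * v y) = 0 \<and>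
        0 \<le> Re (\<Sum>x\<in>UNIV. \<Sum>y\<in>UNIV. cnj (v x) * A x y * v y)"
      using assms unfolding psd_on_def .
    have "Im (\<Sum>x\<in>UNIV. \<Sum>y\<in>UNIV. cnj (?v x) * A x y * ?v y) = 0"
      using conjunct1[OF spec[OF all, of ?v]] .
    then show ?thesis by (simp only: quad2)
  qed
  have ii: "Im (A i i) = 0" using im[of 1 0] by simp
  have jj: "Im (A j j) = 0" using im[of 0 1] by simp
  have 1: "Im (A i j) + Im (A j i) = 0" using im[of 1 1] ii jj by simp
  have 2: "Re (A i j) - Re (A j i) = 0" using im[of 1 \<i>] ii jj by (simp add: algebra_simps)
  show "A i j = cnj (A j i)" using 1 2 by (simp add: complex_eq_iff)
qed

lemma psd_idem:
  fixes P :: "('d::finite) sop"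
  assumes h: "hermitian P" and i: "mmul P P = P"
  shows "psd_on UNIV P"
  unfolding psd_on_def
proof (intro allI)
  fix v
  let ?w = "mvec P v"
  have "(\<Sum>x\<in>UNIV. \<Sum>y\<in>UNIV. cnj (v x) * P x y * v y) = (\<Sum>x\<in>UNIV. cnj (v x) * mvec P ?w x)"
    unfolding quad_form by (simp add: mvec_mmul[symmetric] i)
  also have "\<dots> = (\<Sum>x\<in>UNIV. cnj (mvec (op_adj P) v x) * ?w x)" by (rule quad_adj)
  also have "\<dots> = complex_of_real (\<Sum>x\<in>UNIV. (cmod (?w x))\<^sup>2)"
    using h by (simp add: hermitian_adj cnj_sum_sq)
  finally show "Im (\<Sum>x\<in>UNIV. \<Sum>y\<in>UNIV. cnj (v x) * P x y * v y) = 0 \<and>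
      0 \<le> Re (\<Sum>x\<in>UNIV. \<Sum>y\<in>UNIV. cnj (v x) * P x y * v y)"
    by (simp add: sum_nonneg)
qed

lemma cp_positive:
  fixes E :: "('d::finite) sop \<Rightarrow> 'd sop"
  assumes cp: "completely_positive E" and X: "psd_on UNIV X"
  shows "psd_on UNIV (E X)"
proof -
  define X' :: "nat \<times> 'd \<Rightarrow> nat \<times> 'd \<Rightarrow> complex" where "X' = (\<lambda>(i, a) (j, b). X a b)"
  have r1: "(\<Sum>p\<in>{..<1::nat} \<times> (UNIV :: 'd set). h p) = (\<Sum>a\<in>UNIV. h (0, a))" for h :: "nat \<times> 'd \<Rightarrow> complex"
  proof -
    have e: "{..<1::nat} \<times> (UNIV :: 'd set) = (\<lambda>a. (0, a)) ` UNIV" by auto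
    have i: "inj_on (\<lambda>a::'d. (0::nat, a)) UNIV" by (auto simp: inj_on_def)
    show ?thesis unfolding e by (simp add: sum.reindex[OF i])
  qed
  have red: "(\<Sum>p\<in>{..<1::nat} \<times> (UNIV :: 'd set). \<Sum>q\<in>{..<1::nat} \<times> UNIV. f p q) = (\<Sum>a\<in>UNIV. \<Sum>b\<in>UNIV. f (0, a) (0, b))" for f :: "nat \<times> 'd \<Rightarrow> nat \<times> 'd \<Rightarrow> complex"
    by (simp only: r1)
  have "psd_on ({..<1} \<times> UNIV) X'"
    unfolding psd_on_def
  proof (intro allI)
    fix v :: "nat \<times> 'd \<Rightarrow> complex"
    have "(\<Sum>x\<in>{..<1} \<times> UNIV. \<Sum>y\<in>{..<1} \<times> UNIV. cnj (v x) * X' x y * v y)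
        = (\<Sum>a\<in>UNIV. \<Sum>b\<in>UNIV. cnj (v (0, a)) * X a b * v (0, b))"
      by (simp only: red) (simp add: X'_def)
    then show "Im (\<Sum>x\<in>{..<1} \<times> UNIV. \<Sum>y\<in>{..<1} \<times> UNIV. cnj (v x) * X' x y * v y) = 0 \<and>
        0 \<le> Re (\<Sum>x\<in>{..<1} \<times> UNIV. \<Sum>y\<in>{..<1} \<times> UNIV. cnj (v x) * X' x y * v y)"
      using X unfolding psd_on_def by simp
  qed
  then have P: "psd_on ({..<1} \<times> UNIV) (\<lambda>(i, a) (j, b). E (\<lambda>a' b'. X' (i, a') (j, b')) a b)"
    using cp unfolding completely_positive_def by blast
  show ?thesis
    unfolding psd_on_def
  proof (intro allI)
    fix w :: "'d \<Rightarrow> complex"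
    define v :: "nat \<times> 'd \<Rightarrow> complex" where "v = (\<lambda>(i, a). w a)"
    have EX: "(\<lambda>a' b'. X' (0, a') (0, b')) = X" by (simp add: X'_def)
    have "(\<Sum>x\<in>{..<1} \<times> UNIV. \<Sum>y\<in>{..<1} \<times> UNIV. cnj (v x) * (\<lambda>(i, a) (j, b). E (\<lambda>a' b'. X' (i, a') (j, b')) a b) x y * v y)
        = (\<Sum>a\<in>UNIV. \<Sum>b\<in>UNIV. cnj (w a) * E X a b * w b)"
      by (simp only: red) (simp add: v_def EX)
    moreover have "Im (\<Sum>x\<in>{..<1} \<times> UNIV. \<Sum>y\<in>{..<1} \<times> UNIV. cnj (v x) * (\<lambda>(i, a) (j, b). E (\<lambda>a' b'. X' (i, a') (j, b')) a b) x y * v y) = 0 \<and>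
        0 \<le> Re (\<Sum>x\<in>{..<1} \<times> UNIV. \<Sum>y\<in>{..<1} \<times> UNIV. cnj (v x) * (\<lambda>(i, a) (j, b). E (\<lambda>a' b'. X' (i, a') (j, b')) a b) x y * v y)"
      using conjunct1[OF spec[OF P[unfolded psd_on_def], of v]] conjunct2[OF spec[OF P[unfolded psd_on_def], of v]] by blast
    ultimately show "Im (\<Sum>a\<in>UNIV. \<Sum>b\<in>UNIV. cnj (w a) * E X a b * w b) = 0 \<and> 0 \<le> Re (\<Sum>a\<in>UNIV. \<Sum>b\<in>UNIV. cnj (w a) * E X a b * w b)"
      by simp
  qed
qed

lemma hermitian_sum:
  assumes "finite S" "\<forall>x\<in>S. c x \<in> \<real> \<and> hermitian (B x)"
  shows "hermitian (\<lambda>i j. \<Sum>x\<in>S. c x * B x i j)"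
  unfolding hermitian_def
proof (intro allI)
  fix i j
  have "cnj (\<Sum>x\<in>S. c x * B x j i) = (\<Sum>x\<in>S. cnj (c x) * cnj (B x j i))" by simp
  also have "\<dots> = (\<Sum>x\<in>S. c x * B x i j)"
  proof (rule sum.cong[OF refl])
    fix x assume x: "x \<in> S"
    then have "cnj (c x) = c x" using assms Reals_cnj_iff by blast
    moreover have "B x i j = cnj (B x j i)" using assms x unfolding hermitian_def by blast
    ultimately show "cnj (c x) * cnj (B x j i) = c x * B x i j" by simp
  qed
  finally show "(\<Sum>x\<in>S. c x * B x i j) = cnj (\<Sum>x\<in>S. c x * B x j i)" by simp
qed

lemma herm_preserving:
  fixes E :: "('d::finite) sop \<Rightarrow> 'd sop"
  assumes lin: "clinear_map E" and cp: "completely_positive E" and h: "hermitian A"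
  shows "hermitian (E A)"
proof -
  let ?R = "eigenvalues A"
  have sp: "finite ?R" "\<And>i j. (\<Sum>e\<in>?R. e * spectral_projector A e i j) = A i j"
    using spectral[OF h] by blast+
  have A: "A = (\<lambda>i j. \<Sum>e\<in>?R. e * spectral_projector A e i j)" using sp(2) by (intro ext) simp
  have EA: "E A = (\<lambda>i j. \<Sum>e\<in>?R. e * E (spectral_projector A e) i j)"
    by (subst A) (rule clinear_sum[OF lin sp(1)])
  have "\<forall>e\<in>?R. e \<in> \<real> \<and> hermitian (E (spectral_projector A e))"
  proof
    fix e assume e: "e \<in> ?R"
    have "psd_on UNIV (sproj A e)"
      using psd_idem sproj_props(1,2)[OF h e] by blast
    then have "psd_on UNIV (spectral_projector A e)" using spectral_projector_eq[OF h e] by simp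
    then have "psd_on UNIV (E (spectral_projector A e))" by (rule cp_positive[OF cp])
    then show "e \<in> \<real> \<and> hermitian (E (spectral_projector A e))"
      using psd_hermitian eig_Reals[OF h e] by blast
  qed
  then show ?thesis unfolding EA by (rule hermitian_sum[OF sp(1)])
qed

lemma adj_preserving:
  fixes E :: "('d::finite) sop \<Rightarrow> 'd sop"
  assumes lin: "clinear_map E" and cp: "completely_positive E"
  shows "E (op_adj A) = op_adj (E A)"
proof -
  define H1 where "H1 = (\<lambda>i j. (A i j + cnj (A j i)) / 2)"
  define H2 where "H2 = (\<lambda>i j. (A i j - cnj (A j i)) / (2 * \<i>))"
  have h1: "hermitian H1" unfolding hermitian_def H1_def by (simp add: add.commute)
  have h2: "hermitian H2" unfolding hermitian_def H2_def by (simp add: field_simps)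
  have add: "\<And>X Y. E (\<lambda>i j. X i j + Y i j) = (\<lambda>i j. E X i j + E Y i j)"
   and sc: "\<And>c X. E (\<lambda>i j. c * X i j) = (\<lambda>i j. c * E X i j)"
    using lin unfolding clinear_map_def by blast+
  have "A = (\<lambda>i j. H1 i j + (\<lambda>i j. \<i> * H2 i j) i j)"
    by (intro ext) (simp add: H1_def H2_def field_simps)
  then have EA: "E A = (\<lambda>i j. E H1 i j + \<i> * E H2 i j)"
    by (simp only: add sc)
  have "op_adj A = (\<lambda>i j. H1 i j + (\<lambda>i j. (- \<i>) * H2 i j) i j)"
    by (intro ext) (simp add: op_adj_def H1_def H2_def field_simps)
  then have EA': "E (op_adj A) = (\<lambda>i j. E H1 i j + (- \<i>) * E H2 i j)"
    by (simp only: add sc)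
  have e1: "hermitian (E H1)" and e2: "hermitian (E H2)"
    using herm_preserving[OF lin cp] h1 h2 by blast+
  show ?thesis
  proof (intro ext)
    fix i j
    have "E H1 i j = cnj (E H1 j i)" "E H2 i j = cnj (E H2 j i)"
      using e1 e2 unfolding hermitian_def by blast+
    then show "E (op_adj A) i j = op_adj (E A) i j"
      unfolding EA EA' op_adj_def by simp
  qed
qed

lemma chain_adj:
  fixes \<rho> :: "('d::finite) sop"
  assumes adj: "\<forall>k\<in>{1..n}. \<forall>A. E k (op_adj A) = op_adj (E k A)" and h: "hermitian \<rho>"
  shows "op_adj (sandwich_chain \<rho> E L R n) = sandwich_chain \<rho> E (\<lambda>k. op_adj (R k)) (\<lambda>k. op_adj (L k)) n"
  using adj
proof (induction n)
  case 0
  have "op_adj \<rho> = \<rho>" using h by (simp add: hermitian_adj)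
  then show ?case by (simp add: op_adj_mmul mmul_assoc)
next
  case (Suc n)
  have IH: "op_adj (sandwich_chain \<rho> E L R n) = sandwich_chain \<rho> E (\<lambda>k. op_adj (R k)) (\<lambda>k. op_adj (L k)) n"
    using Suc by auto
  have "E (Suc n) (op_adj (sandwich_chain \<rho> E L R n)) = op_adj (E (Suc n) (sandwich_chain \<rho> E L R n))"
    using Suc.prems by auto
  then show ?case by (simp add: op_adj_mmul mmul_assoc IH)
qed

lemma cnj_QKD:
  fixes \<rho> :: "('d::finite) sop"
  assumes adj: "\<forall>k\<in>{1..n}. \<forall>A. E k (op_adj A) = op_adj (E k A)" and h: "hermitian \<rho>"
  shows "cnj (QKD_doubled \<rho> E n L R) = QKD_doubled \<rho> E n (\<lambda>k. op_adj (R k)) (\<lambda>k. op_adj (L k))"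
proof -
  have "cnj (QKD_doubled \<rho> E n L R) = mtr (op_adj (sandwich_chain \<rho> E L R n))"
    by (simp add: QKD_doubled_def mtr_def op_adj_def)
  then show ?thesis by (simp add: chain_adj[OF adj h] QKD_doubled_def)
qed

section \<open>Closed forms of the temporal states\<close>

lemma QKD_right_doubled: "QKD_right \<rho> E n P = QKD_doubled \<rho> E n (\<lambda>_. idm) P"
  by (simp add: QKD_right_def QKD_doubled_def)

lemma QKD_left_doubled: "QKD_left \<rho> E n P = QKD_doubled \<rho> E n P (\<lambda>_. idm)"
  by (simp add: QKD_left_def QKD_doubled_def)

lemma QKD_cong:
  "(\<And>k. k \<le> n \<Longrightarrow> L k = L' k) \<Longrightarrow> (\<And>k. k \<le> n \<Longrightarrow> R k = R' k) \<Longrightarrow>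
   QKD_doubled \<rho> E n L R = QKD_doubled \<rho> E n L' R'"
proof -
  assume a: "\<And>k. k \<le> n \<Longrightarrow> L k = L' k" "\<And>k. k \<le> n \<Longrightarrow> R k = R' k"
  have "sandwich_chain \<rho> E L R n = sandwich_chain \<rho> E L' R' n"
    by (rule sandwich_chain_cong) (use a in auto)
  then show ?thesis by (simp add: QKD_doubled_def)
qed

lemma pauli_herm: "gen_pauli \<sigma> \<Longrightarrow> \<mu> < CARD('d)^2 \<Longrightarrow> hermitian (\<sigma> \<mu> :: ('d::finite) sop)"
  unfolding gen_pauli_def by blast

lemma pauli_spec:
  fixes \<sigma> :: "nat \<Rightarrow> ('d::finite) sop"
  assumes "gen_pauli \<sigma>"
  shows "\<And>\<mu>. \<mu> < CARD('d)^2 \<Longrightarrow> finite (eigenvalues (\<sigma> \<mu>)) \<and>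
         (\<forall>i j. (\<Sum>e\<in>eigenvalues (\<sigma> \<mu>). e * spectral_projector (\<sigma> \<mu>) e i j) = \<sigma> \<mu> i j)"
  using spectral pauli_herm[OF assms] by blast

lemma corr_right_eq:
  fixes \<rho> :: "('d::finite) sop"
  assumes lin: "\<forall>k\<in>{1..n}. clinear_map (E k)" and pauli: "gen_pauli \<sigma>"
    and mus: "\<mu>s \<in> pauli_idx CARD('d) (Suc n)"
  shows "corr_right \<sigma> \<rho> E n \<mu>s = QKD_doubled \<rho> E n (\<lambda>_. idm) (\<lambda>k. \<sigma> (\<mu>s!k))"
  unfolding corr_right_def QKD_right_doubled
  by (rule kernel_spectral[OF kernel_QKD_R[OF lin] pauli_spec[OF pauli] mus])

lemma corr_left_eq:
  fixes \<rho> :: "('d::finite) sop"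
  assumes lin: "\<forall>k\<in>{1..n}. clinear_map (E k)" and pauli: "gen_pauli \<sigma>"
    and mus: "\<mu>s \<in> pauli_idx CARD('d) (Suc n)"
  shows "corr_left \<sigma> \<rho> E n \<mu>s = QKD_doubled \<rho> E n (\<lambda>k. \<sigma> (\<mu>s!k)) (\<lambda>_. idm)"
  unfolding corr_left_def QKD_left_doubled
  by (rule kernel_spectral[OF kernel_QKD_L[OF lin] pauli_spec[OF pauli] mus])

lemma corr_doubled_eq:
  fixes \<rho> :: "('d::finite) sop"
  assumes lin: "\<forall>k\<in>{1..n}. clinear_map (E k)" and pauli: "gen_pauli \<sigma>"
    and mus: "\<mu>s \<in> pauli_idx CARD('d) (Suc n)" and nus: "\<nu>s \<in> pauli_idx CARD('d) (Suc n)"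
  shows "corr_doubled \<sigma> \<rho> E n \<mu>s \<nu>s = QKD_doubled \<rho> E n (\<lambda>k. \<sigma> (\<mu>s!k)) (\<lambda>k. \<sigma> (\<nu>s!k))"
proof -
  let ?SA = "outcome_lists (\<lambda>k. eigenvalues (\<sigma> (\<mu>s!k))) (Suc n)"
  let ?SB = "outcome_lists (\<lambda>k. eigenvalues (\<sigma> (\<nu>s!k))) (Suc n)"
  let ?PA = "\<lambda>as k. spectral_projector (\<sigma> (\<mu>s!k)) (as!k)"
  let ?PB = "\<lambda>bs k. spectral_projector (\<sigma> (\<nu>s!k)) (bs!k)"
  have "corr_doubled \<sigma> \<rho> E n \<mu>s \<nu>s = (\<Sum>as\<in>?SA. (\<Prod>k<Suc n. as!k) *
          (\<Sum>bs\<in>?SB. (\<Prod>k<Suc n. bs!k) * QKD_doubled \<rho> E n (?PA as) (?PB bs)))"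
    unfolding corr_doubled_def by (simp add: sum_distrib_left mult.assoc)
  also have "\<dots> = (\<Sum>as\<in>?SA. (\<Prod>k<Suc n. as!k) * QKD_doubled \<rho> E n (?PA as) (\<lambda>k. \<sigma> (\<nu>s!k)))"
    by (intro sum.cong refl arg_cong2[where f="(*)"] kernel_spectral[OF kernel_QKD_R[OF lin] pauli_spec[OF pauli] nus])
  also have "\<dots> = QKD_doubled \<rho> E n (\<lambda>k. \<sigma> (\<mu>s!k)) (\<lambda>k. \<sigma> (\<nu>s!k))"
    by (rule kernel_spectral[OF kernel_QKD_L[OF lin] pauli_spec[OF pauli] mus])
  finally show ?thesis .
qed

lemma KD_right_eq:
  fixes \<rho> :: "('d::finite) sop"
  assumes lin: "\<forall>k\<in>{1..n}. clinear_map (E k)" and pauli: "gen_pauli \<sigma>"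
    and xs: "xs \<in> idx_lists (Suc n)" and ys: "ys \<in> idx_lists (Suc n)"
  shows "KD_state_right \<sigma> \<rho> E n xs ys = QKD_doubled \<rho> E n (\<lambda>_. idm) (\<lambda>k. munit (ys!k) (xs!k))"
proof -
  have "KD_state_right \<sigma> \<rho> E n xs ys = (1 / of_nat CARD('d) ^ Suc n) *
     (\<Sum>\<mu>s\<in>pauli_idx CARD('d) (Suc n). QKD_doubled \<rho> E n (\<lambda>_. idm) (\<lambda>k. \<sigma> (\<mu>s!k)) * tensor (Suc n) (\<lambda>k. \<sigma> (\<mu>s!k)) xs ys)"
    unfolding KD_state_right_def by (simp add: corr_right_eq[OF lin pauli])
  also have "\<dots> = QKD_doubled \<rho> E n (\<lambda>_. idm) (\<lambda>k. munit (ys!k) (xs!k))"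
    by (rule kernel_pauli_state[OF kernel_QKD_R[OF lin] pauli_complete[OF pauli] xs ys])
  finally show ?thesis .
qed

lemma KD_left_eq:
  fixes \<rho> :: "('d::finite) sop"
  assumes lin: "\<forall>k\<in>{1..n}. clinear_map (E k)" and pauli: "gen_pauli \<sigma>"
    and xs: "xs \<in> idx_lists (Suc n)" and ys: "ys \<in> idx_lists (Suc n)"
  shows "KD_state_left \<sigma> \<rho> E n xs ys = QKD_doubled \<rho> E n (\<lambda>k. munit (ys!k) (xs!k)) (\<lambda>_. idm)"
proof -
  have "KD_state_left \<sigma> \<rho> E n xs ys = (1 / of_nat CARD('d) ^ Suc n) *
     (\<Sum>\<mu>s\<in>pauli_idx CARD('d) (Suc n). QKD_doubled \<rho> E n (\<lambda>k. \<sigma> (\<mu>s!k)) (\<lambda>_. idm) * tensor (Suc n) (\<lambda>k. \<sigma> (\<mu>s!k)) xs ys)"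
    unfolding KD_state_left_def by (simp add: corr_left_eq[OF lin pauli])
  also have "\<dots> = QKD_doubled \<rho> E n (\<lambda>k. munit (ys!k) (xs!k)) (\<lambda>_. idm)"
    by (rule kernel_pauli_state[OF kernel_QKD_L[OF lin] pauli_complete[OF pauli] xs ys])
  finally show ?thesis .
qed

lemma tensor2_apply: "tensor2 m A B (xl, xr) (yl, yr) = tensor m A xl yl * tensor m B xr yr"
  by (simp add: tensor2_def)

lemma KD_doubled_eq:
  fixes \<rho> :: "('d::finite) sop"
  assumes lin: "\<forall>k\<in>{1..n}. clinear_map (E k)" and pauli: "gen_pauli \<sigma>"
    and xl: "xl \<in> idx_lists (Suc n)" and yl: "yl \<in> idx_lists (Suc n)"
    and xr: "xr \<in> idx_lists (Suc n)" and yr: "yr \<in> idx_lists (Suc n)"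
  shows "KD_state_doubled \<sigma> \<rho> E n (xl, xr) (yl, yr) =
         QKD_doubled \<rho> E n (\<lambda>k. munit (yl!k) (xl!k)) (\<lambda>k. munit (yr!k) (xr!k))"
proof -
  let ?c = "1 / of_nat CARD('d) ^ Suc n :: complex"
  let ?P = "pauli_idx CARD('d) (Suc n)"
  let ?S = "\<lambda>\<mu>s k. \<sigma> (\<mu>s!k)"
  have c2: "1 / of_nat CARD('d) ^ (2 * Suc n) = ?c * ?c"
    by (simp add: mult_2 power_add)
  have "KD_state_doubled \<sigma> \<rho> E n (xl, xr) (yl, yr) = ?c * ?c *
     (\<Sum>\<mu>s\<in>?P. \<Sum>\<nu>s\<in>?P. QKD_doubled \<rho> E n (?S \<mu>s) (?S \<nu>s) *
        (tensor (Suc n) (?S \<mu>s) xl yl * tensor (Suc n) (?S \<nu>s) xr yr))"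
    unfolding KD_state_doubled_def tensor2_apply c2
    by (intro arg_cong2[where f="(*)"] refl sum.cong) (simp add: corr_doubled_eq[OF lin pauli])
  also have "\<dots> = ?c * (\<Sum>\<mu>s\<in>?P. tensor (Suc n) (?S \<mu>s) xl yl * (?c * (\<Sum>\<nu>s\<in>?P.
        QKD_doubled \<rho> E n (?S \<mu>s) (?S \<nu>s) * tensor (Suc n) (?S \<nu>s) xr yr)))"
  proof -
    have "(\<Sum>\<nu>s\<in>?P. QKD_doubled \<rho> E n (?S \<mu>s) (?S \<nu>s) *
        (tensor (Suc n) (?S \<mu>s) xl yl * tensor (Suc n) (?S \<nu>s) xr yr))
        = tensor (Suc n) (?S \<mu>s) xl yl * (\<Sum>\<nu>s\<in>?P.
        QKD_doubled \<rho> E n (?S \<mu>s) (?S \<nu>s) * tensor (Suc n) (?S \<nu>s) xr yr)" for \<mu>s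
      by (simp add: sum_distrib_left ac_simps)
    then show ?thesis by (simp add: sum_distrib_left ac_simps)
  qed
  also have "\<dots> = ?c * (\<Sum>\<mu>s\<in>?P. tensor (Suc n) (?S \<mu>s) xl yl *
        QKD_doubled \<rho> E n (?S \<mu>s) (\<lambda>k. munit (yr!k) (xr!k)))"
    by (intro arg_cong2[where f="(*)"] sum.cong refl
        kernel_pauli_state[OF kernel_QKD_R[OF lin] pauli_complete[OF pauli] xr yr])
  also have "\<dots> = ?c * (\<Sum>\<mu>s\<in>?P. QKD_doubled \<rho> E n (?S \<mu>s) (\<lambda>k. munit (yr!k) (xr!k)) * tensor (Suc n) (?S \<mu>s) xl yl)"
    by (simp add: mult.commute)
  also have "\<dots> = QKD_doubled \<rho> E n (\<lambda>k. munit (yl!k) (xl!k)) (\<lambda>k. munit (yr!k) (xr!k))"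
    by (rule kernel_pauli_state[OF kernel_QKD_L[OF lin] pauli_complete[OF pauli] xl yl])
  finally show ?thesis .
qed


lemma tensor_cnj:
  assumes "\<forall>k<m. hermitian (A k)"
  shows "cnj (tensor m A ys xs) = tensor m A xs ys"
  unfolding tensor_def
proof -
  have "cnj (A k (ys!k) (xs!k)) = A k (xs!k) (ys!k)" if "k < m" for k
  proof -
    have "\<forall>i j. A k i j = cnj (A k j i)" using assms that unfolding hermitian_def by blast
    then show ?thesis by (metis complex_cnj_cnj)
  qed
  then show "cnj (\<Prod>k<m. A k (ys!k) (xs!k)) = (\<Prod>k<m. A k (xs!k) (ys!k))"
    by (simp add: cnj_prod)
qed

lemma Re_half: "complex_of_real (Re z) = (z + cnj z) / 2"
  by (simp add: complex_add_cnj)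

lemma pauli_idx_herm:
  "gen_pauli \<sigma> \<Longrightarrow> \<mu>s \<in> pauli_idx CARD('d) m \<Longrightarrow> \<forall>k<m. hermitian (\<sigma> (\<mu>s!k) :: ('d::finite) sop)"
  by (auto simp: pauli_idx_def intro: pauli_herm)

lemma cnj_pow_inv: "cnj (1 / of_nat d ^ m :: complex) = 1 / of_nat d ^ m"
  by simp

lemma MH_eq:
  fixes \<rho> :: "('d::finite) sop"
  assumes pauli: "gen_pauli \<sigma>"
  shows "MH_state \<sigma> \<rho> E n xs ys =
    (KD_state_right \<sigma> \<rho> E n xs ys + op_adj (KD_state_right \<sigma> \<rho> E n) xs ys) / 2"
proof -
  let ?c = "1 / of_nat CARD('d) ^ Suc n :: complex"
  let ?P = "pauli_idx CARD('d) (Suc n)"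
  let ?t = "\<lambda>\<mu>s. tensor (Suc n) (\<lambda>k. \<sigma> (\<mu>s!k))"
  let ?C = "corr_right \<sigma> \<rho> E n"
  have "op_adj (KD_state_right \<sigma> \<rho> E n) xs ys = ?c * (\<Sum>\<mu>s\<in>?P. cnj (?C \<mu>s) * cnj (?t \<mu>s ys xs))"
    unfolding op_adj_def KD_state_right_def by (simp add: cnj_sum)
  also have "\<dots> = ?c * (\<Sum>\<mu>s\<in>?P. cnj (?C \<mu>s) * ?t \<mu>s xs ys)"
    by (intro arg_cong2[where f="(*)"] refl sum.cong) (simp add: tensor_cnj[OF pauli_idx_herm[OF pauli]])
  finally have adj: "op_adj (KD_state_right \<sigma> \<rho> E n) xs ys = ?c * (\<Sum>\<mu>s\<in>?P. cnj (?C \<mu>s) * ?t \<mu>s xs ys)" .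
  have "MH_state \<sigma> \<rho> E n xs ys = ?c * (\<Sum>\<mu>s\<in>?P. (?C \<mu>s * ?t \<mu>s xs ys + cnj (?C \<mu>s) * ?t \<mu>s xs ys) / 2)"
    unfolding MH_state_def Re_half by (simp add: algebra_simps add_divide_distrib)
  also have "\<dots> = ?c * (((\<Sum>\<mu>s\<in>?P. ?C \<mu>s * ?t \<mu>s xs ys) + (\<Sum>\<mu>s\<in>?P. cnj (?C \<mu>s) * ?t \<mu>s xs ys)) / 2)"
    by (simp only: sum.distrib flip: sum_divide_distrib)
  also have "\<dots> = (KD_state_right \<sigma> \<rho> E n xs ys + op_adj (KD_state_right \<sigma> \<rho> E n) xs ys) / 2"
    unfolding adj KD_state_right_def by (simp add: distrib_left add_divide_distrib)
  finally show ?thesis .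
qed

lemma tensor2_cnj:
  assumes "\<forall>k<m. hermitian (A k)" "\<forall>k<m. hermitian (B k)"
  shows "cnj (tensor2 m A B y x) = tensor2 m A B x y"
  using tensor_cnj[OF assms(1)] tensor_cnj[OF assms(2)]
  by (cases x, cases y) (simp add: tensor2_def)

lemma MH_doubled_eq:
  fixes \<rho> :: "('d::finite) sop"
  assumes pauli: "gen_pauli \<sigma>"
  shows "MH_state_doubled \<sigma> \<rho> E n x y =
    (KD_state_doubled \<sigma> \<rho> E n x y + op_adj (KD_state_doubled \<sigma> \<rho> E n) x y) / 2"
proof -
  let ?c = "1 / of_nat CARD('d) ^ (2 * Suc n) :: complex"
  let ?P = "pauli_idx CARD('d) (Suc n)"
  let ?t = "\<lambda>\<mu>s \<nu>s. tensor2 (Suc n) (\<lambda>k. \<sigma> (\<mu>s!k)) (\<lambda>k. \<sigma> (\<nu>s!k))"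
  let ?C = "corr_doubled \<sigma> \<rho> E n"
  have "op_adj (KD_state_doubled \<sigma> \<rho> E n) x y = ?c * (\<Sum>\<mu>s\<in>?P. \<Sum>\<nu>s\<in>?P. cnj (?C \<mu>s \<nu>s) * cnj (?t \<mu>s \<nu>s y x))"
    unfolding op_adj_def KD_state_doubled_def by (simp add: cnj_sum)
  also have "\<dots> = ?c * (\<Sum>\<mu>s\<in>?P. \<Sum>\<nu>s\<in>?P. cnj (?C \<mu>s \<nu>s) * ?t \<mu>s \<nu>s x y)"
    by (intro arg_cong2[where f="(*)"] refl sum.cong)
       (simp add: tensor2_cnj[OF pauli_idx_herm[OF pauli] pauli_idx_herm[OF pauli]])
  finally have adj: "op_adj (KD_state_doubled \<sigma> \<rho> E n) x y = ?c * (\<Sum>\<mu>s\<in>?P. \<Sum>\<nu>s\<in>?P. cnj (?C \<mu>s \<nu>s) * ?t \<mu>s \<nu>s x y)" .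
  have "MH_state_doubled \<sigma> \<rho> E n x y = ?c * (\<Sum>\<mu>s\<in>?P. \<Sum>\<nu>s\<in>?P. (?C \<mu>s \<nu>s * ?t \<mu>s \<nu>s x y + cnj (?C \<mu>s \<nu>s) * ?t \<mu>s \<nu>s x y) / 2)"
    unfolding MH_state_doubled_def Re_half by (simp add: algebra_simps add_divide_distrib)
  also have "\<dots> = ?c * (((\<Sum>\<mu>s\<in>?P. \<Sum>\<nu>s\<in>?P. ?C \<mu>s \<nu>s * ?t \<mu>s \<nu>s x y) + (\<Sum>\<mu>s\<in>?P. \<Sum>\<nu>s\<in>?P. cnj (?C \<mu>s \<nu>s) * ?t \<mu>s \<nu>s x y)) / 2)"
    by (simp only: sum.distrib flip: sum_divide_distrib)
  also have "\<dots> = (KD_state_doubled \<sigma> \<rho> E n x y + op_adj (KD_state_doubled \<sigma> \<rho> E n) x y) / 2"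
    unfolding adj KD_state_doubled_def by (simp add: distrib_left add_divide_distrib)
  finally show ?thesis .
qed

section \<open>Born rules\<close>

lemma sum_prod_split: "(\<Sum>x\<in>A \<times> B. h x) = (\<Sum>a\<in>A. \<Sum>b\<in>B. h (a, b))"
  by (simp add: sum.cartesian_product)

lemma tr_mul_cong:
  "(\<And>x y. x \<in> I \<Longrightarrow> y \<in> I \<Longrightarrow> Y x y = Y' x y) \<Longrightarrow> tr_on I (mul_on I X Y) = tr_on I (mul_on I X Y')"
  unfolding tr_on_def mul_on_def by simp

lemma born_right:
  fixes \<rho> :: "('d::finite) sop"
  assumes lin: "\<forall>k\<in>{1..n}. clinear_map (E k)" and pauli: "gen_pauli \<sigma>"
  shows "tr_on (idx_lists (Suc n)) (mul_on (idx_lists (Suc n)) (tensor (Suc n) P) (KD_state_right \<sigma> \<rho> E n))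
       = QKD_doubled \<rho> E n (\<lambda>_. idm) P"
proof -
  have "tr_on (idx_lists (Suc n)) (mul_on (idx_lists (Suc n)) (tensor (Suc n) P) (KD_state_right \<sigma> \<rho> E n))
      = tr_on (idx_lists (Suc n)) (mul_on (idx_lists (Suc n)) (tensor (Suc n) P)
          (\<lambda>z x. QKD_doubled \<rho> E n (\<lambda>_. idm) (\<lambda>k. munit (x!k) (z!k))))"
    by (rule tr_mul_cong) (simp add: KD_right_eq[OF lin pauli])
  also have "\<dots> = QKD_doubled \<rho> E n (\<lambda>_. idm) P"
    by (rule kernel_born[OF kernel_QKD_R[OF lin]])
  finally show ?thesis .
qed

lemma born_left:
  fixes \<rho> :: "('d::finite) sop"
  assumes lin: "\<forall>k\<in>{1..n}. clinear_map (E k)" and pauli: "gen_pauli \<sigma>"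
  shows "tr_on (idx_lists (Suc n)) (mul_on (idx_lists (Suc n)) (tensor (Suc n) P) (KD_state_left \<sigma> \<rho> E n))
       = QKD_doubled \<rho> E n P (\<lambda>_. idm)"
proof -
  have "tr_on (idx_lists (Suc n)) (mul_on (idx_lists (Suc n)) (tensor (Suc n) P) (KD_state_left \<sigma> \<rho> E n))
      = tr_on (idx_lists (Suc n)) (mul_on (idx_lists (Suc n)) (tensor (Suc n) P)
          (\<lambda>z x. QKD_doubled \<rho> E n (\<lambda>k. munit (x!k) (z!k)) (\<lambda>_. idm)))"
    by (rule tr_mul_cong) (simp add: KD_left_eq[OF lin pauli])
  also have "\<dots> = QKD_doubled \<rho> E n P (\<lambda>_. idm)"
    by (rule kernel_born[OF kernel_QKD_L[OF lin]])
  finally show ?thesis .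
qed

lemma born_doubled:
  fixes \<rho> :: "('d::finite) sop"
  assumes lin: "\<forall>k\<in>{1..n}. clinear_map (E k)" and pauli: "gen_pauli \<sigma>"
  shows "tr_on (idx_lists (Suc n) \<times> idx_lists (Suc n)) (mul_on (idx_lists (Suc n) \<times> idx_lists (Suc n))
           (tensor2 (Suc n) A B) (KD_state_doubled \<sigma> \<rho> E n))
       = QKD_doubled \<rho> E n A B"
proof -
  let ?I = "idx_lists (Suc n) :: 'd list set"
  let ?Q = "\<lambda>xl zl xr zr. QKD_doubled \<rho> E n (\<lambda>k. munit (xl!k) (zl!k)) (\<lambda>k. munit (xr!k) (zr!k))"
  have "tr_on (?I \<times> ?I) (mul_on (?I \<times> ?I) (tensor2 (Suc n) A B) (KD_state_doubled \<sigma> \<rho> E n))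
      = (\<Sum>x\<in>?I \<times> ?I. \<Sum>z\<in>?I \<times> ?I. tensor2 (Suc n) A B x z * KD_state_doubled \<sigma> \<rho> E n z x)"
    by (simp add: tr_on_def mul_on_def)
  also have "\<dots> = (\<Sum>xl\<in>?I. \<Sum>xr\<in>?I. \<Sum>zl\<in>?I. \<Sum>zr\<in>?I.
      tensor (Suc n) A xl zl * tensor (Suc n) B xr zr * ?Q xl zl xr zr)"
    unfolding sum_prod_split
    by (intro sum.cong refl) (simp add: tensor2_apply KD_doubled_eq[OF lin pauli])
  also have "\<dots> = (\<Sum>xl\<in>?I. \<Sum>zl\<in>?I. tensor (Suc n) A xl zl *
      (\<Sum>xr\<in>?I. \<Sum>zr\<in>?I. tensor (Suc n) B xr zr * ?Q xl zl xr zr))"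
  proof (rule sum.cong[OF refl])
    fix xl
    have "(\<Sum>xr\<in>?I. \<Sum>zl\<in>?I. \<Sum>zr\<in>?I. tensor (Suc n) A xl zl * tensor (Suc n) B xr zr * ?Q xl zl xr zr)
        = (\<Sum>zl\<in>?I. \<Sum>xr\<in>?I. \<Sum>zr\<in>?I. tensor (Suc n) A xl zl * tensor (Suc n) B xr zr * ?Q xl zl xr zr)"
      by (rule sum.swap)
    then show "(\<Sum>xr\<in>?I. \<Sum>zl\<in>?I. \<Sum>zr\<in>?I. tensor (Suc n) A xl zl * tensor (Suc n) B xr zr * ?Q xl zl xr zr)
        = (\<Sum>zl\<in>?I. tensor (Suc n) A xl zl * (\<Sum>xr\<in>?I. \<Sum>zr\<in>?I. tensor (Suc n) B xr zr * ?Q xl zl xr zr))"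
      by (simp add: sum_distrib_left mult.assoc)
  qed
  also have "\<dots> = (\<Sum>xl\<in>?I. \<Sum>zl\<in>?I. tensor (Suc n) A xl zl * QKD_doubled \<rho> E n (\<lambda>k. munit (xl!k) (zl!k)) B)"
    by (simp only: has_kernelD[OF kernel_QKD_R[OF lin], symmetric])
  also have "\<dots> = QKD_doubled \<rho> E n A B"
    by (rule has_kernelD[OF kernel_QKD_L[OF lin], symmetric])
  finally show ?thesis .
qed

lemma born_MH:
  assumes fin: "finite I" and herm: "\<And>x z. x \<in> I \<Longrightarrow> z \<in> I \<Longrightarrow> X x z = cnj (X z x)"
    and Z: "\<And>x y. x \<in> I \<Longrightarrow> y \<in> I \<Longrightarrow> Z x y = (Y x y + op_adj Y x y) / 2"
  shows "tr_on I (mul_on I X Z) = complex_of_real (Re (tr_on I (mul_on I X Y)))"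
proof -
  have adj: "tr_on I (mul_on I X (op_adj Y)) = cnj (tr_on I (mul_on I X Y))"
  proof -
    have "cnj (tr_on I (mul_on I X Y)) = (\<Sum>x\<in>I. \<Sum>z\<in>I. cnj (X x z) * cnj (Y z x))"
      by (simp add: tr_on_def mul_on_def cnj_sum)
    also have "\<dots> = (\<Sum>x\<in>I. \<Sum>z\<in>I. X z x * cnj (Y z x))"
      by (intro sum.cong refl) (metis herm complex_cnj_cnj)
    also have "\<dots> = (\<Sum>z\<in>I. \<Sum>x\<in>I. X z x * cnj (Y z x))" by (rule sum.swap)
    also have "\<dots> = tr_on I (mul_on I X (op_adj Y))"
      by (simp add: tr_on_def mul_on_def op_adj_def)
    finally show ?thesis by simp
  qed
  have "tr_on I (mul_on I X Z) = tr_on I (mul_on I X (\<lambda>x y. (Y x y + op_adj Y x y) / 2))"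
    by (rule tr_mul_cong) (simp add: Z)
  also have "\<dots> = (tr_on I (mul_on I X Y) + tr_on I (mul_on I X (op_adj Y))) / 2"
    by (simp add: tr_on_def mul_on_def sum.distrib algebra_simps add_divide_distrib sum_divide_distrib)
  also have "\<dots> = complex_of_real (Re (tr_on I (mul_on I X Y)))"
    unfolding adj Re_half ..
  finally show ?thesis .
qed

section \<open>Partial traces\<close>

lemma ptrace_L_eq:
  fixes \<rho> :: "('d::finite) sop"
  assumes lin: "\<forall>k\<in>{1..n}. clinear_map (E k)" and pauli: "gen_pauli \<sigma>"
    and xs: "xs \<in> idx_lists (Suc n)" and ys: "ys \<in> idx_lists (Suc n)"
  shows "ptrace_L (Suc n) (KD_state_doubled \<sigma> \<rho> E n) xs ys = KD_state_right \<sigma> \<rho> E n xs ys"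
proof -
  have "ptrace_L (Suc n) (KD_state_doubled \<sigma> \<rho> E n) xs ys
      = (\<Sum>z\<in>idx_lists (Suc n). QKD_doubled \<rho> E n (\<lambda>k. munit (z!k) (z!k)) (\<lambda>k. munit (ys!k) (xs!k)))"
    unfolding ptrace_L_def by (intro sum.cong refl) (simp add: KD_doubled_eq[OF lin pauli _ _ xs ys])
  also have "\<dots> = QKD_doubled \<rho> E n (\<lambda>_. idm) (\<lambda>k. munit (ys!k) (xs!k))"
    by (rule kernel_idm[OF kernel_QKD_L[OF lin], symmetric])
  also have "\<dots> = KD_state_right \<sigma> \<rho> E n xs ys" by (rule KD_right_eq[OF lin pauli xs ys, symmetric])
  finally show ?thesis .
qed

lemma ptrace_R_eq:
  fixes \<rho> :: "('d::finite) sop"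
  assumes lin: "\<forall>k\<in>{1..n}. clinear_map (E k)" and pauli: "gen_pauli \<sigma>"
    and xs: "xs \<in> idx_lists (Suc n)" and ys: "ys \<in> idx_lists (Suc n)"
  shows "ptrace_R (Suc n) (KD_state_doubled \<sigma> \<rho> E n) xs ys = KD_state_left \<sigma> \<rho> E n xs ys"
proof -
  have "ptrace_R (Suc n) (KD_state_doubled \<sigma> \<rho> E n) xs ys
      = (\<Sum>z\<in>idx_lists (Suc n). QKD_doubled \<rho> E n (\<lambda>k. munit (ys!k) (xs!k)) (\<lambda>k. munit (z!k) (z!k)))"
    unfolding ptrace_R_def by (intro sum.cong refl) (simp add: KD_doubled_eq[OF lin pauli xs ys])
  also have "\<dots> = QKD_doubled \<rho> E n (\<lambda>k. munit (ys!k) (xs!k)) (\<lambda>_. idm)"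
    by (rule kernel_idm[OF kernel_QKD_R[OF lin], symmetric])
  also have "\<dots> = KD_state_left \<sigma> \<rho> E n xs ys" by (rule KD_left_eq[OF lin pauli xs ys, symmetric])
  finally show ?thesis .
qed

lemma op_adj_idm[simp]: "op_adj idm = idm"
  by (intro ext) (simp add: op_adj_def idm_def)

lemma op_adj_munit[simp]: "op_adj (munit a b) = munit b a"
  by (intro ext) (auto simp: op_adj_def munit_def)

lemma adj_left_right:
  fixes \<rho> :: "('d::finite) sop"
  assumes lin: "\<forall>k\<in>{1..n}. clinear_map (E k)" and pauli: "gen_pauli \<sigma>"
    and adjE: "\<forall>k\<in>{1..n}. \<forall>A. E k (op_adj A) = op_adj (E k A)" and h: "hermitian \<rho>"
    and xs: "xs \<in> idx_lists (Suc n)" and ys: "ys \<in> idx_lists (Suc n)"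
  shows "op_adj (KD_state_left \<sigma> \<rho> E n) xs ys = KD_state_right \<sigma> \<rho> E n xs ys"
    "op_adj (KD_state_right \<sigma> \<rho> E n) xs ys = KD_state_left \<sigma> \<rho> E n xs ys"
proof -
  have "op_adj (KD_state_left \<sigma> \<rho> E n) xs ys = cnj (KD_state_left \<sigma> \<rho> E n ys xs)"
    by (simp add: op_adj_def)
  also have "\<dots> = KD_state_right \<sigma> \<rho> E n xs ys"
    unfolding KD_left_eq[OF lin pauli ys xs] KD_right_eq[OF lin pauli xs ys] cnj_QKD[OF adjE h]
    by simp
  finally show "op_adj (KD_state_left \<sigma> \<rho> E n) xs ys = KD_state_right \<sigma> \<rho> E n xs ys" .
  have "op_adj (KD_state_right \<sigma> \<rho> E n) xs ys = cnj (KD_state_right \<sigma> \<rho> E n ys xs)"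
    by (simp add: op_adj_def)
  also have "\<dots> = KD_state_left \<sigma> \<rho> E n xs ys"
    unfolding KD_left_eq[OF lin pauli xs ys] KD_right_eq[OF lin pauli ys xs] cnj_QKD[OF adjE h]
    by simp
  finally show "op_adj (KD_state_right \<sigma> \<rho> E n) xs ys = KD_state_left \<sigma> \<rho> E n xs ys" .
qed

lemma keep_pairs_idx: "(zs, ws) \<in> keep_pairs m ts xs ys \<Longrightarrow> zs \<in> idx_lists m \<and> ws \<in> idx_lists m"
  by (simp add: keep_pairs_def idx_lists_def)

lemma ptrace_keep_R:
  fixes \<rho> :: "('d::finite) sop"
  assumes lin: "\<forall>k\<in>{1..n}. clinear_map (E k)" and pauli: "gen_pauli \<sigma>"
    and dist: "distinct ts" and lt: "\<forall>t\<in>set ts. t < Suc n"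
  shows "ptrace_keep (Suc n) ts (KD_state_right \<sigma> \<rho> E n) xs ys = QKD_doubled \<rho> E n (\<lambda>_. idm) (keepP ts xs ys)"
proof -
  have "ptrace_keep (Suc n) ts (KD_state_right \<sigma> \<rho> E n) xs ys
      = (\<Sum>(zs, ws)\<in>keep_pairs (Suc n) ts xs ys. QKD_doubled \<rho> E n (\<lambda>_. idm) (\<lambda>k. munit (ws!k) (zs!k)))"
    unfolding ptrace_keep_def by (intro sum.cong refl) (auto simp: KD_right_eq[OF lin pauli] dest: keep_pairs_idx)
  also have "\<dots> = QKD_doubled \<rho> E n (\<lambda>_. idm) (keepP ts xs ys)"
    by (rule kernel_keep[OF kernel_QKD_R[OF lin] dist lt])
  finally show ?thesis .
qed

lemma ptrace_keep_L:
  fixes \<rho> :: "('d::finite) sop"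
  assumes lin: "\<forall>k\<in>{1..n}. clinear_map (E k)" and pauli: "gen_pauli \<sigma>"
    and dist: "distinct ts" and lt: "\<forall>t\<in>set ts. t < Suc n"
  shows "ptrace_keep (Suc n) ts (KD_state_left \<sigma> \<rho> E n) xs ys = QKD_doubled \<rho> E n (keepP ts xs ys) (\<lambda>_. idm)"
proof -
  have "ptrace_keep (Suc n) ts (KD_state_left \<sigma> \<rho> E n) xs ys
      = (\<Sum>(zs, ws)\<in>keep_pairs (Suc n) ts xs ys. QKD_doubled \<rho> E n (\<lambda>k. munit (ws!k) (zs!k)) (\<lambda>_. idm))"
    unfolding ptrace_keep_def by (intro sum.cong refl) (auto simp: KD_left_eq[OF lin pauli] dest: keep_pairs_idx)
  also have "\<dots> = QKD_doubled \<rho> E n (keepP ts xs ys) (\<lambda>_. idm)"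
    by (rule kernel_keep[OF kernel_QKD_L[OF lin] dist lt])
  finally show ?thesis .
qed

lemma ptrace_keep2_D:
  fixes \<rho> :: "('d::finite) sop"
  assumes lin: "\<forall>k\<in>{1..n}. clinear_map (E k)" and pauli: "gen_pauli \<sigma>"
    and dist: "distinct ts" and lt: "\<forall>t\<in>set ts. t < Suc n"
  shows "ptrace_keep2 (Suc n) ts (KD_state_doubled \<sigma> \<rho> E n) (xl, xr) (yl, yr)
       = QKD_doubled \<rho> E n (keepP ts xl yl) (keepP ts xr yr)"
proof -
  have "ptrace_keep2 (Suc n) ts (KD_state_doubled \<sigma> \<rho> E n) (xl, xr) (yl, yr)
      = (\<Sum>(zl, wl)\<in>keep_pairs (Suc n) ts xl yl. \<Sum>(zr, wr)\<in>keep_pairs (Suc n) ts xr yr.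
          QKD_doubled \<rho> E n (\<lambda>k. munit (wl!k) (zl!k)) (\<lambda>k. munit (wr!k) (zr!k)))"
  proof -
    have "ptrace_keep2 (Suc n) ts (KD_state_doubled \<sigma> \<rho> E n) (xl, xr) (yl, yr)
      = (\<Sum>(zl, wl)\<in>keep_pairs (Suc n) ts xl yl. \<Sum>(zr, wr)\<in>keep_pairs (Suc n) ts xr yr.
          KD_state_doubled \<sigma> \<rho> E n (zl, zr) (wl, wr))"
      by (simp add: ptrace_keep2_def)
    also have "\<dots> = (\<Sum>(zl, wl)\<in>keep_pairs (Suc n) ts xl yl. \<Sum>(zr, wr)\<in>keep_pairs (Suc n) ts xr yr.
          QKD_doubled \<rho> E n (\<lambda>k. munit (wl!k) (zl!k)) (\<lambda>k. munit (wr!k) (zr!k)))"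
    proof (rule sum.cong[OF refl], clarify)
      fix zl wl assume pl: "(zl, wl) \<in> keep_pairs (Suc n) ts xl yl"
      show "(\<Sum>(zr, wr)\<in>keep_pairs (Suc n) ts xr yr. KD_state_doubled \<sigma> \<rho> E n (zl, zr) (wl, wr)) =
          (\<Sum>(zr, wr)\<in>keep_pairs (Suc n) ts xr yr. QKD_doubled \<rho> E n (\<lambda>k. munit (wl!k) (zl!k)) (\<lambda>k. munit (wr!k) (zr!k)))"
        using keep_pairs_idx[OF pl]
        by (intro sum.cong refl) (auto simp: KD_doubled_eq[OF lin pauli] dest: keep_pairs_idx)
    qed
    finally show ?thesis .
  qed
  also have "\<dots> = (\<Sum>(zl, wl)\<in>keep_pairs (Suc n) ts xl yl.
          QKD_doubled \<rho> E n (\<lambda>k. munit (wl!k) (zl!k)) (keepP ts xr yr))"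
    by (intro sum.cong refl) (auto simp: kernel_keep[OF kernel_QKD_R[OF lin] dist lt])
  also have "\<dots> = QKD_doubled \<rho> E n (keepP ts xl yl) (keepP ts xr yr)"
    by (rule kernel_keep[OF kernel_QKD_L[OF lin] dist lt])
  finally show ?thesis .
qed

lemma mtr_mmul_munit_right: "mtr (mmul X (munit y x)) = X x y"
  by (simp add: mtr_def mmul_munit_right)

lemma mtr_mmul_munit_left: "mtr (mmul (munit y x) X) = X x y"
  by (simp add: mtr_def mmul_munit_left)

lemma keepP_single: "keepP [k] [x] [y] t = (if t = k then munit y x else idm)"
proof -
  have "kpos [k] k = 0" using kpos_nth[of "[k]" 0] by simp
  then show ?thesis by (simp add: keepP_def)
qed

lemma evolved_R:
  fixes \<rho> :: "('d::finite) sop"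
  assumes k: "k \<le> n" and tp: "\<forall>t\<in>{1..n}. trace_preserving (E t)"
  shows "QKD_doubled \<rho> E n (\<lambda>_. idm) (keepP [k] [x] [y]) = evolved_state \<rho> E k x y"
proof -
  let ?R = "keepP [k] [x] [y]"
  have "mtr (sandwich_chain \<rho> E (\<lambda>_. idm) ?R n) = mtr (sandwich_chain \<rho> E (\<lambda>_. idm) ?R k)"
    by (rule mtr_chain_tail[OF k]) (use tp in \<open>auto simp: keepP_single\<close>)
  also have "sandwich_chain \<rho> E (\<lambda>_. idm) ?R k = mmul idm (mmul (chan_seq E 0 k \<rho>) (?R k))"
    by (rule chain_prefix) (auto simp: keepP_single)
  also have "mtr \<dots> = evolved_state \<rho> E k x y"
    by (simp add: keepP_single mtr_mmul_munit_right evolved_state_def)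
  finally show ?thesis by (simp add: QKD_doubled_def)
qed

lemma evolved_L:
  fixes \<rho> :: "('d::finite) sop"
  assumes k: "k \<le> n" and tp: "\<forall>t\<in>{1..n}. trace_preserving (E t)"
  shows "QKD_doubled \<rho> E n (keepP [k] [x] [y]) (\<lambda>_. idm) = evolved_state \<rho> E k x y"
proof -
  let ?L = "keepP [k] [x] [y]"
  have "mtr (sandwich_chain \<rho> E ?L (\<lambda>_. idm) n) = mtr (sandwich_chain \<rho> E ?L (\<lambda>_. idm) k)"
    by (rule mtr_chain_tail[OF k]) (use tp in \<open>auto simp: keepP_single\<close>)
  also have "sandwich_chain \<rho> E ?L (\<lambda>_. idm) k = mmul (?L k) (mmul (chan_seq E 0 k \<rho>) idm)"
    by (rule chain_prefix) (auto simp: keepP_single)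
  also have "mtr \<dots> = evolved_state \<rho> E k x y"
    by (simp add: keepP_single mtr_mmul_munit_left evolved_state_def)
  finally show ?thesis by (simp add: QKD_doubled_def)
qed

section \<open>Sub-processes\<close>

lemma QKD_sub_keep:
  assumes ne: "ts \<noteq> []" and t0: "ts!0 = 0" and s: "sorted_wrt (<) ts" and le: "\<forall>t\<in>set ts. t \<le> n"
    and tp: "\<forall>t\<in>{1..n}. trace_preserving (E t)"
    and L: "L = (\<lambda>_. idm) \<and> L' = (\<lambda>_. idm) \<or> L = keepP ts xl yl \<and> L' = (\<lambda>k. munit (yl!k) (xl!k))"
    and R: "R = (\<lambda>_. idm) \<and> R' = (\<lambda>_. idm) \<or> R = keepP ts xr yr \<and> R' = (\<lambda>k. munit (yr!k) (xr!k))"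
  shows "QKD_doubled \<rho> E n L R = QKD_doubled \<rho> (sub_channels E ts) (length ts - 1) L' R'"
proof -
  have dist: "distinct ts" using s strict_sorted_iff by blast
  have idm: "\<forall>t. t \<notin> set ts \<longrightarrow> L t = idm \<and> R t = idm"
    using L R by (auto simp: keepP_notin)
  have "QKD_doubled \<rho> E n L R = QKD_doubled \<rho> (sub_channels E ts) (length ts - 1) (\<lambda>j. L (ts!j)) (\<lambda>j. R (ts!j))"
    by (rule QKD_sub[OF ne t0 s le idm tp])
  also have "\<dots> = QKD_doubled \<rho> (sub_channels E ts) (length ts - 1) L' R'"
  proof (rule QKD_cong)
    fix j assume "j \<le> length ts - 1"
    then have j: "j < length ts" using ne by (cases ts) auto
    show "L (ts!j) = L' j" using L keepP_nth[OF dist j] by auto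
    show "R (ts!j) = R' j" using R keepP_nth[OF dist j] by auto
  qed
  finally show ?thesis .
qed

theorem theorem2:
  fixes \<rho> :: "('d::finite) sop" and E :: "nat \<Rightarrow> 'd sop \<Rightarrow> 'd sop"
    and \<sigma> :: "nat \<Rightarrow> 'd sop" and n :: nat
  assumes proc: "multi_time_process n \<rho> E"
    and pauli: "gen_pauli \<sigma>"
  shows
    \<comment> \<open>(1)\<close>
    "mop_eq (Suc n) (KD_state_right \<sigma> \<rho> E n) (ptrace_L (Suc n) (KD_state_doubled \<sigma> \<rho> E n))
     \<and> mop_eq (Suc n) (KD_state_left \<sigma> \<rho> E n) (ptrace_R (Suc n) (KD_state_doubled \<sigma> \<rho> E n))
     \<and> mop_eq (Suc n) (KD_state_right \<sigma> \<rho> E n) (op_adj (KD_state_left \<sigma> \<rho> E n))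
     \<and> (\<forall>k\<le>n. \<forall>x y.
          evolved_state \<rho> E k x y = ptrace_keep (Suc n) [k] (KD_state_right \<sigma> \<rho> E n) [x] [y]
        \<and> evolved_state \<rho> E k x y = ptrace_keep (Suc n) [k] (KD_state_left \<sigma> \<rho> E n) [x] [y])
     \<and> (\<forall>ts. ts \<noteq> [] \<and> ts!0 = 0 \<and> sorted_wrt (<) ts \<and> (\<forall>t\<in>set ts. t \<le> n) \<longrightarrow>
          mop_eq (length ts) (ptrace_keep (Suc n) ts (KD_state_right \<sigma> \<rho> E n))
                 (KD_state_right \<sigma> \<rho> (sub_channels E ts) (length ts - 1))
        \<and> mop_eq (length ts) (ptrace_keep (Suc n) ts (KD_state_left \<sigma> \<rho> E n))
                 (KD_state_left \<sigma> \<rho> (sub_channels E ts) (length ts - 1))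
        \<and> dop_eq (length ts) (ptrace_keep2 (Suc n) ts (KD_state_doubled \<sigma> \<rho> E n))
                 (KD_state_doubled \<sigma> \<rho> (sub_channels E ts) (length ts - 1)))
     \<comment> \<open>(2)\<close>
     \<and> mop_eq (Suc n) (MH_state \<sigma> \<rho> E n)
         (\<lambda>x y. (KD_state_left \<sigma> \<rho> E n x y + op_adj (KD_state_left \<sigma> \<rho> E n) x y) / 2)
     \<and> mop_eq (Suc n) (MH_state \<sigma> \<rho> E n)
         (\<lambda>x y. (KD_state_right \<sigma> \<rho> E n x y + op_adj (KD_state_right \<sigma> \<rho> E n) x y) / 2)
     \<and> dop_eq (Suc n) (MH_state_doubled \<sigma> \<rho> E n)
         (\<lambda>x y. (KD_state_doubled \<sigma> \<rho> E n x y + op_adj (KD_state_doubled \<sigma> \<rho> E n) x y) / 2)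
     \<and> (\<forall>k\<le>n. \<forall>x y. evolved_state \<rho> E k x y = ptrace_keep (Suc n) [k] (MH_state \<sigma> \<rho> E n) [x] [y])
     \<comment> \<open>(3) temporal Born rule\<close>
     \<and> (\<forall>(PA :: nat \<Rightarrow> 'a \<Rightarrow> 'd sop) PB OA OB.
          (\<forall>k\<le>n. proj_family (OA k) (PA k) \<and> proj_family (OB k) (PB k)) \<longrightarrow>
          (\<forall>as\<in>outcome_lists OA (Suc n). \<forall>bs\<in>outcome_lists OB (Suc n).
             QKD_right \<rho> E n (\<lambda>k. PB k (bs!k)) =
               tr_on (idx_lists (Suc n)) (mul_on (idx_lists (Suc n))
                 (tensor (Suc n) (\<lambda>k. PB k (bs!k))) (KD_state_right \<sigma> \<rho> E n))
           \<and> QKD_left \<rho> E n (\<lambda>k. PB k (bs!k)) =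
               tr_on (idx_lists (Suc n)) (mul_on (idx_lists (Suc n))
                 (tensor (Suc n) (\<lambda>k. PB k (bs!k))) (KD_state_left \<sigma> \<rho> E n))
           \<and> QKD_doubled \<rho> E n (\<lambda>k. PA k (as!k)) (\<lambda>k. PB k (bs!k)) =
               tr_on (idx_lists (Suc n) \<times> idx_lists (Suc n)) (mul_on (idx_lists (Suc n) \<times> idx_lists (Suc n))
                 (tensor2 (Suc n) (\<lambda>k. PA k (as!k)) (\<lambda>k. PB k (bs!k))) (KD_state_doubled \<sigma> \<rho> E n))
           \<and> complex_of_real (QMH \<rho> E n (\<lambda>k. PB k (bs!k))) =
               tr_on (idx_lists (Suc n)) (mul_on (idx_lists (Suc n))
                 (tensor (Suc n) (\<lambda>k. PB k (bs!k))) (MH_state \<sigma> \<rho> E n))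
           \<and> complex_of_real (QMH_doubled \<rho> E n (\<lambda>k. PA k (as!k)) (\<lambda>k. PB k (bs!k))) =
               tr_on (idx_lists (Suc n) \<times> idx_lists (Suc n)) (mul_on (idx_lists (Suc n) \<times> idx_lists (Suc n))
                 (tensor2 (Suc n) (\<lambda>k. PA k (as!k)) (\<lambda>k. PB k (bs!k))) (MH_state_doubled \<sigma> \<rho> E n))
           \<and> QLvN \<rho> E n (\<lambda>k. PA k (as!k)) =
               tr_on (idx_lists (Suc n) \<times> idx_lists (Suc n)) (mul_on (idx_lists (Suc n) \<times> idx_lists (Suc n))
                 (tensor2 (Suc n) (\<lambda>k. PA k (as!k)) (\<lambda>k. PA k (as!k))) (KD_state_doubled \<sigma> \<rho> E n))
           \<and> QLvN \<rho> E n (\<lambda>k. PA k (as!k)) =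
               tr_on (idx_lists (Suc n) \<times> idx_lists (Suc n)) (mul_on (idx_lists (Suc n) \<times> idx_lists (Suc n))
                 (tensor2 (Suc n) (\<lambda>k. PA k (as!k)) (\<lambda>k. PA k (as!k))) (MH_state_doubled \<sigma> \<rho> E n))))"
proof -
  let ?I = "idx_lists (Suc n) :: 'd list set"
  let ?KR = "KD_state_right \<sigma> \<rho> E n"
  let ?KL = "KD_state_left \<sigma> \<rho> E n"
  let ?KD = "KD_state_doubled \<sigma> \<rho> E n"
  let ?MH = "MH_state \<sigma> \<rho> E n"
  let ?MD = "MH_state_doubled \<sigma> \<rho> E n"
  have dens: "density \<rho>" and ch: "\<forall>j\<in>{1..n}. cptp (E j)"
    using proc unfolding multi_time_process_def by auto
  have h\<rho>: "hermitian \<rho>" using dens psd_hermitian unfolding density_def by blast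
  have lin: "\<forall>k\<in>{1..n}. clinear_map (E k)" using ch unfolding cptp_def by blast
  have cp: "\<forall>k\<in>{1..n}. completely_positive (E k)" using ch unfolding cptp_def by blast
  have tp: "\<forall>k\<in>{1..n}. trace_preserving (E k)" using ch unfolding cptp_def by blast
  have adjE: "\<forall>k\<in>{1..n}. \<forall>A. E k (op_adj A) = op_adj (E k A)"
    using adj_preserving lin cp by blast
  have adjRL: "\<And>xs ys. xs \<in> ?I \<Longrightarrow> ys \<in> ?I \<Longrightarrow> op_adj ?KL xs ys = ?KR xs ys"
    and adjLR: "\<And>xs ys. xs \<in> ?I \<Longrightarrow> ys \<in> ?I \<Longrightarrow> op_adj ?KR xs ys = ?KL xs ys"
    using adj_left_right[OF lin pauli adjE h\<rho>] by blast+
  have P1: "mop_eq (Suc n) ?KR (ptrace_L (Suc n) ?KD)"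
    unfolding mop_eq_def using ptrace_L_eq[OF lin pauli] by simp
  have P2: "mop_eq (Suc n) ?KL (ptrace_R (Suc n) ?KD)"
    unfolding mop_eq_def using ptrace_R_eq[OF lin pauli] by simp
  have P3: "mop_eq (Suc n) ?KR (op_adj ?KL)"
    unfolding mop_eq_def using adjRL by simp
  have evR: "evolved_state \<rho> E k x y = ptrace_keep (Suc n) [k] ?KR [x] [y]" if k: "k \<le> n" for k x y
  proof -
    have "ptrace_keep (Suc n) [k] ?KR [x] [y] = QKD_doubled \<rho> E n (\<lambda>_. idm) (keepP [k] [x] [y])"
      by (rule ptrace_keep_R[OF lin pauli]) (use k in auto)
    also have "\<dots> = evolved_state \<rho> E k x y" by (rule evolved_R[OF k tp])
    finally show ?thesis by simp
  qed
  have evL: "evolved_state \<rho> E k x y = ptrace_keep (Suc n) [k] ?KL [x] [y]" if k: "k \<le> n" for k x y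
  proof -
    have "ptrace_keep (Suc n) [k] ?KL [x] [y] = QKD_doubled \<rho> E n (keepP [k] [x] [y]) (\<lambda>_. idm)"
      by (rule ptrace_keep_L[OF lin pauli]) (use k in auto)
    also have "\<dots> = evolved_state \<rho> E k x y" by (rule evolved_L[OF k tp])
    finally show ?thesis by simp
  qed
  have P5: "mop_eq (length ts) (ptrace_keep (Suc n) ts ?KR)
                 (KD_state_right \<sigma> \<rho> (sub_channels E ts) (length ts - 1))
        \<and> mop_eq (length ts) (ptrace_keep (Suc n) ts ?KL)
                 (KD_state_left \<sigma> \<rho> (sub_channels E ts) (length ts - 1))
        \<and> dop_eq (length ts) (ptrace_keep2 (Suc n) ts ?KD)
                 (KD_state_doubled \<sigma> \<rho> (sub_channels E ts) (length ts - 1))"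
    if ts: "ts \<noteq> [] \<and> ts!0 = 0 \<and> sorted_wrt (<) ts \<and> (\<forall>t\<in>set ts. t \<le> n)" for ts
  proof -
    have ne: "ts \<noteq> []" and t0: "ts!0 = 0" and s: "sorted_wrt (<) ts" and le: "\<forall>t\<in>set ts. t \<le> n"
      using ts by auto
    have dist: "distinct ts" using s strict_sorted_iff by blast
    have lt: "\<forall>t\<in>set ts. t < Suc n" using le by auto
    have linS: "\<forall>j\<in>{1..length ts - 1}. clinear_map (sub_channels E ts j)"
      by (rule sub_channels_linear[OF ne s le lin])
    have len: "Suc (length ts - 1) = length ts" using ne by simp
    have idxS: "idx_lists (length ts) = idx_lists (Suc (length ts - 1))" using len by simp
    have A: "mop_eq (length ts) (ptrace_keep (Suc n) ts ?KR)
                 (KD_state_right \<sigma> \<rho> (sub_channels E ts) (length ts - 1))"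
      unfolding mop_eq_def
    proof (intro ballI)
      fix xs ys :: "'d list" assume xs: "xs \<in> idx_lists (length ts)" and ys: "ys \<in> idx_lists (length ts)"
      have "ptrace_keep (Suc n) ts ?KR xs ys = QKD_doubled \<rho> E n (\<lambda>_. idm) (keepP ts xs ys)"
        by (rule ptrace_keep_R[OF lin pauli dist lt])
      also have "\<dots> = QKD_doubled \<rho> (sub_channels E ts) (length ts - 1) (\<lambda>_. idm) (\<lambda>k. munit (ys!k) (xs!k))"
        by (rule QKD_sub_keep[OF ne t0 s le tp]) auto
      also have "\<dots> = KD_state_right \<sigma> \<rho> (sub_channels E ts) (length ts - 1) xs ys"
        by (rule KD_right_eq[OF linS pauli, symmetric]) (use xs ys idxS in auto)
      finally show "ptrace_keep (Suc n) ts ?KR xs ys = KD_state_right \<sigma> \<rho> (sub_channels E ts) (length ts - 1) xs ys" .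
    qed
    have B: "mop_eq (length ts) (ptrace_keep (Suc n) ts ?KL)
                 (KD_state_left \<sigma> \<rho> (sub_channels E ts) (length ts - 1))"
      unfolding mop_eq_def
    proof (intro ballI)
      fix xs ys :: "'d list" assume xs: "xs \<in> idx_lists (length ts)" and ys: "ys \<in> idx_lists (length ts)"
      have "ptrace_keep (Suc n) ts ?KL xs ys = QKD_doubled \<rho> E n (keepP ts xs ys) (\<lambda>_. idm)"
        by (rule ptrace_keep_L[OF lin pauli dist lt])
      also have "\<dots> = QKD_doubled \<rho> (sub_channels E ts) (length ts - 1) (\<lambda>k. munit (ys!k) (xs!k)) (\<lambda>_. idm)"
        by (rule QKD_sub_keep[OF ne t0 s le tp]) auto
      also have "\<dots> = KD_state_left \<sigma> \<rho> (sub_channels E ts) (length ts - 1) xs ys"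
        by (rule KD_left_eq[OF linS pauli, symmetric]) (use xs ys idxS in auto)
      finally show "ptrace_keep (Suc n) ts ?KL xs ys = KD_state_left \<sigma> \<rho> (sub_channels E ts) (length ts - 1) xs ys" .
    qed
    have C: "dop_eq (length ts) (ptrace_keep2 (Suc n) ts ?KD)
                 (KD_state_doubled \<sigma> \<rho> (sub_channels E ts) (length ts - 1))"
      unfolding dop_eq_def
    proof (intro ballI)
      fix x y :: "'d list \<times> 'd list" assume x: "x \<in> idx_lists (length ts) \<times> idx_lists (length ts)"
        and y: "y \<in> idx_lists (length ts) \<times> idx_lists (length ts)"
      obtain xl xr where xp: "x = (xl, xr)" by (cases x)
      obtain yl yr where yp: "y = (yl, yr)" by (cases y)
      have m: "xl \<in> idx_lists (Suc (length ts - 1))" "xr \<in> idx_lists (Suc (length ts - 1))"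
        "yl \<in> idx_lists (Suc (length ts - 1))" "yr \<in> idx_lists (Suc (length ts - 1))"
        using x y xp yp idxS by auto
      have "ptrace_keep2 (Suc n) ts ?KD (xl, xr) (yl, yr) = QKD_doubled \<rho> E n (keepP ts xl yl) (keepP ts xr yr)"
        by (rule ptrace_keep2_D[OF lin pauli dist lt])
      also have "\<dots> = QKD_doubled \<rho> (sub_channels E ts) (length ts - 1) (\<lambda>k. munit (yl!k) (xl!k)) (\<lambda>k. munit (yr!k) (xr!k))"
        by (rule QKD_sub_keep[OF ne t0 s le tp]) auto
      also have "\<dots> = KD_state_doubled \<sigma> \<rho> (sub_channels E ts) (length ts - 1) (xl, xr) (yl, yr)"
        by (rule KD_doubled_eq[OF linS pauli m(1) m(3) m(2) m(4), symmetric])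
      finally show "ptrace_keep2 (Suc n) ts ?KD x y = KD_state_doubled \<sigma> \<rho> (sub_channels E ts) (length ts - 1) x y"
        using xp yp by simp
    qed
    show ?thesis using A B C by blast
  qed
  have MHeq: "?MH xs ys = (?KR xs ys + op_adj ?KR xs ys) / 2" for xs ys
    by (rule MH_eq[OF pauli])
  have P6: "mop_eq (Suc n) ?MH (\<lambda>x y. (?KL x y + op_adj ?KL x y) / 2)"
    unfolding mop_eq_def using MHeq adjRL adjLR by (simp add: add.commute)
  have P7: "mop_eq (Suc n) ?MH (\<lambda>x y. (?KR x y + op_adj ?KR x y) / 2)"
    unfolding mop_eq_def using MHeq by simp
  have P8: "dop_eq (Suc n) ?MD (\<lambda>x y. (?KD x y + op_adj ?KD x y) / 2)"
    unfolding dop_eq_def using MH_doubled_eq[OF pauli] by simp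
  have P9: "evolved_state \<rho> E k x y = ptrace_keep (Suc n) [k] ?MH [x] [y]" if k: "k \<le> n" for k x y
  proof -
    have "ptrace_keep (Suc n) [k] ?MH [x] [y] = (\<Sum>(zs, ws)\<in>keep_pairs (Suc n) [k] [x] [y]. (?KR zs ws + ?KL zs ws) / 2)"
      unfolding ptrace_keep_def
      by (intro sum.cong refl) (auto simp: MHeq adjLR dest: keep_pairs_idx)
    also have "\<dots> = (ptrace_keep (Suc n) [k] ?KR [x] [y] + ptrace_keep (Suc n) [k] ?KL [x] [y]) / 2"
      unfolding ptrace_keep_def by (simp add: sum.distrib case_prod_unfold add_divide_distrib sum_divide_distrib)
    also have "\<dots> = evolved_state \<rho> E k x y"
      using evR[OF k] evL[OF k] by simp
    finally show ?thesis by simp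
  qed
  have P10: "QKD_right \<rho> E n (\<lambda>k. PB k (bs!k)) =
               tr_on (idx_lists (Suc n)) (mul_on (idx_lists (Suc n))
                 (tensor (Suc n) (\<lambda>k. PB k (bs!k))) ?KR)
           \<and> QKD_left \<rho> E n (\<lambda>k. PB k (bs!k)) =
               tr_on (idx_lists (Suc n)) (mul_on (idx_lists (Suc n))
                 (tensor (Suc n) (\<lambda>k. PB k (bs!k))) ?KL)
           \<and> QKD_doubled \<rho> E n (\<lambda>k. PA k (as!k)) (\<lambda>k. PB k (bs!k)) =
               tr_on (idx_lists (Suc n) \<times> idx_lists (Suc n)) (mul_on (idx_lists (Suc n) \<times> idx_lists (Suc n))
                 (tensor2 (Suc n) (\<lambda>k. PA k (as!k)) (\<lambda>k. PB k (bs!k))) ?KD)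
           \<and> complex_of_real (QMH \<rho> E n (\<lambda>k. PB k (bs!k))) =
               tr_on (idx_lists (Suc n)) (mul_on (idx_lists (Suc n))
                 (tensor (Suc n) (\<lambda>k. PB k (bs!k))) ?MH)
           \<and> complex_of_real (QMH_doubled \<rho> E n (\<lambda>k. PA k (as!k)) (\<lambda>k. PB k (bs!k))) =
               tr_on (idx_lists (Suc n) \<times> idx_lists (Suc n)) (mul_on (idx_lists (Suc n) \<times> idx_lists (Suc n))
                 (tensor2 (Suc n) (\<lambda>k. PA k (as!k)) (\<lambda>k. PB k (bs!k))) ?MD)
           \<and> QLvN \<rho> E n (\<lambda>k. PA k (as!k)) =
               tr_on (idx_lists (Suc n) \<times> idx_lists (Suc n)) (mul_on (idx_lists (Suc n) \<times> idx_lists (Suc n))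
                 (tensor2 (Suc n) (\<lambda>k. PA k (as!k)) (\<lambda>k. PA k (as!k))) ?KD)
           \<and> QLvN \<rho> E n (\<lambda>k. PA k (as!k)) =
               tr_on (idx_lists (Suc n) \<times> idx_lists (Suc n)) (mul_on (idx_lists (Suc n) \<times> idx_lists (Suc n))
                 (tensor2 (Suc n) (\<lambda>k. PA k (as!k)) (\<lambda>k. PA k (as!k))) ?MD)"
    if pf: "\<forall>k\<le>n. proj_family (OA k) (PA k) \<and> proj_family (OB k) (PB k)"
      and as: "as \<in> outcome_lists OA (Suc n)" and bs: "bs \<in> outcome_lists OB (Suc n)"
    for PA :: "nat \<Rightarrow> 'a \<Rightarrow> 'd sop" and PB OA OB as bs
  proof -
    let ?A = "\<lambda>k. PA k (as!k)" and ?B = "\<lambda>k. PB k (bs!k)"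
    have hA: "\<forall>k<Suc n. hermitian (?A k)"
    proof (intro allI impI)
      fix k assume k: "k < Suc n"
      then have "as!k \<in> OA k" using as by (simp add: outcome_lists_def)
      then show "hermitian (?A k)" using pf k unfolding proj_family_def by auto
    qed
    have hB: "\<forall>k<Suc n. hermitian (?B k)"
    proof (intro allI impI)
      fix k assume k: "k < Suc n"
      then have "bs!k \<in> OB k" using bs by (simp add: outcome_lists_def)
      then show "hermitian (?B k)" using pf k unfolding proj_family_def by auto
    qed
    have b1: "QKD_right \<rho> E n ?B = tr_on ?I (mul_on ?I (tensor (Suc n) ?B) ?KR)"
      unfolding QKD_right_doubled by (rule born_right[OF lin pauli, symmetric])
    have b2: "QKD_left \<rho> E n ?B = tr_on ?I (mul_on ?I (tensor (Suc n) ?B) ?KL)"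
      unfolding QKD_left_doubled by (rule born_left[OF lin pauli, symmetric])
    have b3: "QKD_doubled \<rho> E n ?A ?B = tr_on (?I \<times> ?I) (mul_on (?I \<times> ?I) (tensor2 (Suc n) ?A ?B) ?KD)"
      by (rule born_doubled[OF lin pauli, symmetric])
    have b4: "complex_of_real (QMH \<rho> E n ?B) = tr_on ?I (mul_on ?I (tensor (Suc n) ?B) ?MH)"
    proof -
      have "tr_on ?I (mul_on ?I (tensor (Suc n) ?B) ?MH) = complex_of_real (Re (tr_on ?I (mul_on ?I (tensor (Suc n) ?B) ?KR)))"
        by (rule born_MH) (simp_all add: MHeq tensor_cnj[OF hB])
      then show ?thesis by (simp add: QMH_def b1)
    qed
    have b5: "complex_of_real (QMH_doubled \<rho> E n ?A ?B) = tr_on (?I \<times> ?I) (mul_on (?I \<times> ?I) (tensor2 (Suc n) ?A ?B) ?MD)"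
    proof -
      have "tr_on (?I \<times> ?I) (mul_on (?I \<times> ?I) (tensor2 (Suc n) ?A ?B) ?MD) =
          complex_of_real (Re (tr_on (?I \<times> ?I) (mul_on (?I \<times> ?I) (tensor2 (Suc n) ?A ?B) ?KD)))"
        by (rule born_MH) (simp_all add: MH_doubled_eq[OF pauli] tensor2_cnj[OF hA hB])
      then show ?thesis by (simp add: QMH_doubled_def b3)
    qed
    have b6: "QLvN \<rho> E n ?A = tr_on (?I \<times> ?I) (mul_on (?I \<times> ?I) (tensor2 (Suc n) ?A ?A) ?KD)"
      unfolding QLvN_def by (rule born_doubled[OF lin pauli, symmetric])
    have real: "cnj (QKD_doubled \<rho> E n ?A ?A) = QKD_doubled \<rho> E n ?A ?A"
    proof -
      have "cnj (QKD_doubled \<rho> E n ?A ?A) = QKD_doubled \<rho> E n (\<lambda>k. op_adj (?A k)) (\<lambda>k. op_adj (?A k))"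
        by (rule cnj_QKD[OF adjE h\<rho>])
      also have "\<dots> = QKD_doubled \<rho> E n ?A ?A"
        by (rule QKD_cong) (use hA in \<open>auto simp: hermitian_adj\<close>)
      finally show ?thesis .
    qed
    have b7: "QLvN \<rho> E n ?A = tr_on (?I \<times> ?I) (mul_on (?I \<times> ?I) (tensor2 (Suc n) ?A ?A) ?MD)"
    proof -
      have "tr_on (?I \<times> ?I) (mul_on (?I \<times> ?I) (tensor2 (Suc n) ?A ?A) ?MD) =
          complex_of_real (Re (tr_on (?I \<times> ?I) (mul_on (?I \<times> ?I) (tensor2 (Suc n) ?A ?A) ?KD)))"
        by (rule born_MH) (simp_all add: MH_doubled_eq[OF pauli] tensor2_cnj[OF hA hA])
      also have "\<dots> = complex_of_real (Re (QKD_doubled \<rho> E n ?A ?A))" using b6 by (simp add: QLvN_def)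
      also have "\<dots> = QKD_doubled \<rho> E n ?A ?A" unfolding Re_half real by simp
      finally show ?thesis by (simp add: QLvN_def)
    qed
    show ?thesis using b1 b2 b3 b4 b5 b6 b7 by blast
  qed
  show ?thesis
    using P1 P2 P3 evR evL P5 P6 P7 P8 P9 P10 by blast
qed

end
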